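(* In the polar Brauer category $\mathcal{AB}(\delta)$ over a commutative ring $K$, $\delta\in K$, with $\mathbb G_i=Z_i\otimes I-\mathbb H^i$ and $\Phi=(1-\delta)\mathbb I_1-\mathbb H$, the following hold in $\mathrm{End}_{\mathcal{AB}(\delta)}(1)$ for all $\ell\ge0$: $$(\mathbb H^{\ell+1})^T=\sum_{i=1}^\ell\mathbb G_i\Phi^{\ell-i}-\mathbb H\Phi^\ell,\qquad (\mathbb H^{\ell+1})^T=\sum_{i=1}^\ell\Phi^{\ell-i}\mathbb G_i-\Phi^\ell\mathbb H,$$ and in particular $\sum_{i=1}^{\ell-1}[Z_i\otimes I,\Phi^{\ell-i}]=0$ for all $\ell$.
   Context: Let $K$ be a commutative ring and $\delta\in K$. The Brauer category $\mathcal B(\delta)$ has objects $\mathbb N$; $\mathrm{Hom}_{\mathcal B(\delta)}(r,s)$ is the free $K$-module on Brauer $(r,s)$-diagrams; composition $BA$ (first $A$, then $B$) is stacking with closed loops replaced by a factor $\delta$; $\otimes$ is juxtaposition. $I$ is the identity of $1$, $I_r=I^{\otimes r}$, $X$ the crossing, $\cap:2\to0$ the cap, $\cup:0\to2$ the cup, $H=X-\cup\circ\cap$. The polar Brauer category $\mathcal{AB}(\delta)$ is the $K$-linear category with objects $\mathbb N$ generated, under composition and the right action $\mathbb D\mapsto\mathbb D\otimes B$ of morphisms $B$ of $\mathcal B(\delta)$ (juxtaposing $B$ on the right; $\mathbb D:r\to s$, $B:k\to\ell$ give $\mathbb D\otimes B:r+k\to s+\ell$), by $\mathbb I_0$ (a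 vertical pole, identity of $0$) and $\mathbb H:1\to1$ (pole joined by a horizontal connector to one thin strand), subject to: (i) $(\mathbb I_0\otimes B)(\mathbb I_0\otimes A)=\mathbb I_0\otimes BA$, $(\mathbb H\otimes B)(\mathbb I_1\otimes A)=(\mathbb I_1\otimes B)(\mathbb H\otimes A)=\mathbb H\otimes BA$, with $\mathbb I_r=\mathbb I_0\otimes I_r$; (ii) $[\mathbb H_{01},\mathbb H_{02}+\mathbb H_{12}]=0$ with $[a,b]=ab-ba$, $\mathbb H_{01}=\mathbb H\otimes I$, $\mathbb X_0=\mathbb I_0\otimes X$, $\mathbb H_{02}=\mathbb X_0\mathbb H_{01}\mathbb X_0$, $\mathbb H_{12}=\mathbb I_0\otimes H$; (iii) $\mathbb H^T=-\mathbb H$, where for $\mathbb D:1\to1$ we write $\mathbb D^T=(\mathbb I_0\otimes\cap\otimes I)(\mathbb D\otimes X)(\mathbb I_0\otimes\cup\otimes I)$; relations are imposed in all composites and right tensor products. Products denote composition, powers are composition powers ($\mathbb H^0=\Phi^0=\mathbb I_1$). Let $\Pi=\mathbb I_0\otimes\cap$, $\amalg=\mathbb I_0\otimes\cup$ and $Z_\ell=\Pi(\mathbb H^\ell\otimes I)\amalg\in\mathrm{End}(0)$ for $\ell\ge1$. *)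

theory Defs
  imports Main
begin

text \<open>Points of a Brauer (r,s)-diagram: Inl i (i < r) are the source (bottom) points,
  Inr j (j < s) the target (top) points. A diagram is a perfect matching, stored as a
  symmetric irreflexive relation. A morphism r -> s is a K-valued function on diagrams;
  only its values on (r,s)-diagrams matter (free K-module on (r,s)-diagrams).\<close>

type_synonym pt = "nat + nat"
type_synonym bdiagram = "(pt \<times> pt) set"
type_synonym 'k bmor = "bdiagram \<Rightarrow> 'k"

definition bpts :: "nat \<Rightarrow> nat \<Rightarrow> pt set" where
  "bpts r s = Inl ` {..<r} \<union> Inr ` {..<s}"

definition brauer_diag :: "nat \<Rightarrow> nat \<Rightarrow> bdiagram \<Rightarrow> bool" where
  "brauer_diag r s d \<longleftrightarrow> d \<subseteq> bpts r s \<times> bpts r s \<and> sym d \<and> (\<forall>p. (p, p) \<notin> d)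
     \<and> (\<forall>p\<in>bpts r s. \<exists>!q. (p, q) \<in> d)"

definition bdiags :: "nat \<Rightarrow> nat \<Rightarrow> bdiagram set" where
  "bdiags r s = {d. brauer_diag r s d}"

text \<open>Stacking: the lower diagram d1 : r -> s occupies levels 0 (its source) and 1 (middle),
  the upper diagram d2 : s -> t occupies levels 1 (middle) and 2 (its target).\<close>

definition lift_lo :: "pt \<Rightarrow> nat \<times> nat" where
  "lift_lo p = (case p of Inl i \<Rightarrow> (0, i) | Inr j \<Rightarrow> (1, j))"

definition lift_hi :: "pt \<Rightarrow> nat \<times> nat" where
  "lift_hi p = (case p of Inl j \<Rightarrow> (1, j) | Inr k \<Rightarrow> (2, k))"

definition lift_ext :: "pt \<Rightarrow> nat \<times> nat" where
  "lift_ext p = (case p of Inl i \<Rightarrow> (0, i) | Inr k \<Rightarrow> (2, k))"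

definition glue_rel :: "bdiagram \<Rightarrow> bdiagram \<Rightarrow> ((nat \<times> nat) \<times> (nat \<times> nat)) set" where
  "glue_rel d2 d1 = (map_prod lift_lo lift_lo ` d1 \<union> map_prod lift_hi lift_hi ` d2)\<^sup>*"

definition diag_comp :: "nat \<Rightarrow> nat \<Rightarrow> bdiagram \<Rightarrow> bdiagram \<Rightarrow> bdiagram" where
  "diag_comp r t d2 d1 = {(p, q). p \<in> bpts r t \<and> q \<in> bpts r t \<and> p \<noteq> q
      \<and> (lift_ext p, lift_ext q) \<in> glue_rel d2 d1}"

text \<open>Number of closed loops (components consisting only of middle points).\<close>
definition diag_loops :: "nat \<Rightarrow> bdiagram \<Rightarrow> bdiagram \<Rightarrow> nat" where
  "diag_loops s d2 d1 = card {glue_rel d2 d1 `` {(1, j)} | j. j < s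
      \<and> glue_rel d2 d1 `` {(1, j)} \<subseteq> {(1, j') | j'. j' < s}}"

text \<open>Composition B A (first A : r -> s, then B : s -> t), bilinear extension.\<close>
definition bcomp :: "'k::comm_ring_1 \<Rightarrow> nat \<Rightarrow> nat \<Rightarrow> nat \<Rightarrow> 'k bmor \<Rightarrow> 'k bmor \<Rightarrow> 'k bmor" where
  "bcomp \<delta> r s t B A = (\<lambda>d. \<Sum>d1\<in>bdiags r s. \<Sum>d2\<in>bdiags s t.
      if diag_comp r t d2 d1 = d then \<delta> ^ diag_loops s d2 d1 * (B d2 * A d1) else 0)"

definition bshift :: "nat \<Rightarrow> nat \<Rightarrow> pt \<Rightarrow> pt" where
  "bshift r s p = (case p of Inl i \<Rightarrow> Inl (i + r) | Inr j \<Rightarrow> Inr (j + s))"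

definition diag_tens :: "nat \<Rightarrow> nat \<Rightarrow> bdiagram \<Rightarrow> bdiagram \<Rightarrow> bdiagram" where
  "diag_tens r1 s1 d1 d2 = d1 \<union> map_prod (bshift r1 s1) (bshift r1 s1) ` d2"

definition btens :: "nat \<Rightarrow> nat \<Rightarrow> nat \<Rightarrow> nat \<Rightarrow> 'k::comm_ring_1 bmor \<Rightarrow> 'k bmor \<Rightarrow> 'k bmor" where
  "btens r1 s1 r2 s2 B A = (\<lambda>d. \<Sum>d1\<in>bdiags r1 s1. \<Sum>d2\<in>bdiags r2 s2.
      if diag_tens r1 s1 d1 d2 = d then B d1 * A d2 else 0)"

definition bbasis :: "bdiagram \<Rightarrow> 'k::comm_ring_1 bmor" where
  "bbasis d = (\<lambda>e. if e = d then 1 else 0)"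

definition idd :: "nat \<Rightarrow> bdiagram" where
  "idd r = {(Inl i, Inr i) | i. i < r} \<union> {(Inr i, Inl i) | i. i < r}"

definition crossd :: bdiagram where
  "crossd = {(Inl 0, Inr 1), (Inr 1, Inl 0), (Inl 1, Inr 0), (Inr 0, Inl 1)}"

definition capd :: bdiagram where
  "capd = {(Inl 0, Inl 1), (Inl 1, Inl 0)}"

definition cupd :: bdiagram where
  "cupd = {(Inr 0, Inr 1), (Inr 1, Inr 0)}"

definition bI :: "'k::comm_ring_1 bmor" where "bI = bbasis (idd 1)"
definition bX :: "'k::comm_ring_1 bmor" where "bX = bbasis crossd"
definition bcap :: "'k::comm_ring_1 bmor" where "bcap = bbasis capd"
definition bcup :: "'k::comm_ring_1 bmor" where "bcup = bbasis cupd"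

definition bH :: "'k::comm_ring_1 \<Rightarrow> 'k bmor" where
  "bH \<delta> = (\<lambda>d. bX d - bcomp \<delta> 2 0 2 bcup bcap d)"

text \<open>Formal expressions: Pole = I_0 : 0 -> 0, HH = H : 1 -> 1, Comp D E = D E (first E),
  Tens D k l B = D (x) B with B : k -> l, Zer r s the zero morphism, Add, Smul.\<close>

datatype 'k abt =
    Pole
  | HH
  | Comp "'k abt" "'k abt"
  | Tens "'k abt" nat nat "'k bmor"
  | Zer nat nat
  | Add "'k abt" "'k abt"
  | Smul 'k "'k abt"

inductive wt :: "'k abt \<Rightarrow> nat \<Rightarrow> nat \<Rightarrow> bool" where
  "wt Pole 0 0"
| "wt HH 1 1"
| "wt D s t \<Longrightarrow> wt E r s \<Longrightarrow> wt (Comp D E) r t"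
| "wt D r s \<Longrightarrow> wt (Tens D k l B) (r + k) (s + l)"
| "wt (Zer r s) r s"
| "wt D r s \<Longrightarrow> wt E r s \<Longrightarrow> wt (Add D E) r s"
| "wt D r s \<Longrightarrow> wt (Smul c D) r s"

definition aI :: "nat \<Rightarrow> 'k::comm_ring_1 abt" where
  "aI r = Tens Pole r r (bbasis (idd r))"

definition asub :: "'k::comm_ring_1 abt \<Rightarrow> 'k abt \<Rightarrow> 'k abt" where
  "asub D E = Add D (Smul (-1) E)"

definition aX0 :: "'k::comm_ring_1 abt" where "aX0 = Tens Pole 2 2 bX"
definition aH01 :: "'k::comm_ring_1 abt" where "aH01 = Tens HH 1 1 bI"
definition aH02 :: "'k::comm_ring_1 abt" where "aH02 = Comp aX0 (Comp aH01 aX0)"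
definition aH12 :: "'k::comm_ring_1 \<Rightarrow> 'k abt" where "aH12 \<delta> = Tens Pole 2 2 (bH \<delta>)"

definition atransp :: "'k::comm_ring_1 abt \<Rightarrow> 'k abt" where
  "atransp D = Comp (Tens Pole 3 1 (btens 2 0 1 1 bcap bI))
     (Comp (Tens D 2 2 bX) (Tens Pole 1 3 (btens 0 2 1 1 bcup bI)))"

text \<open>The least congruence on well-typed expressions making them the morphisms of a
  K-linear category with a K-linear right action of B(delta), and imposing (i)-(iii).
  abeq delta r s D E: D = E in Hom(r,s).\<close>

inductive abeq :: "'k::comm_ring_1 \<Rightarrow> nat \<Rightarrow> nat \<Rightarrow> 'k abt \<Rightarrow> 'k abt \<Rightarrow> bool" for \<delta> :: "'k" where
  ab_refl: "wt D r s \<Longrightarrow> abeq \<delta> r s D D"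
| ab_sym: "abeq \<delta> r s D E \<Longrightarrow> abeq \<delta> r s E D"
| ab_trans: "abeq \<delta> r s D E \<Longrightarrow> abeq \<delta> r s E F \<Longrightarrow> abeq \<delta> r s D F"
| ab_comp_cong: "abeq \<delta> s t D D' \<Longrightarrow> abeq \<delta> r s E E' \<Longrightarrow> abeq \<delta> r t (Comp D E) (Comp D' E')"
| ab_tens_cong: "abeq \<delta> r s D D' \<Longrightarrow> (\<forall>d. brauer_diag k l d \<longrightarrow> B d = B' d) \<Longrightarrow>
     abeq \<delta> (r + k) (s + l) (Tens D k l B) (Tens D' k l B')"
| ab_add_cong: "abeq \<delta> r s D D' \<Longrightarrow> abeq \<delta> r s E E' \<Longrightarrow> abeq \<delta> r s (Add D E) (Add D' E')"
| ab_smul_cong: "abeq \<delta> r s D D' \<Longrightarrow> abeq \<delta> r s (Smul c D) (Smul c D')"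
| ab_add_assoc: "wt D r s \<Longrightarrow> wt E r s \<Longrightarrow> wt F r s \<Longrightarrow>
     abeq \<delta> r s (Add (Add D E) F) (Add D (Add E F))"
| ab_add_comm: "wt D r s \<Longrightarrow> wt E r s \<Longrightarrow> abeq \<delta> r s (Add D E) (Add E D)"
| ab_add_zero: "wt D r s \<Longrightarrow> abeq \<delta> r s (Add (Zer r s) D) D"
| ab_add_neg: "wt D r s \<Longrightarrow> abeq \<delta> r s (Add D (Smul (-1) D)) (Zer r s)"
| ab_smul_add: "wt D r s \<Longrightarrow> wt E r s \<Longrightarrow>
     abeq \<delta> r s (Smul c (Add D E)) (Add (Smul c D) (Smul c E))"
| ab_add_smul: "wt D r s \<Longrightarrow> abeq \<delta> r s (Smul (c + c') D) (Add (Smul c D) (Smul c' D))"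
| ab_smul_smul: "wt D r s \<Longrightarrow> abeq \<delta> r s (Smul (c * c') D) (Smul c (Smul c' D))"
| ab_smul_one: "wt D r s \<Longrightarrow> abeq \<delta> r s (Smul 1 D) D"
| ab_comp_assoc: "wt D t u \<Longrightarrow> wt E s t \<Longrightarrow> wt F r s \<Longrightarrow>
     abeq \<delta> r u (Comp (Comp D E) F) (Comp D (Comp E F))"
| ab_id_left: "wt D r s \<Longrightarrow> abeq \<delta> r s (Comp (aI s) D) D"
| ab_id_right: "wt D r s \<Longrightarrow> abeq \<delta> r s (Comp D (aI r)) D"
| ab_comp_add_left: "wt D s t \<Longrightarrow> wt D' s t \<Longrightarrow> wt E r s \<Longrightarrow>
     abeq \<delta> r t (Comp (Add D D') E) (Add (Comp D E) (Comp D' E))"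
| ab_comp_add_right: "wt D s t \<Longrightarrow> wt E r s \<Longrightarrow> wt E' r s \<Longrightarrow>
     abeq \<delta> r t (Comp D (Add E E')) (Add (Comp D E) (Comp D E'))"
| ab_comp_smul_left: "wt D s t \<Longrightarrow> wt E r s \<Longrightarrow>
     abeq \<delta> r t (Comp (Smul c D) E) (Smul c (Comp D E))"
| ab_comp_smul_right: "wt D s t \<Longrightarrow> wt E r s \<Longrightarrow>
     abeq \<delta> r t (Comp D (Smul c E)) (Smul c (Comp D E))"
| ab_tens_add: "wt D r s \<Longrightarrow> wt D' r s \<Longrightarrow>
     abeq \<delta> (r + k) (s + l) (Tens (Add D D') k l B) (Add (Tens D k l B) (Tens D' k l B))"
| ab_tens_smul: "wt D r s \<Longrightarrow>
     abeq \<delta> (r + k) (s + l) (Tens (Smul c D) k l B) (Smul c (Tens D k l B))"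
| ab_tens_badd: "wt D r s \<Longrightarrow>
     abeq \<delta> (r + k) (s + l) (Tens D k l (\<lambda>d. B d + B' d)) (Add (Tens D k l B) (Tens D k l B'))"
| ab_tens_bsmul: "wt D r s \<Longrightarrow>
     abeq \<delta> (r + k) (s + l) (Tens D k l (\<lambda>d. c * B d)) (Smul c (Tens D k l B))"
| ab_tens_unit: "wt D r s \<Longrightarrow> abeq \<delta> r s (Tens D 0 0 (bbasis {})) D"
| ab_tens_assoc: "wt D r s \<Longrightarrow>
     abeq \<delta> (r + k + k') (s + l + l') (Tens (Tens D k l B) k' l' C)
       (Tens D (k + k') (l + l') (btens k l k' l' B C))"
| ab_interchange: "wt D s t \<Longrightarrow> wt E r s \<Longrightarrow>
     abeq \<delta> (r + k) (t + m) (Comp (Tens D l m B) (Tens E k l A))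
       (Tens (Comp D E) k m (bcomp \<delta> k l m B A))"
| ab_rel_i1: "abeq \<delta> k m (Comp (Tens Pole l m B) (Tens Pole k l A)) (Tens Pole k m (bcomp \<delta> k l m B A))"
| ab_rel_i2: "abeq \<delta> (1 + k) (1 + m) (Comp (Tens HH l m B) (Tens (aI 1) k l A))
     (Tens HH k m (bcomp \<delta> k l m B A))"
| ab_rel_i3: "abeq \<delta> (1 + k) (1 + m) (Comp (Tens (aI 1) l m B) (Tens HH k l A))
     (Tens HH k m (bcomp \<delta> k l m B A))"
| ab_rel_ii: "abeq \<delta> 2 2 (Comp aH01 (Add aH02 (aH12 \<delta>))) (Comp (Add aH02 (aH12 \<delta>)) aH01)"
| ab_rel_iii: "abeq \<delta> 1 1 (atransp HH) (Smul (-1) HH)"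

definition apow :: "'k::comm_ring_1 abt \<Rightarrow> nat \<Rightarrow> 'k abt" where
  "apow D n = ((Comp D) ^^ n) (aI 1)"

definition aPi :: "'k::comm_ring_1 abt" where "aPi = Tens Pole 2 0 bcap"
definition aAmalg :: "'k::comm_ring_1 abt" where "aAmalg = Tens Pole 0 2 bcup"

definition aZ :: "nat \<Rightarrow> 'k::comm_ring_1 abt" where
  "aZ l = Comp aPi (Comp (Tens (apow HH l) 1 1 bI) aAmalg)"

definition aPhi :: "'k::comm_ring_1 \<Rightarrow> 'k abt" where
  "aPhi \<delta> = asub (Smul (1 - \<delta>) (aI 1)) HH"

definition aG :: "nat \<Rightarrow> 'k::comm_ring_1 abt" where
  "aG i = asub (Tens (aZ i) 1 1 bI) (apow HH i)"

definition asum :: "(nat \<Rightarrow> 'k abt) \<Rightarrow> nat list \<Rightarrow> 'k abt" where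
  "asum f xs = foldr (\<lambda>i acc. Add (f i) acc) xs (Zer 1 1)"

end

theory Submission
  imports Defs
begin

lemma lt_simps: "{..<(0::nat)} = {}" "{..<Suc n} = insert n {..<n}" by auto

lemma finite_bpts: "finite (bpts r s)" by (simp add: bpts_def)

lemma finite_bdiags: "finite (bdiags r s)"
proof -
  have "bdiags r s \<subseteq> Pow (bpts r s \<times> bpts r s)"
    by (auto simp: bdiags_def brauer_diag_def)
  then show ?thesis by (rule finite_subset) (simp add: finite_bpts)
qed

lemma sum_if_eq: "finite S \<Longrightarrow> a \<in> S \<Longrightarrow> (\<Sum>x\<in>S. if x = a \<and> P x then f x else 0) = (if P a then f a else 0)"
proof -
  assume "finite S" "a \<in> S"
  have "(\<lambda>x. if x = a \<and> P x then f x else 0) = (\<lambda>x. if x = a then (if P x then f x else 0) else 0)"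
    by auto
  then show ?thesis using \<open>finite S\<close> \<open>a \<in> S\<close> by (simp only:) (simp add: sum.delta)
qed

lemma bcomp_bbasis:
  assumes "d1 \<in> bdiags r s" "d2 \<in> bdiags s t"
  shows "bcomp \<delta> r s t (bbasis d2) (bbasis d1) =
    (\<lambda>d. if diag_comp r t d2 d1 = d then \<delta> ^ diag_loops s d2 d1 else 0)"
proof
  fix d
  have "bcomp \<delta> r s t (bbasis d2) (bbasis d1) d =
     (\<Sum>d1'\<in>bdiags r s. \<Sum>d2'\<in>bdiags s t. if d2' = d2 \<and> (d1' = d1 \<and>
        diag_comp r t d2' d1' = d) then \<delta> ^ diag_loops s d2' d1' else 0)"
    unfolding bcomp_def bbasis_def
    by (intro sum.cong refl) simp
  also have "\<dots> = (\<Sum>d1'\<in>bdiags r s. if d1' = d1 \<and> diag_comp r t d2 d1' = d then \<delta> ^ diag_loops s d2 d1' else 0)"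
    by (simp only: sum_if_eq[OF finite_bdiags assms(2)])
  also have "\<dots> = (if diag_comp r t d2 d1 = d then \<delta> ^ diag_loops s d2 d1 else 0)"
    using assms finite_bdiags by (simp add: sum_if_eq)
  finally show "bcomp \<delta> r s t (bbasis d2) (bbasis d1) d =
    (if diag_comp r t d2 d1 = d then \<delta> ^ diag_loops s d2 d1 else 0)" .
qed

lemma bcomp_bbasis0:
  assumes "d1 \<in> bdiags r s" "d2 \<in> bdiags s t" "diag_comp r t d2 d1 = D" "diag_loops s d2 d1 = 0"
  shows "bcomp \<delta> r s t (bbasis d2) (bbasis d1) = bbasis D"
  unfolding bcomp_bbasis[OF assms(1,2)] assms(3,4) by (rule ext) (simp add: bbasis_def)

lemma btens_bbasis:
  assumes "d1 \<in> bdiags r1 s1" "d2 \<in> bdiags r2 s2"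
  shows "btens r1 s1 r2 s2 (bbasis d1) (bbasis d2) = bbasis (diag_tens r1 s1 d1 d2)"
proof
  fix d
  have "btens r1 s1 r2 s2 (bbasis d1) (bbasis d2) d =
     (\<Sum>d1'\<in>bdiags r1 s1. \<Sum>d2'\<in>bdiags r2 s2. if d2' = d2 \<and> (d1' = d1 \<and>
        diag_tens r1 s1 d1' d2' = d) then 1 else 0)"
    unfolding btens_def bbasis_def
    by (intro sum.cong refl) simp
  also have "\<dots> = (\<Sum>d1'\<in>bdiags r1 s1. if d1' = d1 \<and> diag_tens r1 s1 d1' d2 = d then 1 else 0)"
    by (simp only: sum_if_eq[OF finite_bdiags assms(2)])
  also have "\<dots> = bbasis (diag_tens r1 s1 d1 d2) d"
    using assms finite_bdiags by (auto simp: sum_if_eq bbasis_def)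
  finally show "btens r1 s1 r2 s2 (bbasis d1) (bbasis d2) d = bbasis (diag_tens r1 s1 d1 d2) d" .
qed

fun chain :: "('a \<times> 'a) set \<Rightarrow> 'a list \<Rightarrow> bool" where
  "chain R [] = True"
| "chain R [x] = True"
| "chain R (x # y # zs) = ((x, y) \<in> R \<and> chain R (y # zs))"

lemma chain_rtrancl: "chain R (x # xs) \<Longrightarrow> y \<in> set (x # xs) \<Longrightarrow> (x, y) \<in> R\<^sup>*"
proof (induction xs arbitrary: x)
  case Nil then show ?case by simp
next
  case (Cons z zs)
  then show ?case
    by (auto intro: converse_rtrancl_into_rtrancl)
qed

lemma find_SomeD': "find P xs = Some x \<Longrightarrow> x \<in> set xs \<and> P x"
  by (induction xs) (auto split: if_splits)

definition lab :: "'a list list \<Rightarrow> 'a \<Rightarrow> 'a" where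
  "lab cs a = (case find (\<lambda>c. a \<in> set c) cs of Some c \<Rightarrow> hd c | None \<Rightarrow> a)"

lemma lab_rtrancl:
  assumes "sym R" "\<forall>c\<in>set cs. c \<noteq> [] \<and> chain R c"
  shows "(a, lab cs a) \<in> R\<^sup>*"
proof (cases "find (\<lambda>c. a \<in> set c) cs")
  case None then show ?thesis by (simp add: lab_def)
next
  case (Some c)
  then have c: "c \<in> set cs" "a \<in> set c"
    using find_SomeD'[OF Some] by simp_all
  have "c \<noteq> []" using c(1) assms(2) by auto
  then obtain x xs where cx: "c = x # xs" by (meson list.exhaust)
  with c assms have "(x, a) \<in> R\<^sup>*" by (auto intro: chain_rtrancl)
  then have "(a, x) \<in> R\<^sup>*"
    using sym_rtrancl[OF assms(1)] by (rule symD[rotated])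
  then show ?thesis using Some cx by (simp add: lab_def)
qed

lemma rtrancl_lab:
  assumes "sym R" "\<forall>c\<in>set cs. c \<noteq> [] \<and> chain R c" "\<forall>(a, b)\<in>R. lab cs a = lab cs b"
  shows "R\<^sup>* = {(a, b). lab cs a = lab cs b}"
proof
  show "R\<^sup>* \<subseteq> {(a, b). lab cs a = lab cs b}"
  proof
    fix p assume "p \<in> R\<^sup>*"
    then obtain a b where p: "p = (a, b)" "(a, b) \<in> R\<^sup>*" by (cases p) auto
    from p(2) have "lab cs a = lab cs b"
    proof (induction rule: rtrancl_induct)
      case base then show ?case by simp
    next
      case (step y z)
      then have "lab cs y = lab cs z" using assms(3) by blast
      then show ?case using step.IH by simp
    qed
    then show "p \<in> {(a, b). lab cs a = lab cs b}" using p by simp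
  qed
next
  show "{(a, b). lab cs a = lab cs b} \<subseteq> R\<^sup>*"
  proof clarify
    fix a b assume e: "lab cs a = lab cs b"
    have 1: "(a, lab cs a) \<in> R\<^sup>*" by (rule lab_rtrancl[OF assms(1,2)])
    have "(b, lab cs b) \<in> R\<^sup>*" by (rule lab_rtrancl[OF assms(1,2)])
    then have 2: "(lab cs b, b) \<in> R\<^sup>*"
      using sym_rtrancl[OF assms(1)] by (rule symD[rotated])
    show "(a, b) \<in> R\<^sup>*" using rtrancl_trans[OF 1[unfolded e] 2] .
  qed
qed

lemma sym_image: "sym d \<Longrightarrow> sym (map_prod f f ` d)"
  by (auto simp: sym_def)

lemma glue_lab:
  assumes "d1 \<in> bdiags r s" "d2 \<in> bdiags s t"
    "\<forall>c\<in>set cs. c \<noteq> [] \<and> chain (map_prod lift_lo lift_lo ` d1 \<union> map_prod lift_hi lift_hi ` d2) c"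
    "\<forall>(a, b)\<in>(map_prod lift_lo lift_lo ` d1 \<union> map_prod lift_hi lift_hi ` d2). lab cs a = lab cs b"
  shows "glue_rel d2 d1 = {(a, b). lab cs a = lab cs b}"
proof -
  have "sym d1" "sym d2" using assms(1,2) by (auto simp: bdiags_def brauer_diag_def)
  then have "sym (map_prod lift_lo lift_lo ` d1 \<union> map_prod lift_hi lift_hi ` d2)"
    by (intro sym_Un sym_image)
  then show ?thesis unfolding glue_rel_def using assms(3,4) by (rule rtrancl_lab)
qed

lemma zeroLoopLemma:
  assumes g: "glue_rel d2 d1 = {(a, b). lab cs a = lab cs b}"
    and h: "\<forall>j<s. fst (lab cs (1, j)) \<noteq> 1 \<and> lab cs (lab cs (1, j)) = lab cs (1, j)"
  shows "diag_loops s d2 d1 = 0"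
proof -
  have E: "\<not> (glue_rel d2 d1 `` {(1, j)} \<subseteq> {(1, j') | j'. j' < s})" if j: "j < s" for j
  proof
    assume sub: "glue_rel d2 d1 `` {(1, j)} \<subseteq> {(1, j') | j'. j' < s}"
    have "lab cs (lab cs (1, j)) = lab cs (1, j)" using h j by blast
    then have "lab cs (1, j) \<in> glue_rel d2 d1 `` {(1, j)}" unfolding g by simp
    with sub have "fst (lab cs (1, j)) = 1" by auto
    with h j show False by blast
  qed
  have "{glue_rel d2 d1 `` {(1, j)} | j. j < s
      \<and> glue_rel d2 d1 `` {(1, j)} \<subseteq> {(1, j') | j'. j' < s}} = {}"
    using E by (simp only: Collect_empty_eq) blast
  then show ?thesis unfolding diag_loops_def by (simp only: card.empty)
qed

lemma diag_comp_lab: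
  assumes "glue_rel d2 d1 = {(a, b). lab cs a = lab cs b}"
  shows "diag_comp r t d2 d1 = {(p, q). p \<in> bpts r t \<and> q \<in> bpts r t \<and> p \<noteq> q
      \<and> lab cs (lift_ext p) = lab cs (lift_ext q)}"
  unfolding diag_comp_def assms by simp

lemma bpts_list: "bpts r s = set (map Inl [0..<r] @ map Inr [0..<s])"
  by (auto simp: bpts_def)

lemma pairs_filter: "{(p, q). p \<in> set xs \<and> q \<in> set xs \<and> P p q} = set (filter (\<lambda>(p, q). P p q) (List.product xs xs))"
  by auto

lemma diag_comp_lab_list:
  assumes "glue_rel d2 d1 = {(a, b). lab cs a = lab cs b}"
  shows "diag_comp r t d2 d1 = set (filter (\<lambda>(p, q). p \<noteq> q \<and> lab cs (lift_ext p) = lab cs (lift_ext q))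
     (List.product (map Inl [0..<r] @ map Inr [0..<t]) (map Inl [0..<r] @ map Inr [0..<t])))"
  unfolding diag_comp_lab[OF assms] bpts_list pairs_filter[symmetric] by simp

lemma idd_simps: "idd 0 = {}" "idd (Suc n) = insert (Inl n, Inr n) (insert (Inr n, Inl n) (idd n))"
  unfolding idd_def by auto

lemma X_bd: "crossd \<in> bdiags 2 2"
  unfolding bdiags_def brauer_diag_def crossd_def bpts_def sym_def
  by (auto simp: lt_simps numeral_eq_Suc)

lemma id2_bd: "idd 2 \<in> bdiags 2 2"
  unfolding bdiags_def brauer_diag_def bpts_def sym_def
  by (auto simp: lt_simps numeral_eq_Suc idd_simps)

lemma comp_calc:
  assumes "d1 \<in> bdiags r s" "d2 \<in> bdiags s t"
    "\<forall>c\<in>set cs. c \<noteq> [] \<and> chain (map_prod lift_lo lift_lo ` d1 \<union> map_prod lift_hi lift_hi ` d2) c"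
    "\<forall>(a, b)\<in>(map_prod lift_lo lift_lo ` d1 \<union> map_prod lift_hi lift_hi ` d2). lab cs a = lab cs b"
    "set (filter (\<lambda>(p, q). p \<noteq> q \<and> lab cs (lift_ext p) = lab cs (lift_ext q))
     (List.product (map Inl [0..<r] @ map Inr [0..<t]) (map Inl [0..<r] @ map Inr [0..<t]))) = D"
    "\<forall>j<s. fst (lab cs (1, j)) \<noteq> 1 \<and> lab cs (lab cs (1, j)) = lab cs (1, j)"
  shows "bcomp \<delta> r s t (bbasis d2) (bbasis d1) = bbasis D"
proof -
  have g: "glue_rel d2 d1 = {(a, b). lab cs a = lab cs b}"
    using glue_lab[OF assms(1-4)] .
  show ?thesis
    by (rule bcomp_bbasis0[OF assms(1,2)])
      (use diag_comp_lab_list[OF g] assms(5) zeroLoopLemma[OF g assms(6)] in auto)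
qed

definition "capId = {(Inl 0, Inl 1), (Inl 1, Inl 0), (Inl 2, Inr 0), (Inr 0, Inl 2)}"
definition "cupId = {(Inr 0, Inr 1), (Inr 1, Inr 0), (Inl 0, Inr 2), (Inr 2, Inl 0)}"
definition "IdX = {(Inl 0, Inr 0), (Inr 0, Inl 0), (Inl 1, Inr 2), (Inr 2, Inl 1), (Inl 2, Inr 1), (Inr 1, Inl 2)}"
definition "XId = {(Inl 0, Inr 1), (Inr 1, Inl 0), (Inl 1, Inr 0), (Inr 0, Inl 1), (Inl 2, Inr 2), (Inr 2, Inl 2)}"
definition "Idcup = {(Inl 0, Inr 0), (Inr 0, Inl 0), (Inr 1, Inr 2), (Inr 2, Inr 1)}"
definition "Idcap = {(Inl 0, Inr 0), (Inr 0, Inl 0), (Inl 1, Inl 2), (Inl 2, Inl 1)}"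
definition "Qd = {(Inl 0, Inr 1), (Inr 1, Inl 0), (Inr 0, Inr 2), (Inr 2, Inr 0)}"
definition "Qd' = {(Inl 0, Inl 2), (Inl 2, Inl 0), (Inl 1, Inr 0), (Inr 0, Inl 1)}"
definition "IdcupId = {(Inl 0, Inr 0), (Inr 0, Inl 0), (Inr 1, Inr 2), (Inr 2, Inr 1), (Inl 1, Inr 3), (Inr 3, Inl 1)}"
definition "IdIdcap = {(Inl 0, Inr 0), (Inr 0, Inl 0), (Inl 1, Inr 1), (Inr 1, Inl 1), (Inl 2, Inl 3), (Inl 3, Inl 2)}"
definition "IdcapId = {(Inl 0, Inr 0), (Inr 0, Inl 0), (Inl 1, Inl 2), (Inl 2, Inl 1), (Inl 3, Inr 1), (Inr 1, Inl 3)}"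
definition "IdIdcup = {(Inl 0, Inr 0), (Inr 0, Inl 0), (Inl 1, Inr 1), (Inr 1, Inl 1), (Inr 2, Inr 3), (Inr 3, Inr 2)}"

lemma idd1: "idd 1 = {(Inl 0, Inr 0), (Inr 0, Inl 0)}" by (auto simp: idd_def)
lemma idd2: "idd 2 = {(Inl 0, Inr 0), (Inr 0, Inl 0), (Inl 1, Inr 1), (Inr 1, Inl 1)}"
  by (auto simp: idd_def less_Suc_eq numeral_eq_Suc)
lemma idd0: "idd 0 = {}" by (simp add: idd_def)

lemmas dgdefs = capId_def cupId_def IdX_def XId_def Idcup_def Idcap_def Qd_def Qd'_def IdcupId_def
  IdIdcap_def IdcapId_def IdIdcup_def crossd_def capd_def cupd_def idd1 idd2 idd0

lemma bd_e0: "{} \<in> bdiags 0 0" by (unfold bdiags_def brauer_diag_def bpts_def sym_def dgdefs, auto simp: lt_simps numeral_eq_Suc)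
lemma bd_id1: "idd 1 \<in> bdiags 1 1" by (unfold bdiags_def brauer_diag_def bpts_def sym_def dgdefs, auto simp: lt_simps numeral_eq_Suc)
lemma bd_id2: "idd 2 \<in> bdiags 2 2" by (unfold bdiags_def brauer_diag_def bpts_def sym_def dgdefs, auto simp: lt_simps numeral_eq_Suc)
lemma bd_X: "crossd \<in> bdiags 2 2" by (unfold bdiags_def brauer_diag_def bpts_def sym_def dgdefs, auto simp: lt_simps numeral_eq_Suc)
lemma bd_cap: "capd \<in> bdiags 2 0" by (unfold bdiags_def brauer_diag_def bpts_def sym_def dgdefs, auto simp: lt_simps numeral_eq_Suc)
lemma bd_cup: "cupd \<in> bdiags 0 2" by (unfold bdiags_def brauer_diag_def bpts_def sym_def dgdefs, auto simp: lt_simps numeral_eq_Suc)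
lemma bd_capId: "capId \<in> bdiags 3 1" by (unfold bdiags_def brauer_diag_def bpts_def sym_def dgdefs, auto simp: lt_simps numeral_eq_Suc)
lemma bd_cupId: "cupId \<in> bdiags 1 3" by (unfold bdiags_def brauer_diag_def bpts_def sym_def dgdefs, auto simp: lt_simps numeral_eq_Suc)
lemma bd_IdX: "IdX \<in> bdiags 3 3" by (unfold bdiags_def brauer_diag_def bpts_def sym_def dgdefs, auto simp: lt_simps numeral_eq_Suc)
lemma bd_XId: "XId \<in> bdiags 3 3" by (unfold bdiags_def brauer_diag_def bpts_def sym_def dgdefs, auto simp: lt_simps numeral_eq_Suc)
lemma bd_Idcup: "Idcup \<in> bdiags 1 3" by (unfold bdiags_def brauer_diag_def bpts_def sym_def dgdefs, auto simp: lt_simps numeral_eq_Suc)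
lemma bd_Idcap: "Idcap \<in> bdiags 3 1" by (unfold bdiags_def brauer_diag_def bpts_def sym_def dgdefs, auto simp: lt_simps numeral_eq_Suc)
lemma bd_Qd: "Qd \<in> bdiags 1 3" by (unfold bdiags_def brauer_diag_def bpts_def sym_def dgdefs, auto simp: lt_simps numeral_eq_Suc)
lemma bd_Qd': "Qd' \<in> bdiags 3 1" by (unfold bdiags_def brauer_diag_def bpts_def sym_def dgdefs, auto simp: lt_simps numeral_eq_Suc)
lemma bd_IdcupId: "IdcupId \<in> bdiags 2 4" by (unfold bdiags_def brauer_diag_def bpts_def sym_def dgdefs, auto simp: lt_simps numeral_eq_Suc)
lemma bd_IdIdcap: "IdIdcap \<in> bdiags 4 2" by (unfold bdiags_def brauer_diag_def bpts_def sym_def dgdefs, auto simp: lt_simps numeral_eq_Suc)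
lemma bd_IdcapId: "IdcapId \<in> bdiags 4 2" by (unfold bdiags_def brauer_diag_def bpts_def sym_def dgdefs, auto simp: lt_simps numeral_eq_Suc)
lemma bd_IdIdcup: "IdIdcup \<in> bdiags 2 4" by (unfold bdiags_def brauer_diag_def bpts_def sym_def dgdefs, auto simp: lt_simps numeral_eq_Suc)

lemmas bds = bd_e0 bd_id1 bd_id2 bd_X bd_cap bd_cup bd_capId bd_cupId bd_IdX bd_XId bd_Idcup bd_Idcap
  bd_Qd bd_Qd' bd_IdcupId bd_IdIdcap bd_IdcapId bd_IdIdcup

lemma t1: "diag_tens 1 1 (idd 1) (idd 1) = idd 2" by (unfold diag_tens_def dgdefs, auto simp: bshift_def)
lemma t2: "diag_tens 2 0 capd (idd 1) = capId" by (unfold diag_tens_def dgdefs, auto simp: bshift_def)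
lemma t3: "diag_tens 0 2 cupd (idd 1) = cupId" by (unfold diag_tens_def dgdefs, auto simp: bshift_def)
lemma t4: "diag_tens 1 1 (idd 1) crossd = IdX" by (unfold diag_tens_def dgdefs, auto simp: bshift_def)
lemma t5: "diag_tens 2 2 crossd (idd 1) = XId" by (unfold diag_tens_def dgdefs, auto simp: bshift_def)
lemma t6: "diag_tens 1 1 (idd 1) cupd = Idcup" by (unfold diag_tens_def dgdefs, auto simp: bshift_def)
lemma t7: "diag_tens 1 1 (idd 1) capd = Idcap" by (unfold diag_tens_def dgdefs, auto simp: bshift_def)
lemma t8: "diag_tens 1 3 Idcup (idd 1) = IdcupId" by (unfold diag_tens_def dgdefs, auto simp: bshift_def)
lemma t9: "diag_tens 2 2 (idd 2) capd = IdIdcap" by (unfold diag_tens_def dgdefs, auto simp: bshift_def)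
lemma t10: "diag_tens 3 1 Idcap (idd 1) = IdcapId" by (unfold diag_tens_def dgdefs, auto simp: bshift_def)
lemma t11: "diag_tens 2 2 (idd 2) cupd = IdIdcup" by (unfold diag_tens_def dgdefs, auto simp: bshift_def)

lemma c1: "bcomp \<delta> 2 2 2 (bbasis (crossd)) (bbasis (crossd)) = bbasis (idd 2)"
  by (rule comp_calc[where cs = "[[(0,0),(1,1),(2,0)],[(0,1),(1,0),(2,1)]]"], rule bds, rule bds,
   simp_all add: dgdefs idd_simps lift_lo_def lift_hi_def lab_def lift_ext_def upt_rec numeral_eq_Suc less_Suc_eq, blast?)

lemma c2: "bcomp \<delta> 2 2 0 (bbasis (capd)) (bbasis (crossd)) = bbasis (capd)"
  by (rule comp_calc[where cs = "[[(0,0),(1,1),(1,0),(0,1)]]"], rule bds, rule bds,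
   simp_all add: dgdefs idd_simps lift_lo_def lift_hi_def lab_def lift_ext_def upt_rec numeral_eq_Suc less_Suc_eq, blast?)

lemma c3: "bcomp \<delta> 0 2 2 (bbasis (crossd)) (bbasis (cupd)) = bbasis (cupd)"
  by (rule comp_calc[where cs = "[[(2,1),(1,0),(1,1),(2,0)]]"], rule bds, rule bds,
   simp_all add: dgdefs idd_simps lift_lo_def lift_hi_def lab_def lift_ext_def upt_rec numeral_eq_Suc less_Suc_eq, blast?)

lemma c5: "bcomp \<delta> 1 1 1 (bbasis (idd 1)) (bbasis (idd 1)) = bbasis (idd 1)"
  by (rule comp_calc[where cs = "[[(0,0),(1,0),(2,0)]]"], rule bds, rule bds,
   simp_all add: dgdefs idd_simps lift_lo_def lift_hi_def lab_def lift_ext_def upt_rec numeral_eq_Suc less_Suc_eq, blast?)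

lemma c6a: "bcomp \<delta> 2 2 2 (bbasis (idd 2)) (bbasis (crossd)) = bbasis (crossd)"
  by (rule comp_calc[where cs = "[[(0,0),(1,1),(2,1)],[(0,1),(1,0),(2,0)]]"], rule bds, rule bds,
   simp_all add: dgdefs idd_simps lift_lo_def lift_hi_def lab_def lift_ext_def upt_rec numeral_eq_Suc less_Suc_eq, blast?)

lemma c6b: "bcomp \<delta> 2 2 2 (bbasis (crossd)) (bbasis (idd 2)) = bbasis (crossd)"
  by (rule comp_calc[where cs = "[[(0,0),(1,0),(2,1)],[(0,1),(1,1),(2,0)]]"], rule bds, rule bds,
   simp_all add: dgdefs idd_simps lift_lo_def lift_hi_def lab_def lift_ext_def upt_rec numeral_eq_Suc less_Suc_eq, blast?)

lemma c7a: "bcomp \<delta> 1 3 3 (bbasis (XId)) (bbasis (Idcup)) = bbasis (Qd)"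
  by (rule comp_calc[where cs = "[[(0,0),(1,0),(2,1)],[(2,0),(1,1),(1,2),(2,2)]]"], rule bds, rule bds,
   simp_all add: dgdefs idd_simps lift_lo_def lift_hi_def lab_def lift_ext_def upt_rec numeral_eq_Suc less_Suc_eq, blast?)

lemma c7b: "bcomp \<delta> 1 3 3 (bbasis (IdX)) (bbasis (cupId)) = bbasis (Qd)"
  by (rule comp_calc[where cs = "[[(0,0),(1,2),(2,1)],[(2,0),(1,0),(1,1),(2,2)]]"], rule bds, rule bds,
   simp_all add: dgdefs idd_simps lift_lo_def lift_hi_def lab_def lift_ext_def upt_rec numeral_eq_Suc less_Suc_eq, blast?)

lemma c7c: "bcomp \<delta> 3 3 1 (bbasis (Idcap)) (bbasis (XId)) = bbasis (Qd')"
  by (rule comp_calc[where cs = "[[(0,1),(1,0),(2,0)],[(0,0),(1,1),(1,2),(0,2)]]"], rule bds, rule bds,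
   simp_all add: dgdefs idd_simps lift_lo_def lift_hi_def lab_def lift_ext_def upt_rec numeral_eq_Suc less_Suc_eq, blast?)

lemma c7d: "bcomp \<delta> 3 3 1 (bbasis (capId)) (bbasis (IdX)) = bbasis (Qd')"
  by (rule comp_calc[where cs = "[[(0,0),(1,0),(1,1),(0,2)],[(0,1),(1,2),(2,0)]]"], rule bds, rule bds,
   simp_all add: dgdefs idd_simps lift_lo_def lift_hi_def lab_def lift_ext_def upt_rec numeral_eq_Suc less_Suc_eq, blast?)

lemma c8a: "bcomp \<delta> 1 3 1 (bbasis (capId)) (bbasis (Idcup)) = bbasis (idd 1)"
  by (rule comp_calc[where cs = "[[(0,0),(1,0),(1,1),(1,2),(2,0)]]"], rule bds, rule bds,
   simp_all add: dgdefs idd_simps lift_lo_def lift_hi_def lab_def lift_ext_def upt_rec numeral_eq_Suc less_Suc_eq, blast?)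

lemma c8b: "bcomp \<delta> 1 3 1 (bbasis (Idcap)) (bbasis (cupId)) = bbasis (idd 1)"
  by (rule comp_calc[where cs = "[[(0,0),(1,2),(1,1),(1,0),(2,0)]]"], rule bds, rule bds,
   simp_all add: dgdefs idd_simps lift_lo_def lift_hi_def lab_def lift_ext_def upt_rec numeral_eq_Suc less_Suc_eq, blast?)

lemma c9a: "bcomp \<delta> 2 2 0 (bbasis (capd)) (bbasis (idd 2)) = bbasis (capd)"
  by (rule comp_calc[where cs = "[[(0,0),(1,0),(1,1),(0,1)]]"], rule bds, rule bds,
   simp_all add: dgdefs idd_simps lift_lo_def lift_hi_def lab_def lift_ext_def upt_rec numeral_eq_Suc less_Suc_eq, blast?)

lemma c9b: "bcomp \<delta> 0 2 2 (bbasis (idd 2)) (bbasis (cupd)) = bbasis (cupd)"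
  by (rule comp_calc[where cs = "[[(2,0),(1,0),(1,1),(2,1)]]"], rule bds, rule bds,
   simp_all add: dgdefs idd_simps lift_lo_def lift_hi_def lab_def lift_ext_def upt_rec numeral_eq_Suc less_Suc_eq, blast?)

lemma c10a: "bcomp \<delta> 2 0 0 (bbasis ({})) (bbasis (capd)) = bbasis (capd)"
  by (rule comp_calc[where cs = "[[(0,0),(0,1)]]"], rule bds, rule bds,
   simp_all add: dgdefs idd_simps lift_lo_def lift_hi_def lab_def lift_ext_def upt_rec numeral_eq_Suc less_Suc_eq, blast?)

lemma c10b: "bcomp \<delta> 0 0 2 (bbasis (cupd)) (bbasis ({})) = bbasis (cupd)"
  by (rule comp_calc[where cs = "[[(2,0),(2,1)]]"], rule bds, rule bds,
   simp_all add: dgdefs idd_simps lift_lo_def lift_hi_def lab_def lift_ext_def upt_rec numeral_eq_Suc less_Suc_eq, blast?)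

lemma c11a: "bcomp \<delta> 2 4 2 (bbasis (IdIdcap)) (bbasis (IdcupId)) = bbasis (idd 2)"
  by (rule comp_calc[where cs = "[[(0,0),(1,0),(2,0)],[(0,1),(1,3),(1,2),(1,1),(2,1)]]"], rule bds, rule bds,
   simp_all add: dgdefs idd_simps lift_lo_def lift_hi_def lab_def lift_ext_def upt_rec numeral_eq_Suc less_Suc_eq, blast?)

lemma c11b: "bcomp \<delta> 2 4 2 (bbasis (IdcapId)) (bbasis (IdIdcup)) = bbasis (idd 2)"
  by (rule comp_calc[where cs = "[[(0,0),(1,0),(2,0)],[(0,1),(1,1),(1,2),(1,3),(2,1)]]"], rule bds, rule bds,
   simp_all add: dgdefs idd_simps lift_lo_def lift_hi_def lab_def lift_ext_def upt_rec numeral_eq_Suc less_Suc_eq, blast?)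

lemma c4: "bcomp \<delta> 0 2 0 (bbasis capd) (bbasis cupd) = (\<lambda>d. \<delta> * bbasis {} d)"
proof -
  define cs where "cs = [[(1::nat, 0::nat), (1, 1)]]"
  have g: "glue_rel capd cupd = {(a, b). lab cs a = lab cs b}"
    by (rule glue_lab[OF bd_cup bd_cap]) (simp_all add: cs_def capd_def cupd_def lift_lo_def lift_hi_def lab_def)
  have l: "lab cs b = (if b = (1, 0) \<or> b = (1, 1) then (1, 0) else b)" for b
    by (auto simp: cs_def lab_def)
  have cl: "glue_rel capd cupd `` {(1, j)} = {(1, 0), (1, 1)}" if "j < 2" for j
    using that unfolding g by (auto simp: l less_Suc_eq numeral_eq_Suc)
  have "{glue_rel capd cupd `` {(1, j)} | j. j < 2
      \<and> glue_rel capd cupd `` {(1, j)} \<subseteq> {(1, j') | j'. j' < 2}} = {{(1, 0), (1, 1)}}"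
  proof -
    have "{glue_rel capd cupd `` {(1, j)} | j. j < 2
      \<and> glue_rel capd cupd `` {(1, j)} \<subseteq> {(1, j') | j'. j' < 2}} =
      {u. \<exists>j. u = {(1, 0), (1, 1)} \<and> j < (2::nat) \<and> {(1::nat, 0::nat), (1, 1)} \<subseteq> {(1, j') | j'. j' < (2::nat)}}"
      by (intro Collect_cong ex_cong1, case_tac "j < 2") (simp only: cl, auto)
    also have "\<dots> = {{(1, 0), (1, 1)}}"
    proof -
      have "{(1::nat, 0::nat), (1, 1)} \<subseteq> {(1, j') | j'. j' < (2::nat)}" by auto
      moreover have "\<exists>j::nat. j < 2" by (rule exI[of _ 0]) simp
      ultimately show ?thesis by auto
    qed
    finally show ?thesis .
  qed
  then have lp: "diag_loops 2 capd cupd = 1" unfolding diag_loops_def by simp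
  have dc: "diag_comp 0 0 capd cupd = {}" by (simp add: diag_comp_def bpts_def)
  show ?thesis unfolding bcomp_bbasis[OF bd_cup bd_cap] lp dc
    by (auto simp: bbasis_def)
qed

fun ty :: "'k abt \<Rightarrow> (nat \<times> nat) option" where
  "ty Pole = Some (0, 0)"
| "ty HH = Some (1, 1)"
| "ty (Comp D E) = (case ty D of None \<Rightarrow> None | Some (s, t) \<Rightarrow>
     (case ty E of None \<Rightarrow> None | Some (r, s') \<Rightarrow> if s = s' then Some (r, t) else None))"
| "ty (Tens D k l B) = (case ty D of None \<Rightarrow> None | Some (r, s) \<Rightarrow> Some (r + k, s + l))"
| "ty (Zer r s) = Some (r, s)"
| "ty (Add D E) = (if ty D = ty E then ty D else None)"
| "ty (Smul c D) = ty D"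

lemma wt_ty: "wt D r s \<longleftrightarrow> ty D = Some (r, s)"
proof
  assume "wt D r s" then show "ty D = Some (r, s)"
    by (induction rule: wt.induct) auto
next
  assume "ty D = Some (r, s)" then show "wt D r s"
  proof (induction D arbitrary: r s)
    case Pole then show ?case by (auto intro: wt.intros)
  next
    case HH then have "r = 1" "s = 1" by simp_all
    then show ?case using wt.intros(2)[unfolded One_nat_def] by simp
  next
    case (Comp D E)
    then obtain m where "ty D = Some (m, s)" "ty E = Some (r, m)"
      by (auto split: option.splits if_splits)
    then show ?case using Comp.IH wt.intros(3) by blast
  next
    case (Tens D k l B)
    then show ?case by (auto intro: wt.intros split: option.splits)
  next
    case (Zer r s) then show ?case by (auto intro: wt.intros)
  next
    case (Add D E) then show ?case by (auto intro: wt.intros split: if_splits)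
  next
    case (Smul c D) then show ?case by (auto intro: wt.intros)
  qed
qed

lemma abeq_wt: "abeq \<delta> r s D E \<Longrightarrow> wt D r s \<and> wt E r s"
  by (induction rule: abeq.induct) (simp_all add: wt_ty aI_def aX0_def aH01_def aH02_def aH12_def atransp_def)

lemma abeq_ty: "abeq \<delta> r s D E \<Longrightarrow> ty D = Some (r, s) \<and> ty E = Some (r, s)"
  using abeq_wt wt_ty by blast

lemma ty_aI[simp]: "ty (aI r) = Some (r, r)" by (simp add: aI_def)
lemma ty_asub[simp]: "ty (asub D E) = ty (Add D E)" by (simp add: asub_def)
lemma ty_aX0[simp]: "ty aX0 = Some (2, 2)" by (simp add: aX0_def)
lemma ty_aH01[simp]: "ty aH01 = Some (2, 2)" by (simp add: aH01_def)
lemma ty_aH02[simp]: "ty aH02 = Some (2, 2)" by (simp add: aH02_def)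
lemma ty_aH12[simp]: "ty (aH12 \<delta>) = Some (2, 2)" by (simp add: aH12_def)
lemma ty_aPi[simp]: "ty aPi = Some (2, 0)" by (simp add: aPi_def)
lemma ty_aAmalg[simp]: "ty aAmalg = Some (0, 2)" by (simp add: aAmalg_def)
lemma ty_atransp[simp]: "ty D = Some (1, 1) \<Longrightarrow> ty (atransp D) = Some (1, 1)" by (simp add: atransp_def)
lemma ty_apow[simp]: "ty D = Some (1, 1) \<Longrightarrow> ty (apow D n) = Some (1, 1)"
  by (induction n) (simp_all add: apow_def)
lemma ty_aPhi[simp]: "ty (aPhi \<delta>) = Some (1, 1)" by (simp add: aPhi_def)
lemma ty_aZ[simp]: "ty (aZ n) = Some (0, 0)" by (simp add: aZ_def)
lemma ty_aG[simp]: "ty (aG n) = Some (1, 1)" by (simp add: aG_def)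
lemma ty_asum[simp]: "(\<forall>i\<in>set xs. ty (f i) = Some (1, 1)) \<Longrightarrow> ty (asum f xs) = Some (1, 1)"
  by (induction xs) (simp_all add: asum_def)

context fixes \<delta> :: "'k::comm_ring_1"
begin

abbreviation EQ where "EQ \<equiv> abeq \<delta>"

lemmas eq_trans[trans] = ab_trans[of \<delta>]

lemma eq_refl: "ty D = Some (r, s) \<Longrightarrow> EQ r s D D"
  by (rule ab_refl) (simp add: wt_ty)

lemma eq_sym: "EQ r s D E \<Longrightarrow> EQ r s E D" by (rule ab_sym)

lemma compL: "EQ s t D D' \<Longrightarrow> ty E = Some (r, s) \<Longrightarrow> EQ r t (Comp D E) (Comp D' E)"
  by (rule ab_comp_cong) (auto intro: eq_refl)
lemma compR: "EQ r s E E' \<Longrightarrow> ty D = Some (s, t) \<Longrightarrow> EQ r t (Comp D E) (Comp D E')"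
  by (rule ab_comp_cong) (auto intro: eq_refl)
lemma addL: "EQ r s D D' \<Longrightarrow> ty E = Some (r, s) \<Longrightarrow> EQ r s (Add D E) (Add D' E)"
  by (rule ab_add_cong) (auto intro: eq_refl)
lemma addR: "EQ r s E E' \<Longrightarrow> ty D = Some (r, s) \<Longrightarrow> EQ r s (Add D E) (Add D E')"
  by (rule ab_add_cong) (auto intro: eq_refl)
lemma smulC: "EQ r s D D' \<Longrightarrow> EQ r s (Smul c D) (Smul c D')"
  by (rule ab_smul_cong)
lemma subC: "EQ r s D D' \<Longrightarrow> EQ r s E E' \<Longrightarrow> EQ r s (asub D E) (asub D' E')"
  unfolding asub_def by (intro ab_add_cong ab_smul_cong)
lemma tensC: "EQ r s D D' \<Longrightarrow> r' = r + k \<Longrightarrow> s' = s + l \<Longrightarrow> EQ r' s' (Tens D k l B) (Tens D' k l B)"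
  using ab_tens_cong[of \<delta> r s D D' k l B B] by simp

lemma ty_wt: "ty D = Some (r, s) \<Longrightarrow> wt D r s" by (simp add: wt_ty)

lemma add_zero_r: "ty D = Some (r, s) \<Longrightarrow> EQ r s (Add D (Zer r s)) D"
proof -
  assume t: "ty D = Some (r, s)"
  have "EQ r s (Add D (Zer r s)) (Add (Zer r s) D)" by (rule ab_add_comm) (simp_all add: t wt_ty)
  also have "EQ r s \<dots> D" by (rule ab_add_zero) (simp add: t wt_ty)
  finally show ?thesis .
qed

lemma smul_zero: "ty D = Some (r, s) \<Longrightarrow> EQ r s (Smul 0 D) (Zer r s)"
proof -
  assume t: "ty D = Some (r, s)"
  let ?Z = "Smul 0 D"
  have tz: "ty ?Z = Some (r, s)" using t by simp
  have zz: "EQ r s ?Z (Add ?Z ?Z)" using ab_add_smul[of D r s \<delta> 0 0, OF ty_wt[OF t]] by simp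
  have "EQ r s (Zer r s) (Add ?Z (Smul (-1) ?Z))" by (rule eq_sym, rule ab_add_neg) (simp add: t wt_ty)
  also have "EQ r s \<dots> (Add (Add ?Z ?Z) (Smul (-1) ?Z))" by (rule addL[OF zz]) (simp add: t)
  also have "EQ r s \<dots> (Add ?Z (Add ?Z (Smul (-1) ?Z)))" by (rule ab_add_assoc) (simp_all add: t wt_ty)
  also have "EQ r s \<dots> (Add ?Z (Zer r s))" by (rule addR, rule ab_add_neg) (simp_all add: t wt_ty)
  also have "EQ r s \<dots> ?Z" by (rule add_zero_r[OF tz])
  finally show ?thesis by (rule eq_sym)
qed

lemma smul_Zer: "EQ r s (Smul c (Zer r s)) (Zer r s)"
proof -
  have "EQ r s (Smul c (Zer r s)) (Smul c (Smul 0 (Zer r s)))"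
    by (rule smulC, rule eq_sym, rule smul_zero) simp
  also have "EQ r s \<dots> (Smul (c * 0) (Zer r s))" by (rule eq_sym, rule ab_smul_smul) (simp add: wt_ty)
  also have "EQ r s \<dots> (Zer r s)" using smul_zero[of "Zer r s" r s] by simp
  finally show ?thesis .
qed

lemma add_lcomm: "ty A = Some (r, s) \<Longrightarrow> ty B = Some (r, s) \<Longrightarrow> ty C = Some (r, s) \<Longrightarrow>
  EQ r s (Add A (Add B C)) (Add B (Add A C))"
proof -
  assume t: "ty A = Some (r, s)" "ty B = Some (r, s)" "ty C = Some (r, s)"
  have "EQ r s (Add A (Add B C)) (Add (Add A B) C)" by (rule eq_sym, rule ab_add_assoc) (simp_all add: t wt_ty)
  also have "EQ r s \<dots> (Add (Add B A) C)" by (rule addL, rule ab_add_comm) (simp_all add: t wt_ty)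
  also have "EQ r s \<dots> (Add B (Add A C))" by (rule ab_add_assoc) (simp_all add: t wt_ty)
  finally show ?thesis .
qed

lemma add_4: "ty A = Some (r, s) \<Longrightarrow> ty B = Some (r, s) \<Longrightarrow> ty C = Some (r, s) \<Longrightarrow> ty D = Some (r, s) \<Longrightarrow>
  EQ r s (Add (Add A B) (Add C D)) (Add (Add A C) (Add B D))"
proof -
  assume t: "ty A = Some (r, s)" "ty B = Some (r, s)" "ty C = Some (r, s)" "ty D = Some (r, s)"
  have "EQ r s (Add (Add A B) (Add C D)) (Add A (Add B (Add C D)))" by (rule ab_add_assoc) (simp_all add: t wt_ty)
  also have "EQ r s \<dots> (Add A (Add C (Add B D)))" by (rule addR, rule add_lcomm) (simp_all add: t)
  also have "EQ r s \<dots> (Add (Add A C) (Add B D))" by (rule eq_sym, rule ab_add_assoc) (simp_all add: t wt_ty)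
  finally show ?thesis .
qed

fun lc :: "'k abt \<Rightarrow> 'k abt \<Rightarrow> 'k" where
  "lc (Add a b) = (\<lambda>y. lc a y + lc b y)"
| "lc (Smul c a) = (\<lambda>y. c * lc a y)"
| "lc (Zer r s) = (\<lambda>y. 0)"
| "lc Pole = (\<lambda>y. if y = Pole then 1 else 0)"
| "lc HH = (\<lambda>y. if y = HH then 1 else 0)"
| "lc (Comp a b) = (\<lambda>y. if y = Comp a b then 1 else 0)"
| "lc (Tens a k l B) = (\<lambda>y. if y = Tens a k l B then 1 else 0)"

fun atoms :: "'k abt \<Rightarrow> 'k abt list" where
  "atoms (Add a b) = atoms a @ atoms b"
| "atoms (Smul c a) = atoms a"
| "atoms (Zer r s) = []"
| "atoms x = [x]"

definition canon :: "nat \<Rightarrow> nat \<Rightarrow> 'k abt list \<Rightarrow> ('k abt \<Rightarrow> 'k) \<Rightarrow> 'k abt" where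
  "canon r s xs f = foldr (\<lambda>x acc. Add (Smul (f x) x) acc) xs (Zer r s)"

lemma canon_simps: "canon r s [] f = Zer r s" "canon r s (x # xs) f = Add (Smul (f x) x) (canon r s xs f)"
  by (simp_all add: canon_def)

lemma ty_canon: "\<forall>x\<in>set xs. ty x = Some (r, s) \<Longrightarrow> ty (canon r s xs f) = Some (r, s)"
  by (induction xs) (simp_all add: canon_simps)

lemma canon_cong: "\<forall>x\<in>set xs. f x = g x \<Longrightarrow> canon r s xs f = canon r s xs g"
  by (induction xs) (simp_all add: canon_simps)

lemma canon_zero: "\<forall>x\<in>set xs. ty x = Some (r, s) \<Longrightarrow> EQ r s (canon r s xs (\<lambda>y. 0)) (Zer r s)"
proof (induction xs)
  case Nil then show ?case by (simp add: canon_simps eq_refl)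
next
  case (Cons x xs)
  then have tx: "ty x = Some (r, s)" and tc: "ty (canon r s xs (\<lambda>y. 0)) = Some (r, s)"
    by (simp_all add: ty_canon)
  have "EQ r s (canon r s (x # xs) (\<lambda>y. 0)) (Add (Zer r s) (canon r s xs (\<lambda>y. 0)))"
    unfolding canon_simps by (rule addL, rule smul_zero[OF tx]) (simp add: tc)
  also have "EQ r s \<dots> (canon r s xs (\<lambda>y. 0))" by (rule ab_add_zero) (simp add: tc wt_ty)
  also have "EQ r s \<dots> (Zer r s)" using Cons by simp
  finally show ?case .
qed

lemma canon_add: "\<forall>x\<in>set xs. ty x = Some (r, s) \<Longrightarrow>
  EQ r s (canon r s xs (\<lambda>y. f y + g y)) (Add (canon r s xs f) (canon r s xs g))"
proof (induction xs)
  case Nil then show ?case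
    by (simp add: canon_simps) (rule eq_sym, rule add_zero_r, simp)
next
  case (Cons x xs)
  then have tx: "ty x = Some (r, s)" and tc: "\<And>h. ty (canon r s xs h) = Some (r, s)"
    by (simp_all add: ty_canon)
  have "EQ r s (canon r s (x # xs) (\<lambda>y. f y + g y))
      (Add (Add (Smul (f x) x) (Smul (g x) x)) (Add (canon r s xs f) (canon r s xs g)))"
    unfolding canon_simps by (rule ab_add_cong, rule ab_add_smul) (use Cons tx wt_ty in auto)
  also have "EQ r s \<dots> (Add (Add (Smul (f x) x) (canon r s xs f)) (Add (Smul (g x) x) (canon r s xs g)))"
    by (rule add_4) (simp_all add: tx tc)
  finally show ?case by (simp add: canon_simps)
qed

lemma canon_smul: "\<forall>x\<in>set xs. ty x = Some (r, s) \<Longrightarrow>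
  EQ r s (canon r s xs (\<lambda>y. c * f y)) (Smul c (canon r s xs f))"
proof (induction xs)
  case Nil then show ?case
    by (simp add: canon_simps) (rule eq_sym, rule smul_Zer)
next
  case (Cons x xs)
  then have tx: "ty x = Some (r, s)" and tc: "\<And>h. ty (canon r s xs h) = Some (r, s)"
    by (simp_all add: ty_canon)
  have "EQ r s (canon r s (x # xs) (\<lambda>y. c * f y))
      (Add (Smul c (Smul (f x) x)) (Smul c (canon r s xs f)))"
    unfolding canon_simps by (rule ab_add_cong, rule ab_smul_smul) (use Cons tx wt_ty in auto)
  also have "EQ r s \<dots> (Smul c (canon r s (x # xs) f))"
    unfolding canon_simps by (rule eq_sym, rule ab_smul_add) (simp_all add: tx tc wt_ty)
  finally show ?case .
qed

lemma canon_ind: "\<forall>x\<in>set xs. ty x = Some (r, s) \<Longrightarrow> distinct xs \<Longrightarrow> a \<in> set xs \<Longrightarrow>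
  EQ r s (canon r s xs (\<lambda>y. if y = a then 1 else 0)) a"
proof (induction xs)
  case Nil then show ?case by simp
next
  case (Cons x xs)
  then have tx: "ty x = Some (r, s)" and tc: "\<And>h. ty (canon r s xs h) = Some (r, s)"
    and ta: "ty a = Some (r, s)" by (auto simp: ty_canon)
  show ?case
  proof (cases "x = a")
    case True
    then have "a \<notin> set xs" using Cons by auto
    then have "canon r s xs (\<lambda>y. if y = a then 1 else 0) = canon r s xs (\<lambda>y. 0)"
      by (intro canon_cong) auto
    then have "EQ r s (canon r s (x # xs) (\<lambda>y. if y = a then 1 else 0)) (Add (Smul 1 a) (Zer r s))"
      unfolding canon_simps using True by (auto intro!: addR canon_zero simp: Cons ta)
    also have "EQ r s \<dots> (Smul 1 a)" by (rule add_zero_r) (simp add: ta)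
    also have "EQ r s \<dots> a" by (rule ab_smul_one) (simp add: ta wt_ty)
    finally show ?thesis .
  next
    case False
    then have "EQ r s (canon r s (x # xs) (\<lambda>y. if y = a then 1 else 0))
       (Add (Zer r s) (canon r s xs (\<lambda>y. if y = a then 1 else 0)))"
      unfolding canon_simps by (auto intro!: addL smul_zero simp: tx tc)
    also have "EQ r s \<dots> (canon r s xs (\<lambda>y. if y = a then 1 else 0))"
      by (rule ab_add_zero) (simp add: tc wt_ty)
    also have "EQ r s \<dots> a" using Cons False by auto
    finally show ?thesis .
  qed
qed

lemma atoms_ty: "ty a = Some (r, s) \<Longrightarrow> x \<in> set (atoms a) \<Longrightarrow> ty x = Some (r, s)"
proof (induction a arbitrary: r s)
  case (Add a b)
  then have "ty a = Some (r, s)" "ty b = Some (r, s)" by (auto split: if_splits)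
  then show ?case using Add by auto
qed (auto split: if_splits)

lemma canon_lc: "ty a = Some (r, s) \<Longrightarrow> set (atoms a) \<subseteq> set xs \<Longrightarrow> distinct xs \<Longrightarrow>
  \<forall>x\<in>set xs. ty x = Some (r, s) \<Longrightarrow> EQ r s a (canon r s xs (lc a))"
proof (induction a arbitrary: r s)
  case (Add a b)
  then have "ty a = Some (r, s)" "ty b = Some (r, s)" by (auto split: if_splits)
  with Add have "EQ r s (Add a b) (Add (canon r s xs (lc a)) (canon r s xs (lc b)))"
    by (intro ab_add_cong) auto
  also have "EQ r s \<dots> (canon r s xs (lc (Add a b)))"
    using canon_add[OF Add.prems(4), of "lc a" "lc b"] by (simp add: eq_sym)
  finally show ?case .
next
  case (Smul c a)
  then have "EQ r s (Smul c a) (Smul c (canon r s xs (lc a)))" by (intro smulC) auto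
  also have "EQ r s \<dots> (canon r s xs (lc (Smul c a)))"
    using canon_smul[OF Smul.prems(4), of c "lc a"] by (simp add: eq_sym)
  finally show ?case .
next
  case (Zer r' s')
  then show ?case using canon_zero[OF Zer.prems(4)] by (simp add: eq_sym)
next
  case Pole then show ?case using canon_ind[OF Pole.prems(4,3), of Pole] by (simp add: eq_sym)
next
  case HH then show ?case using canon_ind[OF HH.prems(4,3), of HH] by (simp add: eq_sym)
next
  case (Comp a b) then show ?case using canon_ind[OF Comp.prems(4,3), of "Comp a b"] by (simp add: eq_sym)
next
  case (Tens a k l B) then show ?case using canon_ind[OF Tens.prems(4,3), of "Tens a k l B"] by (simp add: eq_sym)
qed

lemma lin: "ty a = Some (r, s) \<Longrightarrow> ty b = Some (r, s) \<Longrightarrow> lc a = lc b \<Longrightarrow> EQ r s a b"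
proof -
  assume ta: "ty a = Some (r, s)" and tb: "ty b = Some (r, s)" and l: "lc a = lc b"
  let ?xs = "remdups (atoms a @ atoms b)"
  have tx: "\<forall>x\<in>set ?xs. ty x = Some (r, s)"
  proof
    fix x assume "x \<in> set ?xs"
    then have "x \<in> set (atoms a) \<or> x \<in> set (atoms b)" by simp
    then show "ty x = Some (r, s)" using atoms_ty[OF ta] atoms_ty[OF tb] by blast
  qed
  have s1: "set (atoms a) \<subseteq> set ?xs" "set (atoms b) \<subseteq> set ?xs" "distinct ?xs" by auto
  have "EQ r s a (canon r s ?xs (lc a))" by (rule canon_lc[OF ta s1(1) s1(3) tx])
  also have "EQ r s (canon r s ?xs (lc a)) b" unfolding l by (rule eq_sym, rule canon_lc[OF tb s1(2) s1(3) tx])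
  finally show ?thesis .
qed

end

lemma aI1: "aI 1 = Tens Pole 1 1 bI" by (simp add: aI_def bI_def)
lemma aI2: "aI 2 = Tens Pole 2 2 (bbasis (idd 2))" by (simp add: aI_def)
lemma aI0: "aI 0 = Tens Pole 0 0 (bbasis {})" by (simp add: aI_def idd0)

lemma bt1: "btens 1 1 1 1 bI bI = bbasis (idd 2)"
  unfolding bI_def by (simp only: btens_bbasis[OF bd_id1 bd_id1] t1)
lemma bt2: "btens 2 0 1 1 bcap bI = bbasis capId"
  unfolding bI_def bcap_def by (simp only: btens_bbasis[OF bd_cap bd_id1] t2)
lemma bt3: "btens 0 2 1 1 bcup bI = bbasis cupId"
  unfolding bI_def bcup_def by (simp only: btens_bbasis[OF bd_cup bd_id1] t3)
lemma bt4: "btens 1 1 2 2 bI bX = bbasis IdX"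
  unfolding bI_def bX_def by (simp only: btens_bbasis[OF bd_id1 bd_X] t4)
lemma bt5: "btens 2 2 1 1 bX bI = bbasis XId"
  unfolding bI_def bX_def by (simp only: btens_bbasis[OF bd_X bd_id1] t5)
lemma bt6: "btens 1 1 0 2 bI bcup = bbasis Idcup"
  unfolding bI_def bcup_def by (simp only: btens_bbasis[OF bd_id1 bd_cup] t6)
lemma bt7: "btens 1 1 2 0 bI bcap = bbasis Idcap"
  unfolding bI_def bcap_def by (simp only: btens_bbasis[OF bd_id1 bd_cap] t7)
lemma bt8: "btens 1 3 1 1 (bbasis Idcup) bI = bbasis IdcupId"
  unfolding bI_def by (simp only: btens_bbasis[OF bd_Idcup bd_id1] t8)
lemma bt9: "btens 2 2 2 0 (bbasis (idd 2)) bcap = bbasis IdIdcap"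
  unfolding bcap_def by (simp only: btens_bbasis[OF bd_id2 bd_cap] t9)
lemma bt10: "btens 3 1 1 1 (bbasis Idcap) bI = bbasis IdcapId"
  unfolding bI_def by (simp only: btens_bbasis[OF bd_Idcap bd_id1] t10)
lemma bt11: "btens 2 2 0 2 (bbasis (idd 2)) bcup = bbasis IdIdcup"
  unfolding bcup_def by (simp only: btens_bbasis[OF bd_id2 bd_cup] t11)

lemma cc1: "bcomp \<delta> 2 2 2 bX bX = bbasis (idd 2)" unfolding bX_def by (rule c1)
lemma cc2: "bcomp \<delta> 2 2 0 bcap bX = bcap" unfolding bX_def bcap_def by (rule c2)
lemma cc3: "bcomp \<delta> 0 2 2 bX bcup = bcup" unfolding bX_def bcup_def by (rule c3)
lemma cc4: "bcomp \<delta> 0 2 0 bcap bcup = (\<lambda>d. \<delta> * bbasis {} d)" unfolding bcap_def bcup_def by (rule c4)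
lemma cc5: "bcomp \<delta> 1 1 1 bI bI = bI" unfolding bI_def by (rule c5)
lemma cc6a: "bcomp \<delta> 2 2 2 (bbasis (idd 2)) bX = bX" unfolding bX_def by (rule c6a)
lemma cc6b: "bcomp \<delta> 2 2 2 bX (bbasis (idd 2)) = bX" unfolding bX_def by (rule c6b)
lemma cc9a: "bcomp \<delta> 2 2 0 bcap (bbasis (idd 2)) = bcap" unfolding bcap_def by (rule c9a)
lemma cc9b: "bcomp \<delta> 0 2 2 (bbasis (idd 2)) bcup = bcup" unfolding bcup_def by (rule c9b)
lemma cc10a: "bcomp \<delta> 2 0 0 (bbasis {}) bcap = bcap" unfolding bcap_def by (rule c10a)
lemma cc10b: "bcomp \<delta> 0 0 2 bcup (bbasis {}) = bcup" unfolding bcup_def by (rule c10b)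
lemma cc8a: "bcomp \<delta> 1 3 1 (bbasis capId) (bbasis Idcup) = bI" unfolding bI_def by (rule c8a)
lemma cc8b: "bcomp \<delta> 1 3 1 (bbasis Idcap) (bbasis cupId) = bI" unfolding bI_def by (rule c8b)

lemmas bts = bt1 bt2 bt3 bt4 bt5 bt6 bt7 bt8 bt9 bt10 bt11
lemmas bts' = bts[unfolded One_nat_def]
lemmas ccs = cc1 cc2 cc3 cc4 cc5 cc6a cc6b cc9a cc9b cc10a cc10b cc8a cc8b
lemmas ccs' = ccs[unfolded One_nat_def]

context fixes \<delta> :: "'k::comm_ring_1"
begin

lemma P_comp: "bcomp \<delta> k l m B A = C \<Longrightarrow> EQ \<delta> k m (Comp (Tens Pole l m B) (Tens Pole k l A)) (Tens Pole k m C)"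
  using ab_rel_i1[of \<delta> k m l B A] by simp

lemma L_int: "ty D = Some (s, t) \<Longrightarrow> ty E = Some (r, s) \<Longrightarrow> bcomp \<delta> k l m B A = C \<Longrightarrow>
  r' = r + k \<Longrightarrow> t' = t + m \<Longrightarrow>
  EQ \<delta> r' t' (Comp (Tens D l m B) (Tens E k l A)) (Tens (Comp D E) k m C)"
proof -
  assume a: "ty D = Some (s, t)" "ty E = Some (r, s)" "bcomp \<delta> k l m B A = C" "r' = r + k" "t' = t + m"
  have "EQ \<delta> (r + k) (t + m) (Comp (Tens D l m B) (Tens E k l A)) (Tens (Comp D E) k m (bcomp \<delta> k l m B A))"
    by (rule ab_interchange) (simp_all add: wt_ty a)
  then show ?thesis using a by simp
qed

lemma L_assoc: "ty D = Some (r, s) \<Longrightarrow> btens k l k' l' B C = C' \<Longrightarrow> K = k + k' \<Longrightarrow> L = l + l' \<Longrightarrow>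
  r'' = r + k + k' \<Longrightarrow> s'' = s + l + l' \<Longrightarrow>
  EQ \<delta> r'' s'' (Tens (Tens D k l B) k' l' C) (Tens D K L C')"
proof -
  assume a: "ty D = Some (r, s)" "btens k l k' l' B C = C'" "K = k + k'" "L = l + l'" "r'' = r + k + k'" "s'' = s + l + l'"
  have "EQ \<delta> (r + k + k') (s + l + l') (Tens (Tens D k l B) k' l' C) (Tens D (k + k') (l + l') (btens k l k' l' B C))"
    by (rule ab_tens_assoc) (simp add: wt_ty a)
  then show ?thesis using a by simp
qed

lemma L_unit: "ty D = Some (r, s) \<Longrightarrow> EQ \<delta> r s (Tens D 0 0 (bbasis {})) D"
  by (rule ab_tens_unit) (simp add: wt_ty)

lemma pole_aI0: "EQ \<delta> 0 0 (aI 0) Pole"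
  unfolding aI0 by (rule L_unit) simp

lemma id_left: "ty D = Some (r, s) \<Longrightarrow> EQ \<delta> r s (Comp (aI s) D) D"
  by (rule ab_id_left) (simp add: wt_ty)
lemma id_right: "ty D = Some (r, s) \<Longrightarrow> EQ \<delta> r s (Comp D (aI r)) D"
  by (rule ab_id_right) (simp add: wt_ty)

lemma pole_left: "ty F = Some (r, 0) \<Longrightarrow> EQ \<delta> r 0 (Comp Pole F) F"
proof -
  assume t: "ty F = Some (r, 0)"
  have "EQ \<delta> r 0 (Comp Pole F) (Comp (aI 0) F)" by (rule compL[OF eq_sym[OF pole_aI0]]) (simp add: t)
  also have "EQ \<delta> r 0 \<dots> F" by (rule id_left[OF t])
  finally show ?thesis .
qed

lemma pole_right: "ty F = Some (0, t) \<Longrightarrow> EQ \<delta> 0 t (Comp F Pole) F"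
proof -
  assume tt: "ty F = Some (0, t)"
  have "EQ \<delta> 0 t (Comp F Pole) (Comp F (aI 0))" by (rule compR[OF eq_sym[OF pole_aI0]]) (simp add: tt)
  also have "EQ \<delta> 0 t \<dots> F" by (rule id_right[OF tt])
  finally show ?thesis .
qed

lemma assocE: "ty D = Some (t, u) \<Longrightarrow> ty E = Some (s, t) \<Longrightarrow> ty F = Some (r, s) \<Longrightarrow>
  EQ \<delta> r u (Comp (Comp D E) F) (Comp D (Comp E F))"
  by (rule ab_comp_assoc) (simp_all add: wt_ty)

lemma P1: "ty D = Some (s, t) \<Longrightarrow> ty E = Some (r, s) \<Longrightarrow>
  EQ \<delta> (r + 1) (t + 1) (Tens (Comp D E) 1 1 bI) (Comp (Tens D 1 1 bI) (Tens E 1 1 bI))"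
  by (rule eq_sym, rule L_int) (simp_all add: ccs ccs')

lemma P2: "EQ \<delta> 2 2 (Tens (aI 1) 1 1 bI) (aI 2)"
  unfolding aI1 aI2 by (rule L_assoc) (simp_all add: bts bts')

lemma P3: "ty D = Some (r, s) \<Longrightarrow> EQ \<delta> (r + 2) (s + 2) (Tens (Tens D 1 1 bI) 1 1 bI) (Tens D 2 2 (bbasis (idd 2)))"
  by (rule L_assoc) (simp_all add: bts bts')

end

declare One_nat_def[simp del]
declare add_numeral_special[simp]

abbreviation PP :: "nat \<Rightarrow> nat \<Rightarrow> bdiagram \<Rightarrow> 'k::comm_ring_1 abt" where
  "PP k l d \<equiv> Tens Pole k l (bbasis d)"
abbreviation "I2b \<equiv> bbasis (idd 2)"

definition "IdCupT = Tens (aI 1) 0 2 bcup"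
definition "IdCapT = Tens (aI 1) 2 0 bcap"
definition "Tt F = Comp (Tens F 1 1 bI) IdCupT"
definition "Tt' G = Comp IdCapT (Tens G 1 1 bI)"
definition "U A = Comp aPi (Tens A 1 1 bI)"
definition "U' A = Comp (Tens A 1 1 bI) aAmalg"

lemma ty_IdCupT[simp]: "ty IdCupT = Some (1, 3)" by (simp add: IdCupT_def)
lemma ty_IdCapT[simp]: "ty IdCapT = Some (3, 1)" by (simp add: IdCapT_def)
lemma ty_Tt[simp]: "ty F = Some (2, 0) \<Longrightarrow> ty (Tt F) = Some (1, 1)" by (simp add: Tt_def)
lemma ty_Tt'[simp]: "ty F = Some (0, 2) \<Longrightarrow> ty (Tt' F) = Some (1, 1)" by (simp add: Tt'_def)
lemma ty_U[simp]: "ty F = Some (1, 1) \<Longrightarrow> ty (U F) = Some (2, 0)" by (simp add: U_def)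
lemma ty_U'[simp]: "ty F = Some (1, 1) \<Longrightarrow> ty (U' F) = Some (0, 2)" by (simp add: U'_def)

context fixes \<delta> :: "'k::comm_ring_1"
begin

lemma cT: "ty E = Some (r, s) \<Longrightarrow> EQ \<delta> s t D D' \<Longrightarrow> EQ \<delta> r s E E' \<Longrightarrow> EQ \<delta> r t (Comp D E) (Comp D' E')"
  by (rule ab_comp_cong)
lemma cLT: "ty E = Some (r, s) \<Longrightarrow> EQ \<delta> s t D D' \<Longrightarrow> EQ \<delta> r t (Comp D E) (Comp D' E)"
  by (rule compL)
lemma cRT: "ty D = Some (s, t) \<Longrightarrow> EQ \<delta> r s E E' \<Longrightarrow> EQ \<delta> r t (Comp D E) (Comp D E')"
  by (rule compR)

lemma P1x: "ty D = Some (s, t) \<Longrightarrow> ty E = Some (r, s) \<Longrightarrow> r' = r + 1 \<Longrightarrow> t' = t + 1 \<Longrightarrow>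
  EQ \<delta> r' t' (Tens (Comp D E) 1 1 bI) (Comp (Tens D 1 1 bI) (Tens E 1 1 bI))"
  using P1 by simp

lemma P3x: "ty D = Some (r, s) \<Longrightarrow> r' = r + 2 \<Longrightarrow> s' = s + 2 \<Longrightarrow>
  EQ \<delta> r' s' (Tens (Tens D 1 1 bI) 1 1 bI) (Tens D 2 2 (bbasis (idd 2)))"
  using P3 by simp

lemma PPc: "bcomp \<delta> k l m (bbasis d2) (bbasis d1) = bbasis D \<Longrightarrow>
  EQ \<delta> k m (Comp (PP l m d2) (PP k l d1)) (PP k m D)"
  by (rule P_comp)

lemma e_IdCupT: "EQ \<delta> 1 3 IdCupT (PP 1 3 Idcup)"
  unfolding IdCupT_def aI1 by (rule L_assoc) (simp_all add: bts bts')
lemma e_IdCapT: "EQ \<delta> 3 1 IdCapT (PP 3 1 Idcap)"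
  unfolding IdCapT_def aI1 by (rule L_assoc) (simp_all add: bts bts')
lemma e_TensPi: "EQ \<delta> 3 1 (Tens aPi 1 1 bI) (PP 3 1 capId)"
  unfolding aPi_def by (rule L_assoc) (simp_all add: bts bts')
lemma e_TensAm: "EQ \<delta> 1 3 (Tens aAmalg 1 1 bI) (PP 1 3 cupId)"
  unfolding aAmalg_def by (rule L_assoc) (simp_all add: bts bts')
lemma e_Tenss: "EQ \<delta> 3 3 (Tens aX0 1 1 bI) (PP 3 3 XId)"
  unfolding aX0_def by (rule L_assoc) (simp_all add: bts bts')
lemma e_TensI1X: "EQ \<delta> 3 3 (Tens (aI 1) 2 2 bX) (PP 3 3 IdX)"
  unfolding aI1 by (rule L_assoc) (simp_all add: bts bts')
lemma e_TensIdCupT: "EQ \<delta> 2 4 (Tens IdCupT 1 1 bI) (PP 2 4 IdcupId)"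
proof -
  have "EQ \<delta> 2 4 (Tens IdCupT 1 1 bI) (Tens (PP 1 3 Idcup) 1 1 bI)"
    by (rule tensC[OF e_IdCupT]) simp_all
  also have "EQ \<delta> 2 4 \<dots> (PP 2 4 IdcupId)" by (rule L_assoc) (simp_all add: bts bts')
  finally show ?thesis .
qed
lemma e_TensIdCapT: "EQ \<delta> 4 2 (Tens IdCapT 1 1 bI) (PP 4 2 IdcapId)"
proof -
  have "EQ \<delta> 4 2 (Tens IdCapT 1 1 bI) (Tens (PP 3 1 Idcap) 1 1 bI)"
    by (rule tensC[OF e_IdCapT]) simp_all
  also have "EQ \<delta> 4 2 \<dots> (PP 4 2 IdcapId)" by (rule L_assoc) (simp_all add: bts bts')
  finally show ?thesis .
qed
lemma e_TensI2cap: "EQ \<delta> 4 2 (Tens (aI 2) 2 0 bcap) (PP 4 2 IdIdcap)"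
  unfolding aI2 by (rule L_assoc) (simp_all add: bts bts')
lemma e_TensI2cup: "EQ \<delta> 2 4 (Tens (aI 2) 0 2 bcup) (PP 2 4 IdIdcup)"
  unfolding aI2 by (rule L_assoc) (simp_all add: bts bts')

lemma DX_a: "ty D = Some (1, 1) \<Longrightarrow> EQ \<delta> 3 3 (Tens D 2 2 bX) (Comp (Tens D 2 2 I2b) (PP 3 3 IdX))"
proof -
  assume t: "ty D = Some (1, 1)"
  have "EQ \<delta> 3 3 (Tens D 2 2 bX) (Tens (Comp D (aI 1)) 2 2 bX)"
    by (rule tensC[OF eq_sym[OF id_right[OF t]]]) simp_all
  also have "EQ \<delta> 3 3 \<dots> (Comp (Tens D 2 2 I2b) (Tens (aI 1) 2 2 bX))"
    by (rule eq_sym, rule L_int) (simp_all add: t ccs ccs')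
  also have "EQ \<delta> 3 3 \<dots> (Comp (Tens D 2 2 I2b) (PP 3 3 IdX))"
    by (rule compR[OF e_TensI1X]) (simp add: t)
  finally show ?thesis .
qed

lemma DX_b: "ty D = Some (1, 1) \<Longrightarrow> EQ \<delta> 3 3 (Tens D 2 2 bX) (Comp (PP 3 3 IdX) (Tens D 2 2 I2b))"
proof -
  assume t: "ty D = Some (1, 1)"
  have "EQ \<delta> 3 3 (Tens D 2 2 bX) (Tens (Comp (aI 1) D) 2 2 bX)"
    by (rule tensC[OF eq_sym[OF id_left[OF t]]]) simp_all
  also have "EQ \<delta> 3 3 \<dots> (Comp (Tens (aI 1) 2 2 bX) (Tens D 2 2 I2b))"
    by (rule eq_sym, rule L_int) (simp_all add: t ccs ccs')
  also have "EQ \<delta> 3 3 \<dots> (Comp (PP 3 3 IdX) (Tens D 2 2 I2b))"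
    by (rule compL[OF e_TensI1X]) (simp add: t)
  finally show ?thesis .
qed

lemma atransp_PP: "atransp D = Comp (PP 3 1 capId) (Comp (Tens D 2 2 bX) (PP 1 3 cupId))"
  unfolding atransp_def by (simp only: bt2 bt3)

lemma A1: "ty D = Some (1, 1) \<Longrightarrow> EQ \<delta> 1 1 (atransp D) (Tt (Comp aPi (Comp (Tens D 1 1 bI) aX0)))"
proof -
  assume t: "ty D = Some (1, 1)"
  have "EQ \<delta> 1 1 (atransp D) (Comp (PP 3 1 capId) (Comp (Comp (Tens D 2 2 I2b) (PP 3 3 IdX)) (PP 1 3 cupId)))"
    unfolding atransp_PP by (rule compR, rule compL[OF DX_a[OF t]]) simp_all
  also have "EQ \<delta> 1 1 \<dots> (Comp (PP 3 1 capId) (Comp (Tens D 2 2 I2b) (Comp (PP 3 3 IdX) (PP 1 3 cupId))))"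
    by (rule compR, rule assocE) (simp_all add: t)
  also have "EQ \<delta> 1 1 \<dots> (Comp (PP 3 1 capId) (Comp (Tens D 2 2 I2b) (PP 1 3 Qd)))"
    by (rule compR, rule compR, rule PPc, rule c7b) (simp_all add: t)
  finally have L: "EQ \<delta> 1 1 (atransp D) (Comp (PP 3 1 capId) (Comp (Tens D 2 2 I2b) (PP 1 3 Qd)))" .
  have "EQ \<delta> 1 1 (Tt (Comp aPi (Comp (Tens D 1 1 bI) aX0)))
     (Comp (Comp (Tens aPi 1 1 bI) (Tens (Comp (Tens D 1 1 bI) aX0) 1 1 bI)) IdCupT)"
    unfolding Tt_def by (rule cLT, simp, rule P1x, (simp add: t)+)
  also have "EQ \<delta> 1 1 \<dots> (Comp (Comp (PP 3 1 capId) (Comp (Tens (Tens D 1 1 bI) 1 1 bI) (Tens aX0 1 1 bI))) (PP 1 3 Idcup))"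
    by (rule cT, simp, rule cT, simp add: t, rule e_TensPi, rule P1x, (simp add: t)+, rule e_IdCupT)
  also have "EQ \<delta> 1 1 \<dots> (Comp (Comp (PP 3 1 capId) (Comp (Tens D 2 2 I2b) (PP 3 3 XId))) (PP 1 3 Idcup))"
    by (rule cLT, simp, rule cRT, simp, rule cT, simp, rule P3x, (simp add: t)+, rule e_Tenss)
  also have "EQ \<delta> 1 1 \<dots> (Comp (PP 3 1 capId) (Comp (Comp (Tens D 2 2 I2b) (PP 3 3 XId)) (PP 1 3 Idcup)))"
    by (rule assocE) (simp_all add: t)
  also have "EQ \<delta> 1 1 \<dots> (Comp (PP 3 1 capId) (Comp (Tens D 2 2 I2b) (Comp (PP 3 3 XId) (PP 1 3 Idcup))))"
    by (rule compR, rule assocE) (simp_all add: t)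
  also have "EQ \<delta> 1 1 \<dots> (Comp (PP 3 1 capId) (Comp (Tens D 2 2 I2b) (PP 1 3 Qd)))"
    by (rule compR, rule compR, rule PPc, rule c7a) (simp_all add: t)
  finally have R: "EQ \<delta> 1 1 (Tt (Comp aPi (Comp (Tens D 1 1 bI) aX0))) (Comp (PP 3 1 capId) (Comp (Tens D 2 2 I2b) (PP 1 3 Qd)))" .
  show ?thesis using L R by (blast intro: eq_trans eq_sym)
qed


lemma P4: "ty F = Some (r, 0) \<Longrightarrow> EQ \<delta> (r + 2) 0 (Comp aPi (Tens F 2 2 I2b)) (Tens F 2 0 bcap)"
proof -
  assume t: "ty F = Some (r, 0)"
  have "EQ \<delta> (r + 2) 0 (Comp aPi (Tens F 2 2 I2b)) (Tens (Comp Pole F) 2 0 bcap)"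
    unfolding aPi_def by (rule L_int) (simp_all add: t ccs)
  also have "EQ \<delta> (r + 2) 0 \<dots> (Tens F 2 0 bcap)" by (rule tensC[OF pole_left[OF t]]) simp_all
  finally show ?thesis .
qed

lemma P5: "ty F = Some (r, t) \<Longrightarrow> EQ \<delta> (r + 2) t (Tens F 2 0 bcap) (Comp F (Tens (aI r) 2 0 bcap))"
proof -
  assume tt: "ty F = Some (r, t)"
  have "EQ \<delta> (r + 2) t (Tens F 2 0 bcap) (Tens (Comp F (aI r)) 2 0 bcap)"
    by (rule tensC[OF eq_sym[OF id_right[OF tt]]]) simp_all
  also have "EQ \<delta> (r + 2) t \<dots> (Comp (Tens F 0 0 (bbasis {})) (Tens (aI r) 2 0 bcap))"
    by (rule eq_sym, rule L_int) (simp_all add: tt ccs)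
  also have "EQ \<delta> (r + 2) t \<dots> (Comp F (Tens (aI r) 2 0 bcap))"
    by (rule compL[OF L_unit[OF tt]]) simp
  finally show ?thesis .
qed

lemma Q2: "ty D = Some (r, t) \<Longrightarrow> EQ \<delta> r (t + 2) (Tens D 0 2 bcup) (Comp (Tens (aI t) 0 2 bcup) D)"
proof -
  assume tt: "ty D = Some (r, t)"
  have "EQ \<delta> r (t + 2) (Tens D 0 2 bcup) (Tens (Comp (aI t) D) 0 2 bcup)"
    by (rule tensC[OF eq_sym[OF id_left[OF tt]]]) simp_all
  also have "EQ \<delta> r (t + 2) \<dots> (Comp (Tens (aI t) 0 2 bcup) (Tens D 0 0 (bbasis {})))"
    by (rule eq_sym, rule L_int) (simp_all add: tt ccs)
  also have "EQ \<delta> r (t + 2) \<dots> (Comp (Tens (aI t) 0 2 bcup) D)"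
    by (rule compR[OF L_unit[OF tt]]) simp
  finally show ?thesis .
qed

lemma Q3: "ty G = Some (0, t) \<Longrightarrow> EQ \<delta> 0 (t + 2) (Comp (Tens G 2 2 I2b) aAmalg) (Tens G 0 2 bcup)"
proof -
  assume tt: "ty G = Some (0, t)"
  have "EQ \<delta> 0 (t + 2) (Comp (Tens G 2 2 I2b) aAmalg) (Tens (Comp G Pole) 0 2 bcup)"
    unfolding aAmalg_def by (rule L_int) (simp_all add: tt ccs)
  also have "EQ \<delta> 0 (t + 2) \<dots> (Tens G 0 2 bcup)" by (rule tensC[OF pole_right[OF tt]]) simp_all
  finally show ?thesis .
qed

lemma Q1: "ty D = Some (1, 1) \<Longrightarrow> EQ \<delta> 1 3 (Comp (Tens D 2 2 I2b) IdCupT) (Tens D 0 2 bcup)"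
proof -
  assume tt: "ty D = Some (1, 1)"
  have "EQ \<delta> 1 3 (Comp (Tens D 2 2 I2b) IdCupT) (Tens (Comp D (aI 1)) 0 2 bcup)"
    unfolding IdCupT_def by (rule L_int) (simp_all add: tt ccs)
  also have "EQ \<delta> 1 3 \<dots> (Tens D 0 2 bcup)" by (rule tensC[OF id_right[OF tt]]) simp_all
  finally show ?thesis .
qed

lemma Q5: "ty D = Some (1, 1) \<Longrightarrow> EQ \<delta> 3 1 (Comp IdCapT (Tens D 2 2 I2b)) (Tens D 2 0 bcap)"
proof -
  assume tt: "ty D = Some (1, 1)"
  have "EQ \<delta> 3 1 (Comp IdCapT (Tens D 2 2 I2b)) (Tens (Comp (aI 1) D) 2 0 bcap)"
    unfolding IdCapT_def by (rule L_int) (simp_all add: tt ccs)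
  also have "EQ \<delta> 3 1 \<dots> (Tens D 2 0 bcap)" by (rule tensC[OF id_left[OF tt]]) simp_all
  finally show ?thesis .
qed

lemma UTt: "ty F = Some (2, 0) \<Longrightarrow> EQ \<delta> 2 0 (U (Tt F)) F"
proof -
  assume t: "ty F = Some (2, 0)"
  have "EQ \<delta> 2 0 (U (Tt F)) (Comp aPi (Comp (Tens (Tens F 1 1 bI) 1 1 bI) (Tens IdCupT 1 1 bI)))"
    unfolding U_def Tt_def by (rule cRT, simp, rule P1x, (simp add: t)+)
  also have "EQ \<delta> 2 0 \<dots> (Comp aPi (Comp (Tens F 2 2 I2b) (PP 2 4 IdcupId)))"
    by (rule cRT, simp, rule cT, simp, rule P3x, (simp add: t)+, rule e_TensIdCupT)
  also have "EQ \<delta> 2 0 \<dots> (Comp (Comp aPi (Tens F 2 2 I2b)) (PP 2 4 IdcupId))"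
    by (rule eq_sym, rule assocE) (simp_all add: t)
  also have "EQ \<delta> 2 0 \<dots> (Comp (Tens F 2 0 bcap) (PP 2 4 IdcupId))"
    by (rule cLT, simp, rule P4[OF t, simplified])
  also have "EQ \<delta> 2 0 \<dots> (Comp (Comp F (Tens (aI 2) 2 0 bcap)) (PP 2 4 IdcupId))"
    by (rule cLT, simp, rule P5[OF t, simplified])
  also have "EQ \<delta> 2 0 \<dots> (Comp (Comp F (PP 4 2 IdIdcap)) (PP 2 4 IdcupId))"
    by (rule cLT, simp, rule cRT, simp add: t, rule e_TensI2cap)
  also have "EQ \<delta> 2 0 \<dots> (Comp F (Comp (PP 4 2 IdIdcap) (PP 2 4 IdcupId)))"
    by (rule assocE) (simp_all add: t)
  also have "EQ \<delta> 2 0 \<dots> (Comp F (aI 2))"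
    unfolding aI2 by (rule cRT, simp add: t, rule PPc, rule c11a)
  also have "EQ \<delta> 2 0 \<dots> F" by (rule id_right[OF t])
  finally show ?thesis .
qed

lemma TtU: "ty D = Some (1, 1) \<Longrightarrow> EQ \<delta> 1 1 (Tt (U D)) D"
proof -
  assume t: "ty D = Some (1, 1)"
  have "EQ \<delta> 1 1 (Tt (U D)) (Comp (Comp (Tens aPi 1 1 bI) (Tens (Tens D 1 1 bI) 1 1 bI)) IdCupT)"
    unfolding U_def Tt_def by (rule cLT, simp, rule P1x, (simp add: t)+)
  also have "EQ \<delta> 1 1 \<dots> (Comp (Comp (PP 3 1 capId) (Tens D 2 2 I2b)) IdCupT)"
    by (rule cLT, simp, rule cT, simp add: t, rule e_TensPi, rule P3x, (simp add: t)+)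
  also have "EQ \<delta> 1 1 \<dots> (Comp (PP 3 1 capId) (Comp (Tens D 2 2 I2b) IdCupT))"
    by (rule assocE) (simp_all add: t)
  also have "EQ \<delta> 1 1 \<dots> (Comp (PP 3 1 capId) (Tens D 0 2 bcup))"
    by (rule cRT, simp, rule Q1[OF t])
  also have "EQ \<delta> 1 1 \<dots> (Comp (PP 3 1 capId) (Comp IdCupT D))"
    unfolding IdCupT_def by (rule cRT, simp, rule Q2[OF t, simplified])
  also have "EQ \<delta> 1 1 \<dots> (Comp (Comp (PP 3 1 capId) IdCupT) D)"
    by (rule eq_sym, rule assocE) (simp_all add: t)
  also have "EQ \<delta> 1 1 \<dots> (Comp (Comp (PP 3 1 capId) (PP 1 3 Idcup)) D)"
    by (rule cLT, simp add: t, rule cRT, simp, rule e_IdCupT)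
  also have "EQ \<delta> 1 1 \<dots> (Comp (aI 1) D)"
    unfolding aI1 by (rule cLT, simp add: t, rule P_comp, rule cc8a)
  also have "EQ \<delta> 1 1 \<dots> D" by (rule id_left[OF t])
  finally show ?thesis .
qed

lemma A1': "ty D = Some (1, 1) \<Longrightarrow> EQ \<delta> 1 1 (atransp D) (Tt' (Comp aX0 (Comp (Tens D 1 1 bI) aAmalg)))"
proof -
  assume t: "ty D = Some (1, 1)"
  have "EQ \<delta> 1 1 (atransp D) (Comp (PP 3 1 capId) (Comp (Comp (PP 3 3 IdX) (Tens D 2 2 I2b)) (PP 1 3 cupId)))"
    unfolding atransp_PP by (rule compR, rule compL[OF DX_b[OF t]]) simp_all
  also have "EQ \<delta> 1 1 \<dots> (Comp (PP 3 1 capId) (Comp (PP 3 3 IdX) (Comp (Tens D 2 2 I2b) (PP 1 3 cupId))))"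
    by (rule compR, rule assocE) (simp_all add: t)
  also have "EQ \<delta> 1 1 \<dots> (Comp (Comp (PP 3 1 capId) (PP 3 3 IdX)) (Comp (Tens D 2 2 I2b) (PP 1 3 cupId)))"
    by (rule eq_sym, rule assocE) (simp_all add: t)
  also have "EQ \<delta> 1 1 \<dots> (Comp (PP 3 1 Qd') (Comp (Tens D 2 2 I2b) (PP 1 3 cupId)))"
    by (rule cLT, simp add: t, rule PPc, rule c7d)
  finally have L: "EQ \<delta> 1 1 (atransp D) (Comp (PP 3 1 Qd') (Comp (Tens D 2 2 I2b) (PP 1 3 cupId)))" .
  have "EQ \<delta> 1 1 (Tt' (Comp aX0 (Comp (Tens D 1 1 bI) aAmalg)))
      (Comp IdCapT (Comp (Tens aX0 1 1 bI) (Tens (Comp (Tens D 1 1 bI) aAmalg) 1 1 bI)))"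
    unfolding Tt'_def by (rule cRT, simp, rule P1x, (simp add: t)+)
  also have "EQ \<delta> 1 1 \<dots> (Comp IdCapT (Comp (Tens aX0 1 1 bI) (Comp (Tens (Tens D 1 1 bI) 1 1 bI) (Tens aAmalg 1 1 bI))))"
    by (rule cRT, simp, rule cRT, simp, rule P1x, (simp add: t)+)
  also have "EQ \<delta> 1 1 \<dots> (Comp (PP 3 1 Idcap) (Comp (PP 3 3 XId) (Comp (Tens D 2 2 I2b) (PP 1 3 cupId))))"
    by (rule cT, simp add: t, rule e_IdCapT, rule cT, simp add: t, rule e_Tenss, rule cT, simp,
        rule P3x, (simp add: t)+, rule e_TensAm)
  also have "EQ \<delta> 1 1 \<dots> (Comp (Comp (PP 3 1 Idcap) (PP 3 3 XId)) (Comp (Tens D 2 2 I2b) (PP 1 3 cupId)))"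
    by (rule eq_sym, rule assocE) (simp_all add: t)
  also have "EQ \<delta> 1 1 \<dots> (Comp (PP 3 1 Qd') (Comp (Tens D 2 2 I2b) (PP 1 3 cupId)))"
    by (rule cLT, simp add: t, rule PPc, rule c7c)
  finally have R: "EQ \<delta> 1 1 (Tt' (Comp aX0 (Comp (Tens D 1 1 bI) aAmalg))) (Comp (PP 3 1 Qd') (Comp (Tens D 2 2 I2b) (PP 1 3 cupId)))" .
  show ?thesis using L R by (blast intro: eq_trans eq_sym)
qed

lemma U'Tt': "ty G = Some (0, 2) \<Longrightarrow> EQ \<delta> 0 2 (U' (Tt' G)) G"
proof -
  assume t: "ty G = Some (0, 2)"
  have "EQ \<delta> 0 2 (U' (Tt' G)) (Comp (Comp (Tens IdCapT 1 1 bI) (Tens (Tens G 1 1 bI) 1 1 bI)) aAmalg)"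
    unfolding U'_def Tt'_def by (rule cLT, simp, rule P1x, (simp add: t)+)
  also have "EQ \<delta> 0 2 \<dots> (Comp (Comp (PP 4 2 IdcapId) (Tens G 2 2 I2b)) aAmalg)"
    by (rule cLT, simp, rule cT, simp add: t, rule e_TensIdCapT, rule P3x, (simp add: t)+)
  also have "EQ \<delta> 0 2 \<dots> (Comp (PP 4 2 IdcapId) (Comp (Tens G 2 2 I2b) aAmalg))"
    by (rule assocE) (simp_all add: t)
  also have "EQ \<delta> 0 2 \<dots> (Comp (PP 4 2 IdcapId) (Tens G 0 2 bcup))"
    by (rule cRT, simp, rule Q3[OF t, simplified])
  also have "EQ \<delta> 0 2 \<dots> (Comp (PP 4 2 IdcapId) (Comp (Tens (aI 2) 0 2 bcup) G))"
    by (rule cRT, simp, rule Q2[OF t, simplified])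
  also have "EQ \<delta> 0 2 \<dots> (Comp (PP 4 2 IdcapId) (Comp (PP 2 4 IdIdcup) G))"
    by (rule cRT, simp, rule cLT, simp add: t, rule e_TensI2cup)
  also have "EQ \<delta> 0 2 \<dots> (Comp (Comp (PP 4 2 IdcapId) (PP 2 4 IdIdcup)) G)"
    by (rule eq_sym, rule assocE) (simp_all add: t)
  also have "EQ \<delta> 0 2 \<dots> (Comp (aI 2) G)"
    unfolding aI2 by (rule cLT, simp add: t, rule PPc, rule c11b)
  also have "EQ \<delta> 0 2 \<dots> G" by (rule id_left[OF t])
  finally show ?thesis .
qed

lemma Tt'U': "ty D = Some (1, 1) \<Longrightarrow> EQ \<delta> 1 1 (Tt' (U' D)) D"
proof -
  assume t: "ty D = Some (1, 1)"
  have "EQ \<delta> 1 1 (Tt' (U' D)) (Comp IdCapT (Comp (Tens (Tens D 1 1 bI) 1 1 bI) (Tens aAmalg 1 1 bI)))"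
    unfolding U'_def Tt'_def by (rule cRT, simp, rule P1x, (simp add: t)+)
  also have "EQ \<delta> 1 1 \<dots> (Comp IdCapT (Comp (Tens D 2 2 I2b) (PP 1 3 cupId)))"
    by (rule cRT, simp, rule cT, simp, rule P3x, (simp add: t)+, rule e_TensAm)
  also have "EQ \<delta> 1 1 \<dots> (Comp (Comp IdCapT (Tens D 2 2 I2b)) (PP 1 3 cupId))"
    by (rule eq_sym, rule assocE) (simp_all add: t)
  also have "EQ \<delta> 1 1 \<dots> (Comp (Tens D 2 0 bcap) (PP 1 3 cupId))"
    by (rule cLT, simp, rule Q5[OF t])
  also have "EQ \<delta> 1 1 \<dots> (Comp (Comp D IdCapT) (PP 1 3 cupId))"
    unfolding IdCapT_def by (rule cLT, simp, rule P5[OF t, simplified])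
  also have "EQ \<delta> 1 1 \<dots> (Comp D (Comp IdCapT (PP 1 3 cupId)))"
    by (rule assocE) (simp_all add: t)
  also have "EQ \<delta> 1 1 \<dots> (Comp D (Comp (PP 3 1 Idcap) (PP 1 3 cupId)))"
    by (rule cRT, simp add: t, rule cLT, simp, rule e_IdCapT)
  also have "EQ \<delta> 1 1 \<dots> (Comp D (aI 1))"
    unfolding aI1 by (rule cRT, simp add: t, rule P_comp, rule cc8b)
  also have "EQ \<delta> 1 1 \<dots> D" by (rule id_right[OF t])
  finally show ?thesis .
qed

end

declare One_nat_def[simp del]
declare add_numeral_special[simp]

definition "y2 \<delta> = Add aH02 (aH12 \<delta>)"
definition "ee = Comp aAmalg aPi"
definition "Phi1 \<delta> = Tens (aPhi \<delta>) 1 1 bI"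
definition "Ym m = Tens (apow HH m) 1 1 bI"

lemma ty_y2[simp]: "ty (y2 \<delta>) = Some (2, 2)" by (simp add: y2_def)
lemma ty_ee[simp]: "ty ee = Some (2, 2)" by (simp add: ee_def)
lemma ty_Phi1[simp]: "ty (Phi1 \<delta>) = Some (2, 2)" by (simp add: Phi1_def)
lemma ty_Ym[simp]: "ty (Ym m) = Some (2, 2)" by (simp add: Ym_def)
lemma ty_HH1: "ty HH = Some (1, 1)" by simp

context fixes \<delta> :: "'k::comm_ring_1"
begin

lemma cAddR: "ty D = Some (s, t) \<Longrightarrow> ty E = Some (r, s) \<Longrightarrow> ty F = Some (r, s) \<Longrightarrow>
  EQ \<delta> r t (Comp D (Add E F)) (Add (Comp D E) (Comp D F))"
  by (rule ab_comp_add_right) (simp_all add: wt_ty)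
lemma cAddL: "ty D = Some (s, t) \<Longrightarrow> ty D' = Some (s, t) \<Longrightarrow> ty E = Some (r, s) \<Longrightarrow>
  EQ \<delta> r t (Comp (Add D D') E) (Add (Comp D E) (Comp D' E))"
  by (rule ab_comp_add_left) (simp_all add: wt_ty)
lemma cSmulR: "ty D = Some (s, t) \<Longrightarrow> ty E = Some (r, s) \<Longrightarrow>
  EQ \<delta> r t (Comp D (Smul c E)) (Smul c (Comp D E))"
  by (rule ab_comp_smul_right) (simp_all add: wt_ty)
lemma cSmulL: "ty D = Some (s, t) \<Longrightarrow> ty E = Some (r, s) \<Longrightarrow>
  EQ \<delta> r t (Comp (Smul c D) E) (Smul c (Comp D E))"
  by (rule ab_comp_smul_left) (simp_all add: wt_ty)

lemma cSubR: "ty D = Some (s, t) \<Longrightarrow> ty E = Some (r, s) \<Longrightarrow> ty F = Some (r, s) \<Longrightarrow>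
  EQ \<delta> r t (Comp D (asub E F)) (asub (Comp D E) (Comp D F))"
proof -
  assume a: "ty D = Some (s, t)" "ty E = Some (r, s)" "ty F = Some (r, s)"
  have "EQ \<delta> r t (Comp D (asub E F)) (Add (Comp D E) (Comp D (Smul (-1) F)))"
    unfolding asub_def by (rule cAddR) (simp_all add: a)
  also have "EQ \<delta> r t \<dots> (asub (Comp D E) (Comp D F))"
    unfolding asub_def by (rule addR, rule cSmulR) (simp_all add: a)
  finally show ?thesis .
qed

lemma cSubL: "ty D = Some (s, t) \<Longrightarrow> ty D' = Some (s, t) \<Longrightarrow> ty E = Some (r, s) \<Longrightarrow>
  EQ \<delta> r t (Comp (asub D D') E) (asub (Comp D E) (Comp D' E))"
proof -
  assume a: "ty D = Some (s, t)" "ty D' = Some (s, t)" "ty E = Some (r, s)"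
  have "EQ \<delta> r t (Comp (asub D D') E) (Add (Comp D E) (Comp (Smul (-1) D') E))"
    unfolding asub_def by (rule cAddL) (simp_all add: a)
  also have "EQ \<delta> r t \<dots> (asub (Comp D E) (Comp D' E))"
    unfolding asub_def by (rule addR, rule cSmulL) (simp_all add: a)
  finally show ?thesis .
qed

lemma tAdd: "ty A = Some (r, s) \<Longrightarrow> ty B = Some (r, s) \<Longrightarrow>
  EQ \<delta> (r + 1) (s + 1) (Tens (Add A B) 1 1 bI) (Add (Tens A 1 1 bI) (Tens B 1 1 bI))"
  by (rule ab_tens_add) (simp_all add: wt_ty)
lemma tSmul: "ty A = Some (r, s) \<Longrightarrow>
  EQ \<delta> (r + 1) (s + 1) (Tens (Smul c A) 1 1 bI) (Smul c (Tens A 1 1 bI))"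
  by (rule ab_tens_smul) (simp_all add: wt_ty)
lemma tSub: "ty A = Some (r, s) \<Longrightarrow> ty B = Some (r, s) \<Longrightarrow>
  EQ \<delta> (r + 1) (s + 1) (Tens (asub A B) 1 1 bI) (asub (Tens A 1 1 bI) (Tens B 1 1 bI))"
proof -
  assume a: "ty A = Some (r, s)" "ty B = Some (r, s)"
  have "EQ \<delta> (r + 1) (s + 1) (Tens (asub A B) 1 1 bI) (Add (Tens A 1 1 bI) (Tens (Smul (-1) B) 1 1 bI))"
    unfolding asub_def by (rule tAdd) (simp_all add: a)
  also have "EQ \<delta> (r + 1) (s + 1) \<dots> (asub (Tens A 1 1 bI) (Tens B 1 1 bI))"
    unfolding asub_def by (rule addR, rule tSmul) (simp_all add: a)
  finally show ?thesis .
qed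

lemma ss: "EQ \<delta> 2 2 (Comp aX0 aX0) (aI 2)"
  unfolding aX0_def aI2 by (rule P_comp, rule cc1)
lemma Pis: "EQ \<delta> 2 0 (Comp aPi aX0) aPi"
  unfolding aX0_def aPi_def by (rule P_comp, rule cc2)
lemma sAm: "EQ \<delta> 0 2 (Comp aX0 aAmalg) aAmalg"
  unfolding aX0_def aAmalg_def by (rule P_comp, rule cc3)
lemma PiAm: "EQ \<delta> 0 0 (Comp aPi aAmalg) (Smul \<delta> Pole)"
proof -
  have "EQ \<delta> 0 0 (Comp aPi aAmalg) (Tens Pole 0 0 (\<lambda>d. \<delta> * bbasis {} d))"
    unfolding aPi_def aAmalg_def by (rule P_comp, rule cc4)
  also have "EQ \<delta> 0 0 \<dots> (Smul \<delta> (Tens Pole 0 0 (bbasis {})))"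
    using ab_tens_bsmul[of Pole 0 0 \<delta> 0 0 \<delta> "bbasis {}"] by (simp add: wt_ty)
  also have "EQ \<delta> 0 0 \<dots> (Smul \<delta> Pole)" by (rule smulC, rule L_unit) simp
  finally show ?thesis .
qed

lemma H12e: "EQ \<delta> 2 2 (aH12 \<delta>) (asub aX0 ee)"
proof -
  define B' where "B' = (\<lambda>d. (-1) * bcomp \<delta> 2 0 2 bcup bcap d)"
  have f: "bH \<delta> = (\<lambda>d. bX d + B' d)" by (simp add: bH_def B'_def fun_eq_iff)
  have 1: "EQ \<delta> (0 + 2) (0 + 2) (Tens Pole 2 2 (\<lambda>d. bX d + B' d)) (Add (Tens Pole 2 2 bX) (Tens Pole 2 2 B'))"
    by (rule ab_tens_badd) (simp add: wt_ty)
  have 2: "EQ \<delta> (0 + 2) (0 + 2) (Tens Pole 2 2 B') (Smul (-1) (Tens Pole 2 2 (bcomp \<delta> 2 0 2 bcup bcap)))"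
    unfolding B'_def by (rule ab_tens_bsmul) (simp add: wt_ty)
  have "EQ \<delta> 2 2 (aH12 \<delta>) (Add (Tens Pole 2 2 bX) (Tens Pole 2 2 B'))"
    unfolding aH12_def f using 1 by (simp only: add_0)
  also have "EQ \<delta> 2 2 \<dots> (Add aX0 (Smul (-1) (Tens Pole 2 2 (bcomp \<delta> 2 0 2 bcup bcap))))"
    unfolding aX0_def using 2 by (intro addR) (simp_all only: add_0, simp)
  also have "EQ \<delta> 2 2 \<dots> (asub aX0 ee)"
    unfolding asub_def ee_def aAmalg_def aPi_def
    by (rule addR, rule smulC, rule eq_sym, rule P_comp) simp_all
  finally show ?thesis .
qed

lemma se: "EQ \<delta> 2 2 (Comp aX0 ee) ee"
proof -
  have "EQ \<delta> 2 2 (Comp aX0 ee) (Comp (Comp aX0 aAmalg) aPi)"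
    unfolding ee_def by (rule eq_sym, rule assocE) simp_all
  also have "EQ \<delta> 2 2 \<dots> ee" unfolding ee_def by (rule compL[OF sAm]) simp
  finally show ?thesis .
qed

lemma es: "EQ \<delta> 2 2 (Comp ee aX0) ee"
proof -
  have "EQ \<delta> 2 2 (Comp ee aX0) (Comp aAmalg (Comp aPi aX0))"
    unfolding ee_def by (rule assocE) simp_all
  also have "EQ \<delta> 2 2 \<dots> ee" unfolding ee_def by (rule compR[OF Pis]) simp
  finally show ?thesis .
qed

lemma Pie: "EQ \<delta> 2 0 (Comp aPi ee) (Smul \<delta> aPi)"
proof -
  have "EQ \<delta> 2 0 (Comp aPi ee) (Comp (Comp aPi aAmalg) aPi)"
    unfolding ee_def by (rule eq_sym, rule assocE) simp_all
  also have "EQ \<delta> 2 0 \<dots> (Comp (Smul \<delta> Pole) aPi)" by (rule compL[OF PiAm]) simp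
  also have "EQ \<delta> 2 0 \<dots> (Smul \<delta> (Comp Pole aPi))" by (rule cSmulL) simp_all
  also have "EQ \<delta> 2 0 \<dots> (Smul \<delta> aPi)" by (rule smulC, rule pole_left) simp
  finally show ?thesis .
qed

lemma eAm: "EQ \<delta> 0 2 (Comp ee aAmalg) (Smul \<delta> aAmalg)"
proof -
  have "EQ \<delta> 0 2 (Comp ee aAmalg) (Comp aAmalg (Comp aPi aAmalg))"
    unfolding ee_def by (rule assocE) simp_all
  also have "EQ \<delta> 0 2 \<dots> (Comp aAmalg (Smul \<delta> Pole))" by (rule compR[OF PiAm]) simp
  also have "EQ \<delta> 0 2 \<dots> (Smul \<delta> (Comp aAmalg Pole))" by (rule cSmulR) simp_all
  also have "EQ \<delta> 0 2 \<dots> (Smul \<delta> aAmalg)" by (rule smulC, rule pole_right) simp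
  finally show ?thesis .
qed

lemma R1: "EQ \<delta> 2 2 (Comp aH01 aX0) (asub (Comp aX0 (y2 \<delta>)) (asub (aI 2) ee))"
proof -
  have "EQ \<delta> 2 2 (Comp aX0 (y2 \<delta>)) (Add (Comp aX0 aH02) (Comp aX0 (aH12 \<delta>)))"
    unfolding y2_def by (rule cAddR) simp_all
  also have "EQ \<delta> 2 2 \<dots> (Add (Comp aH01 aX0) (asub (aI 2) ee))"
  proof (rule ab_add_cong)
    have "EQ \<delta> 2 2 (Comp aX0 aH02) (Comp (Comp aX0 aX0) (Comp aH01 aX0))"
      unfolding aH02_def by (rule eq_sym, rule assocE) simp_all
    also have "EQ \<delta> 2 2 \<dots> (Comp (aI 2) (Comp aH01 aX0))" by (rule compL[OF ss]) simp
    also have "EQ \<delta> 2 2 \<dots> (Comp aH01 aX0)" by (rule id_left) simp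
    finally show "EQ \<delta> 2 2 (Comp aX0 aH02) (Comp aH01 aX0)" .
    have "EQ \<delta> 2 2 (Comp aX0 (aH12 \<delta>)) (Comp aX0 (asub aX0 ee))" by (rule compR[OF H12e]) simp
    also have "EQ \<delta> 2 2 \<dots> (asub (Comp aX0 aX0) (Comp aX0 ee))" by (rule cSubR) simp_all
    also have "EQ \<delta> 2 2 \<dots> (asub (aI 2) ee)" by (rule subC[OF ss se])
    finally show "EQ \<delta> 2 2 (Comp aX0 (aH12 \<delta>)) (asub (aI 2) ee)" .
  qed
  finally have sy: "EQ \<delta> 2 2 (Comp aX0 (y2 \<delta>)) (Add (Comp aH01 aX0) (asub (aI 2) ee))" .
  have "EQ \<delta> 2 2 (asub (Comp aX0 (y2 \<delta>)) (asub (aI 2) ee)) (asub (Add (Comp aH01 aX0) (asub (aI 2) ee)) (asub (aI 2) ee))"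
    by (rule subC[OF sy], rule eq_refl) simp
  also have "EQ \<delta> 2 2 \<dots> (Comp aH01 aX0)"
    by (rule lin) (simp_all add: asub_def fun_eq_iff algebra_simps)
  finally show ?thesis by (rule eq_sym)
qed

lemma R2: "EQ \<delta> 2 2 (Comp aX0 aH01) (asub (Comp (y2 \<delta>) aX0) (asub (aI 2) ee))"
proof -
  have "EQ \<delta> 2 2 (Comp (y2 \<delta>) aX0) (Add (Comp aH02 aX0) (Comp (aH12 \<delta>) aX0))"
    unfolding y2_def by (rule cAddL) simp_all
  also have "EQ \<delta> 2 2 \<dots> (Add (Comp aX0 aH01) (asub (aI 2) ee))"
  proof (rule ab_add_cong)
    have "EQ \<delta> 2 2 (Comp aH02 aX0) (Comp aX0 (Comp (Comp aH01 aX0) aX0))"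
      unfolding aH02_def by (rule assocE) simp_all
    also have "EQ \<delta> 2 2 \<dots> (Comp aX0 (Comp aH01 (Comp aX0 aX0)))" by (rule compR, rule assocE) simp_all
    also have "EQ \<delta> 2 2 \<dots> (Comp aX0 (Comp aH01 (aI 2)))" by (rule compR, rule compR[OF ss]) simp_all
    also have "EQ \<delta> 2 2 \<dots> (Comp aX0 aH01)" by (rule compR, rule id_right) simp_all
    finally show "EQ \<delta> 2 2 (Comp aH02 aX0) (Comp aX0 aH01)" .
    have "EQ \<delta> 2 2 (Comp (aH12 \<delta>) aX0) (Comp (asub aX0 ee) aX0)" by (rule compL[OF H12e]) simp
    also have "EQ \<delta> 2 2 \<dots> (asub (Comp aX0 aX0) (Comp ee aX0))" by (rule cSubL) simp_all
    also have "EQ \<delta> 2 2 \<dots> (asub (aI 2) ee)" by (rule subC[OF ss es])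
    finally show "EQ \<delta> 2 2 (Comp (aH12 \<delta>) aX0) (asub (aI 2) ee)" .
  qed
  finally have sy: "EQ \<delta> 2 2 (Comp (y2 \<delta>) aX0) (Add (Comp aX0 aH01) (asub (aI 2) ee))" .
  have "EQ \<delta> 2 2 (asub (Comp (y2 \<delta>) aX0) (asub (aI 2) ee)) (asub (Add (Comp aX0 aH01) (asub (aI 2) ee)) (asub (aI 2) ee))"
    by (rule subC[OF sy], rule eq_refl) simp
  also have "EQ \<delta> 2 2 \<dots> (Comp aX0 aH01)"
    by (rule lin) (simp_all add: asub_def fun_eq_iff algebra_simps)
  finally show ?thesis by (rule eq_sym)
qed

lemma R3: "EQ \<delta> 2 2 (Comp aH01 (y2 \<delta>)) (Comp (y2 \<delta>) aH01)"
  unfolding y2_def by (rule ab_rel_ii)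

lemma Phi1e: "EQ \<delta> 2 2 (Phi1 \<delta>) (asub (Smul (1 - \<delta>) (aI 2)) aH01)"
proof -
  have "EQ \<delta> 2 2 (Phi1 \<delta>) (asub (Tens (Smul (1 - \<delta>) (aI 1)) 1 1 bI) (Tens HH 1 1 bI))"
    unfolding Phi1_def aPhi_def using tSub[of "Smul (1 - \<delta>) (aI 1)" 1 1 HH] by simp
  also have "EQ \<delta> 2 2 \<dots> (asub (Smul (1 - \<delta>) (aI 2)) aH01)"
    unfolding aH01_def
  proof (rule subC)
    have "EQ \<delta> 2 2 (Tens (Smul (1 - \<delta>) (aI 1)) 1 1 bI) (Smul (1 - \<delta>) (Tens (aI 1) 1 1 bI))"
      using tSmul[of "aI 1" 1 1 "1 - \<delta>"] by simp
    also have "EQ \<delta> 2 2 \<dots> (Smul (1 - \<delta>) (aI 2))" by (rule smulC[OF P2])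
    finally show "EQ \<delta> 2 2 (Tens (Smul (1 - \<delta>) (aI 1)) 1 1 bI) (Smul (1 - \<delta>) (aI 2))" .
  qed (rule eq_refl, simp)
  finally show ?thesis .
qed

lemma Phi1_y2: "EQ \<delta> 2 2 (Comp (Phi1 \<delta>) (y2 \<delta>)) (Comp (y2 \<delta>) (Phi1 \<delta>))"
proof -
  have "EQ \<delta> 2 2 (Comp (Phi1 \<delta>) (y2 \<delta>)) (Comp (asub (Smul (1 - \<delta>) (aI 2)) aH01) (y2 \<delta>))"
    by (rule compL[OF Phi1e]) simp
  also have "EQ \<delta> 2 2 \<dots> (asub (Comp (Smul (1 - \<delta>) (aI 2)) (y2 \<delta>)) (Comp aH01 (y2 \<delta>)))"
    by (rule cSubL) simp_all
  also have "EQ \<delta> 2 2 \<dots> (asub (Smul (1 - \<delta>) (y2 \<delta>)) (Comp (y2 \<delta>) aH01))"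
  proof (rule subC[OF _ R3])
    have "EQ \<delta> 2 2 (Comp (Smul (1 - \<delta>) (aI 2)) (y2 \<delta>)) (Smul (1 - \<delta>) (Comp (aI 2) (y2 \<delta>)))"
      by (rule cSmulL) simp_all
    also have "EQ \<delta> 2 2 \<dots> (Smul (1 - \<delta>) (y2 \<delta>))" by (rule smulC, rule id_left) simp
    finally show "EQ \<delta> 2 2 (Comp (Smul (1 - \<delta>) (aI 2)) (y2 \<delta>)) (Smul (1 - \<delta>) (y2 \<delta>))" .
  qed
  also have "EQ \<delta> 2 2 \<dots> (asub (Comp (y2 \<delta>) (Smul (1 - \<delta>) (aI 2))) (Comp (y2 \<delta>) aH01))"
  proof (rule subC[OF _ eq_refl])
    have "EQ \<delta> 2 2 (Comp (y2 \<delta>) (Smul (1 - \<delta>) (aI 2))) (Smul (1 - \<delta>) (Comp (y2 \<delta>) (aI 2)))"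
      by (rule cSmulR) simp_all
    also have "EQ \<delta> 2 2 \<dots> (Smul (1 - \<delta>) (y2 \<delta>))" by (rule smulC, rule id_right) simp
    finally show "EQ \<delta> 2 2 (Smul (1 - \<delta>) (y2 \<delta>)) (Comp (y2 \<delta>) (Smul (1 - \<delta>) (aI 2)))" by (rule eq_sym)
  qed simp
  also have "EQ \<delta> 2 2 \<dots> (Comp (y2 \<delta>) (asub (Smul (1 - \<delta>) (aI 2)) aH01))"
    by (rule eq_sym, rule cSubR) simp_all
  also have "EQ \<delta> 2 2 \<dots> (Comp (y2 \<delta>) (Phi1 \<delta>))"
    by (rule compR[OF eq_sym[OF Phi1e]]) simp
  finally show ?thesis .
qed

end

declare One_nat_def[simp del]
declare add_numeral_special[simp]

lemma Ym_Pi: "U (apow HH m) = Comp aPi (Ym m)" by (simp add: U_def Ym_def)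
lemma Ym_Am: "U' (apow HH m) = Comp (Ym m) aAmalg" by (simp add: U'_def Ym_def)
lemma U_HH: "U HH = Comp aPi aH01" by (simp add: U_def aH01_def)
lemma U'_HH: "U' HH = Comp aH01 aAmalg" by (simp add: U'_def aH01_def)
lemma apow0: "apow D 0 = aI 1" by (simp add: apow_def)
lemma apowS: "apow D (Suc n) = Comp D (apow D n)" by (simp add: apow_def)
lemma aZ_Ym: "aZ m = Comp aPi (Comp (Ym m) aAmalg)" by (simp add: aZ_def Ym_def)

context fixes \<delta> :: "'k::comm_ring_1"
begin

lemma U_cong: "EQ \<delta> 1 1 A B \<Longrightarrow> EQ \<delta> 2 0 (U A) (U B)"
  unfolding U_def by (rule compR, rule tensC[where r=1 and s=1]) simp_all
lemma U'_cong: "EQ \<delta> 1 1 A B \<Longrightarrow> EQ \<delta> 0 2 (U' A) (U' B)"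
  unfolding U'_def by (rule compL, rule tensC[where r=1 and s=1]) simp_all
lemma Tt_cong: "EQ \<delta> 2 0 A B \<Longrightarrow> EQ \<delta> 1 1 (Tt A) (Tt B)"
  unfolding Tt_def by (rule compL, rule tensC[where r=2 and s=0]) simp_all
lemma Tt'_cong: "EQ \<delta> 0 2 A B \<Longrightarrow> EQ \<delta> 1 1 (Tt' A) (Tt' B)"
  unfolding Tt'_def by (rule compR, rule tensC[where r=0 and s=2]) simp_all

lemma U_add: "ty A = Some (1, 1) \<Longrightarrow> ty B = Some (1, 1) \<Longrightarrow> EQ \<delta> 2 0 (U (Add A B)) (Add (U A) (U B))"
proof -
  assume a: "ty A = Some (1, 1)" "ty B = Some (1, 1)"
  have "EQ \<delta> 2 0 (U (Add A B)) (Comp aPi (Add (Tens A 1 1 bI) (Tens B 1 1 bI)))"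
    unfolding U_def using tAdd[OF a, of \<delta>] by (intro compR) simp_all
  also have "EQ \<delta> 2 0 \<dots> (Add (U A) (U B))" unfolding U_def by (rule cAddR) (simp_all add: a)
  finally show ?thesis .
qed
lemma U_smul: "ty A = Some (1, 1) \<Longrightarrow> EQ \<delta> 2 0 (U (Smul c A)) (Smul c (U A))"
proof -
  assume a: "ty A = Some (1, 1)"
  have "EQ \<delta> 2 0 (U (Smul c A)) (Comp aPi (Smul c (Tens A 1 1 bI)))"
    unfolding U_def using tSmul[OF a, of \<delta> c] by (intro compR) simp_all
  also have "EQ \<delta> 2 0 \<dots> (Smul c (U A))" unfolding U_def by (rule cSmulR) (simp_all add: a)
  finally show ?thesis .
qed
lemma U_sub: "ty A = Some (1, 1) \<Longrightarrow> ty B = Some (1, 1) \<Longrightarrow> EQ \<delta> 2 0 (U (asub A B)) (asub (U A) (U B))"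
proof -
  assume a: "ty A = Some (1, 1)" "ty B = Some (1, 1)"
  have "EQ \<delta> 2 0 (U (asub A B)) (Add (U A) (U (Smul (-1) B)))"
    unfolding asub_def by (rule U_add) (simp_all add: a)
  also have "EQ \<delta> 2 0 \<dots> (asub (U A) (U B))" unfolding asub_def by (rule addR, rule U_smul) (simp_all add: a)
  finally show ?thesis .
qed
lemma U_comp: "ty A = Some (1, 1) \<Longrightarrow> ty B = Some (1, 1) \<Longrightarrow> EQ \<delta> 2 0 (U (Comp A B)) (Comp (U A) (Tens B 1 1 bI))"
proof -
  assume a: "ty A = Some (1, 1)" "ty B = Some (1, 1)"
  have "EQ \<delta> 2 0 (U (Comp A B)) (Comp aPi (Comp (Tens A 1 1 bI) (Tens B 1 1 bI)))"
    unfolding U_def by (rule compR, rule P1x) (simp_all add: a)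
  also have "EQ \<delta> 2 0 \<dots> (Comp (U A) (Tens B 1 1 bI))" unfolding U_def by (rule eq_sym, rule assocE) (simp_all add: a)
  finally show ?thesis .
qed

lemma U'_add: "ty A = Some (1, 1) \<Longrightarrow> ty B = Some (1, 1) \<Longrightarrow> EQ \<delta> 0 2 (U' (Add A B)) (Add (U' A) (U' B))"
proof -
  assume a: "ty A = Some (1, 1)" "ty B = Some (1, 1)"
  have "EQ \<delta> 0 2 (U' (Add A B)) (Comp (Add (Tens A 1 1 bI) (Tens B 1 1 bI)) aAmalg)"
    unfolding U'_def using tAdd[OF a, of \<delta>] by (intro compL) simp_all
  also have "EQ \<delta> 0 2 \<dots> (Add (U' A) (U' B))" unfolding U'_def by (rule cAddL) (simp_all add: a)
  finally show ?thesis .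
qed
lemma U'_smul: "ty A = Some (1, 1) \<Longrightarrow> EQ \<delta> 0 2 (U' (Smul c A)) (Smul c (U' A))"
proof -
  assume a: "ty A = Some (1, 1)"
  have "EQ \<delta> 0 2 (U' (Smul c A)) (Comp (Smul c (Tens A 1 1 bI)) aAmalg)"
    unfolding U'_def using tSmul[OF a, of \<delta> c] by (intro compL) simp_all
  also have "EQ \<delta> 0 2 \<dots> (Smul c (U' A))" unfolding U'_def by (rule cSmulL) (simp_all add: a)
  finally show ?thesis .
qed
lemma U'_sub: "ty A = Some (1, 1) \<Longrightarrow> ty B = Some (1, 1) \<Longrightarrow> EQ \<delta> 0 2 (U' (asub A B)) (asub (U' A) (U' B))"
proof -
  assume a: "ty A = Some (1, 1)" "ty B = Some (1, 1)"
  have "EQ \<delta> 0 2 (U' (asub A B)) (Add (U' A) (U' (Smul (-1) B)))"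
    unfolding asub_def by (rule U'_add) (simp_all add: a)
  also have "EQ \<delta> 0 2 \<dots> (asub (U' A) (U' B))" unfolding asub_def by (rule addR, rule U'_smul) (simp_all add: a)
  finally show ?thesis .
qed
lemma U'_comp: "ty A = Some (1, 1) \<Longrightarrow> ty B = Some (1, 1) \<Longrightarrow> EQ \<delta> 0 2 (U' (Comp A B)) (Comp (Tens A 1 1 bI) (U' B))"
proof -
  assume a: "ty A = Some (1, 1)" "ty B = Some (1, 1)"
  have "EQ \<delta> 0 2 (U' (Comp A B)) (Comp (Comp (Tens A 1 1 bI) (Tens B 1 1 bI)) aAmalg)"
    unfolding U'_def by (rule compL, rule P1x) (simp_all add: a)
  also have "EQ \<delta> 0 2 \<dots> (Comp (Tens A 1 1 bI) (U' B))" unfolding U'_def by (rule assocE) (simp_all add: a)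
  finally show ?thesis .
qed

lemma FH: "EQ \<delta> 2 0 (Comp aPi (Comp aH01 aX0)) (Smul (-1) (Comp aPi aH01))"
proof -
  have t: "ty (Comp aPi (Comp aH01 aX0)) = Some (2, 0)" by simp
  have "EQ \<delta> 2 0 (Comp aPi (Comp aH01 aX0)) (U (Tt (Comp aPi (Comp aH01 aX0))))"
    by (rule eq_sym, rule UTt[OF t])
  also have "EQ \<delta> 2 0 \<dots> (U (atransp HH))"
    by (rule U_cong, rule eq_sym) (use A1[of HH \<delta>] in \<open>simp add: aH01_def\<close>)
  also have "EQ \<delta> 2 0 \<dots> (U (Smul (-1) HH))" by (rule U_cong, rule ab_rel_iii)
  also have "EQ \<delta> 2 0 \<dots> (Smul (-1) (Comp aPi aH01))" unfolding U_HH[symmetric] by (rule U_smul) simp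
  finally show ?thesis .
qed

lemma FH': "EQ \<delta> 0 2 (Comp aX0 (Comp aH01 aAmalg)) (Smul (-1) (Comp aH01 aAmalg))"
proof -
  have t: "ty (Comp aX0 (Comp aH01 aAmalg)) = Some (0, 2)" by simp
  have "EQ \<delta> 0 2 (Comp aX0 (Comp aH01 aAmalg)) (U' (Tt' (Comp aX0 (Comp aH01 aAmalg))))"
    by (rule eq_sym, rule U'Tt'[OF t])
  also have "EQ \<delta> 0 2 \<dots> (U' (atransp HH))"
    by (rule U'_cong, rule eq_sym) (use A1'[of HH \<delta>] in \<open>simp add: aH01_def\<close>)
  also have "EQ \<delta> 0 2 \<dots> (U' (Smul (-1) HH))" by (rule U'_cong, rule ab_rel_iii)
  also have "EQ \<delta> 0 2 \<dots> (Smul (-1) (Comp aH01 aAmalg))" unfolding U'_HH[symmetric] by (rule U'_smul) simp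
  finally show ?thesis .
qed

lemma R4: "EQ \<delta> 2 0 (Comp aPi (y2 \<delta>)) (Comp aPi (Phi1 \<delta>))"
proof -
  have "EQ \<delta> 2 0 (Comp aPi (y2 \<delta>)) (Add (Comp aPi aH02) (Comp aPi (aH12 \<delta>)))"
    unfolding y2_def by (rule cAddR) simp_all
  also have "EQ \<delta> 2 0 \<dots> (Add (Smul (-1) (Comp aPi aH01)) (asub aPi (Smul \<delta> aPi)))"
  proof (rule ab_add_cong)
    have "EQ \<delta> 2 0 (Comp aPi aH02) (Comp (Comp aPi aX0) (Comp aH01 aX0))"
      unfolding aH02_def by (rule eq_sym, rule assocE) simp_all
    also have "EQ \<delta> 2 0 \<dots> (Comp aPi (Comp aH01 aX0))" by (rule compL[OF Pis]) simp
    also have "EQ \<delta> 2 0 \<dots> (Smul (-1) (Comp aPi aH01))" by (rule FH)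
    finally show "EQ \<delta> 2 0 (Comp aPi aH02) (Smul (-1) (Comp aPi aH01))" .
    have "EQ \<delta> 2 0 (Comp aPi (aH12 \<delta>)) (Comp aPi (asub aX0 ee))" by (rule compR[OF H12e]) simp
    also have "EQ \<delta> 2 0 \<dots> (asub (Comp aPi aX0) (Comp aPi ee))" by (rule cSubR) simp_all
    also have "EQ \<delta> 2 0 \<dots> (asub aPi (Smul \<delta> aPi))" by (rule subC[OF Pis Pie])
    finally show "EQ \<delta> 2 0 (Comp aPi (aH12 \<delta>)) (asub aPi (Smul \<delta> aPi))" .
  qed
  also have "EQ \<delta> 2 0 \<dots> (asub (Smul (1 - \<delta>) aPi) (Comp aPi aH01))"
    by (rule lin) (simp_all add: asub_def fun_eq_iff algebra_simps)
  also have "EQ \<delta> 2 0 \<dots> (asub (Comp aPi (Smul (1 - \<delta>) (aI 2))) (Comp aPi aH01))"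
  proof (rule subC[OF _ eq_refl])
    have "EQ \<delta> 2 0 (Comp aPi (Smul (1 - \<delta>) (aI 2))) (Smul (1 - \<delta>) (Comp aPi (aI 2)))" by (rule cSmulR) simp_all
    also have "EQ \<delta> 2 0 \<dots> (Smul (1 - \<delta>) aPi)" by (rule smulC, rule id_right) simp
    finally show "EQ \<delta> 2 0 (Smul (1 - \<delta>) aPi) (Comp aPi (Smul (1 - \<delta>) (aI 2)))" by (rule eq_sym)
  qed simp
  also have "EQ \<delta> 2 0 \<dots> (Comp aPi (asub (Smul (1 - \<delta>) (aI 2)) aH01))" by (rule eq_sym, rule cSubR) simp_all
  also have "EQ \<delta> 2 0 \<dots> (Comp aPi (Phi1 \<delta>))" by (rule compR[OF eq_sym[OF Phi1e]]) simp
  finally show ?thesis .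
qed

lemma R4': "EQ \<delta> 0 2 (Comp (y2 \<delta>) aAmalg) (Comp (Phi1 \<delta>) aAmalg)"
proof -
  have "EQ \<delta> 0 2 (Comp (y2 \<delta>) aAmalg) (Add (Comp aH02 aAmalg) (Comp (aH12 \<delta>) aAmalg))"
    unfolding y2_def by (rule cAddL) simp_all
  also have "EQ \<delta> 0 2 \<dots> (Add (Smul (-1) (Comp aH01 aAmalg)) (asub aAmalg (Smul \<delta> aAmalg)))"
  proof (rule ab_add_cong)
    have "EQ \<delta> 0 2 (Comp aH02 aAmalg) (Comp aX0 (Comp (Comp aH01 aX0) aAmalg))"
      unfolding aH02_def by (rule assocE) simp_all
    also have "EQ \<delta> 0 2 \<dots> (Comp aX0 (Comp aH01 (Comp aX0 aAmalg)))" by (rule compR, rule assocE) simp_all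
    also have "EQ \<delta> 0 2 \<dots> (Comp aX0 (Comp aH01 aAmalg))" by (rule compR, rule compR[OF sAm]) simp_all
    also have "EQ \<delta> 0 2 \<dots> (Smul (-1) (Comp aH01 aAmalg))" by (rule FH')
    finally show "EQ \<delta> 0 2 (Comp aH02 aAmalg) (Smul (-1) (Comp aH01 aAmalg))" .
    have "EQ \<delta> 0 2 (Comp (aH12 \<delta>) aAmalg) (Comp (asub aX0 ee) aAmalg)" by (rule compL[OF H12e]) simp
    also have "EQ \<delta> 0 2 \<dots> (asub (Comp aX0 aAmalg) (Comp ee aAmalg))" by (rule cSubL) simp_all
    also have "EQ \<delta> 0 2 \<dots> (asub aAmalg (Smul \<delta> aAmalg))" by (rule subC[OF sAm eAm])
    finally show "EQ \<delta> 0 2 (Comp (aH12 \<delta>) aAmalg) (asub aAmalg (Smul \<delta> aAmalg))" .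
  qed
  also have "EQ \<delta> 0 2 \<dots> (asub (Smul (1 - \<delta>) aAmalg) (Comp aH01 aAmalg))"
    by (rule lin) (simp_all add: asub_def fun_eq_iff algebra_simps)
  also have "EQ \<delta> 0 2 \<dots> (asub (Comp (Smul (1 - \<delta>) (aI 2)) aAmalg) (Comp aH01 aAmalg))"
  proof (rule subC[OF _ eq_refl])
    have "EQ \<delta> 0 2 (Comp (Smul (1 - \<delta>) (aI 2)) aAmalg) (Smul (1 - \<delta>) (Comp (aI 2) aAmalg))" by (rule cSmulL) simp_all
    also have "EQ \<delta> 0 2 \<dots> (Smul (1 - \<delta>) aAmalg)" by (rule smulC, rule id_left) simp
    finally show "EQ \<delta> 0 2 (Smul (1 - \<delta>) aAmalg) (Comp (Smul (1 - \<delta>) (aI 2)) aAmalg)" by (rule eq_sym)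
  qed simp
  also have "EQ \<delta> 0 2 \<dots> (Comp (asub (Smul (1 - \<delta>) (aI 2)) aH01) aAmalg)" by (rule eq_sym, rule cSubL) simp_all
  also have "EQ \<delta> 0 2 \<dots> (Comp (Phi1 \<delta>) aAmalg)" by (rule compL[OF eq_sym[OF Phi1e]]) simp
  finally show ?thesis .
qed

end

declare One_nat_def[simp del]
declare add_numeral_special[simp]

context fixes \<delta> :: "'k::comm_ring_1"
begin

lemma Ym0: "EQ \<delta> 2 2 (Ym 0) (aI 2)"
  unfolding Ym_def apow0 by (rule P2)

lemma YmS: "EQ \<delta> 2 2 (Ym (Suc m)) (Comp aH01 (Ym m))"
  unfolding Ym_def apowS aH01_def by (rule P1x) simp_all

lemma apowS': "ty D = Some (1, 1) \<Longrightarrow> EQ \<delta> 1 1 (apow D (Suc n)) (Comp (apow D n) D)"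
proof (induction n)
  case 0
  have "EQ \<delta> 1 1 (Comp D (aI 1)) D" by (rule id_right) (simp add: 0)
  also have "EQ \<delta> 1 1 D (Comp (aI 1) D)" by (rule eq_sym, rule id_left) (simp add: 0)
  finally show ?case by (simp add: apow0 apowS)
next
  case (Suc n)
  have "EQ \<delta> 1 1 (apow D (Suc (Suc n))) (Comp D (Comp (apow D n) D))"
    unfolding apowS[of D "Suc n"] by (rule compR) (use Suc in simp_all)
  also have "EQ \<delta> 1 1 \<dots> (Comp (Comp D (apow D n)) D)" by (rule eq_sym, rule assocE) (simp_all add: Suc)
  finally show ?case by (simp add: apowS)
qed

lemma YmS': "EQ \<delta> 2 2 (Ym (Suc m)) (Comp (Ym m) aH01)"
proof -
  have "EQ \<delta> 2 2 (Ym (Suc m)) (Tens (Comp (apow HH m) HH) 1 1 bI)"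
    unfolding Ym_def by (rule tensC[where r=1 and s=1], rule apowS') simp_all
  also have "EQ \<delta> 2 2 \<dots> (Comp (Ym m) aH01)" unfolding Ym_def aH01_def by (rule P1x) simp_all
  finally show ?thesis .
qed

lemma Ym_y2: "EQ \<delta> 2 2 (Comp (Ym m) (y2 \<delta>)) (Comp (y2 \<delta>) (Ym m))"
proof (induction m)
  case 0
  have "EQ \<delta> 2 2 (Comp (Ym 0) (y2 \<delta>)) (Comp (aI 2) (y2 \<delta>))" by (rule compL[OF Ym0]) simp
  also have "EQ \<delta> 2 2 \<dots> (y2 \<delta>)" by (rule id_left) simp
  also have "EQ \<delta> 2 2 \<dots> (Comp (y2 \<delta>) (aI 2))" by (rule eq_sym, rule id_right) simp
  also have "EQ \<delta> 2 2 \<dots> (Comp (y2 \<delta>) (Ym 0))" by (rule compR[OF eq_sym[OF Ym0]]) simp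
  finally show ?case .
next
  case (Suc m)
  have "EQ \<delta> 2 2 (Comp (Ym (Suc m)) (y2 \<delta>)) (Comp (Comp aH01 (Ym m)) (y2 \<delta>))" by (rule compL[OF YmS]) simp
  also have "EQ \<delta> 2 2 \<dots> (Comp aH01 (Comp (Ym m) (y2 \<delta>)))" by (rule assocE) simp_all
  also have "EQ \<delta> 2 2 \<dots> (Comp aH01 (Comp (y2 \<delta>) (Ym m)))" by (rule compR[OF Suc]) simp
  also have "EQ \<delta> 2 2 \<dots> (Comp (Comp aH01 (y2 \<delta>)) (Ym m))" by (rule eq_sym, rule assocE) simp_all
  also have "EQ \<delta> 2 2 \<dots> (Comp (Comp (y2 \<delta>) aH01) (Ym m))" by (rule compL[OF R3]) simp
  also have "EQ \<delta> 2 2 \<dots> (Comp (y2 \<delta>) (Comp aH01 (Ym m)))" by (rule assocE) simp_all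
  also have "EQ \<delta> 2 2 \<dots> (Comp (y2 \<delta>) (Ym (Suc m)))" by (rule compR[OF eq_sym[OF YmS]]) simp
  finally show ?case .
qed

definition comm :: "'k abt \<Rightarrow> 'k abt \<Rightarrow> bool" where
  "comm A B \<longleftrightarrow> EQ \<delta> 1 1 (Comp A B) (Comp B A)"

lemma comm_sym: "comm A B \<Longrightarrow> comm B A"
  unfolding comm_def by (rule eq_sym)

lemma comm_pow: "ty A = Some (1, 1) \<Longrightarrow> ty B = Some (1, 1) \<Longrightarrow> comm A B \<Longrightarrow> comm (apow A n) B"
proof (induction n)
  case 0
  have "EQ \<delta> 1 1 (Comp (aI 1) B) B" by (rule id_left) (simp add: 0)
  also have "EQ \<delta> 1 1 B (Comp B (aI 1))" by (rule eq_sym, rule id_right) (simp add: 0)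
  finally show ?case by (simp add: comm_def apow0)
next
  case (Suc n)
  note t = Suc.prems(1,2)
  have c: "EQ \<delta> 1 1 (Comp (apow A n) B) (Comp B (apow A n))" using Suc by (simp add: comm_def)
  have c1: "EQ \<delta> 1 1 (Comp A B) (Comp B A)" using Suc.prems(3) by (simp add: comm_def)
  have "EQ \<delta> 1 1 (Comp (Comp A (apow A n)) B) (Comp A (Comp (apow A n) B))" by (rule assocE) (simp_all add: t)
  also have "EQ \<delta> 1 1 \<dots> (Comp A (Comp B (apow A n)))" by (rule compR[OF c]) (simp add: t)
  also have "EQ \<delta> 1 1 \<dots> (Comp (Comp A B) (apow A n))" by (rule eq_sym, rule assocE) (simp_all add: t)
  also have "EQ \<delta> 1 1 \<dots> (Comp (Comp B A) (apow A n))" by (rule compL[OF c1]) (simp add: t)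
  also have "EQ \<delta> 1 1 \<dots> (Comp B (Comp A (apow A n)))" by (rule assocE) (simp_all add: t)
  finally show ?case by (simp add: comm_def apowS)
qed

lemma comm_HPhi: "comm HH (aPhi \<delta>)"
proof -
  have "EQ \<delta> 1 1 (Comp HH (aPhi \<delta>)) (asub (Comp HH (Smul (1 - \<delta>) (aI 1))) (Comp HH HH))"
    unfolding aPhi_def by (rule cSubR) simp_all
  also have "EQ \<delta> 1 1 \<dots> (asub (Smul (1 - \<delta>) HH) (Comp HH HH))"
  proof (rule subC[OF _ eq_refl])
    have "EQ \<delta> 1 1 (Comp HH (Smul (1 - \<delta>) (aI 1))) (Smul (1 - \<delta>) (Comp HH (aI 1)))" by (rule cSmulR) simp_all
    also have "EQ \<delta> 1 1 \<dots> (Smul (1 - \<delta>) HH)" by (rule smulC, rule id_right) simp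
    finally show "EQ \<delta> 1 1 (Comp HH (Smul (1 - \<delta>) (aI 1))) (Smul (1 - \<delta>) HH)" .
  qed simp
  also have "EQ \<delta> 1 1 \<dots> (asub (Comp (Smul (1 - \<delta>) (aI 1)) HH) (Comp HH HH))"
  proof (rule subC[OF _ eq_refl])
    have "EQ \<delta> 1 1 (Comp (Smul (1 - \<delta>) (aI 1)) HH) (Smul (1 - \<delta>) (Comp (aI 1) HH))" by (rule cSmulL) simp_all
    also have "EQ \<delta> 1 1 \<dots> (Smul (1 - \<delta>) HH)" by (rule smulC, rule id_left) simp
    finally show "EQ \<delta> 1 1 (Smul (1 - \<delta>) HH) (Comp (Smul (1 - \<delta>) (aI 1)) HH)" by (rule eq_sym)
  qed simp
  also have "EQ \<delta> 1 1 \<dots> (Comp (aPhi \<delta>) HH)" unfolding aPhi_def by (rule eq_sym, rule cSubL) simp_all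
  finally show ?thesis by (simp add: comm_def)
qed

lemma comm_HiPhik: "comm (apow HH i) (apow (aPhi \<delta>) k)"
proof -
  have "comm (apow (aPhi \<delta>) k) HH" by (rule comm_pow, simp, simp, rule comm_sym[OF comm_HPhi])
  then have c: "comm HH (apow (aPhi \<delta>) k)" by (rule comm_sym)
  show ?thesis by (rule comm_pow[OF _ _ c]) simp_all
qed

lemma commD: "comm A B \<Longrightarrow> EQ \<delta> 1 1 (Comp A B) (Comp B A)" by (simp add: comm_def)

lemma ZPi: "ty Z = Some (0, 0) \<Longrightarrow> EQ \<delta> 2 0 (U (Tens Z 1 1 bI)) (Comp Z aPi)"
proof -
  assume t: "ty Z = Some (0, 0)"
  have "EQ \<delta> 2 0 (U (Tens Z 1 1 bI)) (Comp aPi (Tens Z 2 2 I2b))"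
    unfolding U_def by (rule compR, rule P3x) (simp_all add: t)
  also have "EQ \<delta> 2 0 \<dots> (Tens Z 2 0 bcap)" using P4[OF t, of \<delta>, unfolded add_0] by simp
  also have "EQ \<delta> 2 0 \<dots> (Comp Z (Tens (aI 0) 2 0 bcap))" using P5[OF t, of \<delta>, unfolded add_0] by simp
  also have "EQ \<delta> 2 0 \<dots> (Comp Z aPi)"
    unfolding aPi_def by (rule compR, rule tensC[where r=0 and s=0, OF pole_aI0]) (simp_all add: t)
  finally show ?thesis .
qed

lemma ZAm: "ty Z = Some (0, 0) \<Longrightarrow> EQ \<delta> 0 2 (U' (Tens Z 1 1 bI)) (Comp aAmalg Z)"
proof -
  assume t: "ty Z = Some (0, 0)"
  have "EQ \<delta> 0 2 (U' (Tens Z 1 1 bI)) (Comp (Tens Z 2 2 I2b) aAmalg)"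
    unfolding U'_def by (rule compL, rule P3x) (simp_all add: t)
  also have "EQ \<delta> 0 2 \<dots> (Tens Z 0 2 bcup)" using Q3[OF t, of \<delta>, unfolded add_0] by simp
  also have "EQ \<delta> 0 2 \<dots> (Comp (Tens (aI 0) 0 2 bcup) Z)" using Q2[OF t, of \<delta>, unfolded add_0] by simp
  also have "EQ \<delta> 0 2 \<dots> (Comp aAmalg Z)"
    unfolding aAmalg_def by (rule compL, rule tensC[where r=0 and s=0, OF pole_aI0]) (simp_all add: t)
  finally show ?thesis .
qed

definition Good :: "'k abt \<Rightarrow> bool" where
  "Good A \<longleftrightarrow> EQ \<delta> 2 0 (Comp (U A) (y2 \<delta>)) (U (Comp A (aPhi \<delta>)))"
definition Good' :: "'k abt \<Rightarrow> bool" where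
  "Good' A \<longleftrightarrow> EQ \<delta> 0 2 (Comp (y2 \<delta>) (U' A)) (U' (Comp (aPhi \<delta>) A))"

lemma Good_add: "ty A = Some (1, 1) \<Longrightarrow> ty B = Some (1, 1) \<Longrightarrow> Good A \<Longrightarrow> Good B \<Longrightarrow> Good (Add A B)"
proof -
  assume t: "ty A = Some (1, 1)" "ty B = Some (1, 1)" and g: "Good A" "Good B"
  have "EQ \<delta> 2 0 (Comp (U (Add A B)) (y2 \<delta>)) (Comp (Add (U A) (U B)) (y2 \<delta>))"
    by (rule compL[OF U_add[OF t]]) simp
  also have "EQ \<delta> 2 0 \<dots> (Add (Comp (U A) (y2 \<delta>)) (Comp (U B) (y2 \<delta>)))" by (rule cAddL) (simp_all add: t)
  also have "EQ \<delta> 2 0 \<dots> (Add (U (Comp A (aPhi \<delta>))) (U (Comp B (aPhi \<delta>))))"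
    using g by (intro ab_add_cong) (simp_all add: Good_def)
  also have "EQ \<delta> 2 0 \<dots> (U (Add (Comp A (aPhi \<delta>)) (Comp B (aPhi \<delta>))))" by (rule eq_sym, rule U_add) (simp_all add: t)
  also have "EQ \<delta> 2 0 \<dots> (U (Comp (Add A B) (aPhi \<delta>)))" by (rule U_cong, rule eq_sym, rule cAddL) (simp_all add: t)
  finally show ?thesis by (simp add: Good_def)
qed

lemma Good_smul: "ty A = Some (1, 1) \<Longrightarrow> Good A \<Longrightarrow> Good (Smul c A)"
proof -
  assume t: "ty A = Some (1, 1)" and g: "Good A"
  have "EQ \<delta> 2 0 (Comp (U (Smul c A)) (y2 \<delta>)) (Comp (Smul c (U A)) (y2 \<delta>))"
    by (rule compL[OF U_smul[OF t]]) simp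
  also have "EQ \<delta> 2 0 \<dots> (Smul c (Comp (U A) (y2 \<delta>)))" by (rule cSmulL) (simp_all add: t)
  also have "EQ \<delta> 2 0 \<dots> (Smul c (U (Comp A (aPhi \<delta>))))" using g by (intro smulC) (simp add: Good_def)
  also have "EQ \<delta> 2 0 \<dots> (U (Smul c (Comp A (aPhi \<delta>))))" by (rule eq_sym, rule U_smul) (simp add: t)
  also have "EQ \<delta> 2 0 \<dots> (U (Comp (Smul c A) (aPhi \<delta>)))" by (rule U_cong, rule eq_sym, rule cSmulL) (simp_all add: t)
  finally show ?thesis by (simp add: Good_def)
qed

lemma Good_Phi: "ty A = Some (1, 1) \<Longrightarrow> Good A \<Longrightarrow> Good (Comp A (aPhi \<delta>))"
proof -
  assume t: "ty A = Some (1, 1)" and g: "Good A"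
  have "EQ \<delta> 2 0 (Comp (U (Comp A (aPhi \<delta>))) (y2 \<delta>)) (Comp (Comp (U A) (Phi1 \<delta>)) (y2 \<delta>))"
    unfolding Phi1_def by (rule compL[OF U_comp]) (simp_all add: t)
  also have "EQ \<delta> 2 0 \<dots> (Comp (U A) (Comp (Phi1 \<delta>) (y2 \<delta>)))" by (rule assocE) (simp_all add: t)
  also have "EQ \<delta> 2 0 \<dots> (Comp (U A) (Comp (y2 \<delta>) (Phi1 \<delta>)))" by (rule compR[OF Phi1_y2]) (simp add: t)
  also have "EQ \<delta> 2 0 \<dots> (Comp (Comp (U A) (y2 \<delta>)) (Phi1 \<delta>))" by (rule eq_sym, rule assocE) (simp_all add: t)
  also have "EQ \<delta> 2 0 \<dots> (Comp (U (Comp A (aPhi \<delta>))) (Phi1 \<delta>))" using g by (intro compL) (simp_all add: Good_def)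
  also have "EQ \<delta> 2 0 \<dots> (U (Comp (Comp A (aPhi \<delta>)) (aPhi \<delta>)))"
    unfolding Phi1_def by (rule eq_sym, rule U_comp) (simp_all add: t)
  finally show ?thesis by (simp add: Good_def)
qed

lemma Good_Z: "ty Z = Some (0, 0) \<Longrightarrow> Good (Tens Z 1 1 bI)"
proof -
  assume t: "ty Z = Some (0, 0)"
  have "EQ \<delta> 2 0 (Comp (U (Tens Z 1 1 bI)) (y2 \<delta>)) (Comp (Comp Z aPi) (y2 \<delta>))"
    by (rule compL[OF ZPi[OF t]]) simp
  also have "EQ \<delta> 2 0 \<dots> (Comp Z (Comp aPi (y2 \<delta>)))" by (rule assocE) (simp_all add: t)
  also have "EQ \<delta> 2 0 \<dots> (Comp Z (Comp aPi (Phi1 \<delta>)))" by (rule compR[OF R4]) (simp add: t)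
  also have "EQ \<delta> 2 0 \<dots> (Comp (Comp Z aPi) (Phi1 \<delta>))" by (rule eq_sym, rule assocE) (simp_all add: t)
  also have "EQ \<delta> 2 0 \<dots> (Comp (U (Tens Z 1 1 bI)) (Phi1 \<delta>))" by (rule compL[OF eq_sym[OF ZPi[OF t]]]) simp
  also have "EQ \<delta> 2 0 \<dots> (U (Comp (Tens Z 1 1 bI) (aPhi \<delta>)))"
    unfolding Phi1_def by (rule eq_sym, rule U_comp) (simp_all add: t)
  finally show ?thesis by (simp add: Good_def)
qed

lemma Good_H: "Good (apow HH i)"
proof -
  have "EQ \<delta> 2 0 (Comp (U (apow HH i)) (y2 \<delta>)) (Comp (Comp aPi (Ym i)) (y2 \<delta>))"
    unfolding Ym_Pi by (rule eq_refl) simp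
  also have "EQ \<delta> 2 0 \<dots> (Comp aPi (Comp (Ym i) (y2 \<delta>)))" by (rule assocE) simp_all
  also have "EQ \<delta> 2 0 \<dots> (Comp aPi (Comp (y2 \<delta>) (Ym i)))" by (rule compR[OF Ym_y2]) simp
  also have "EQ \<delta> 2 0 \<dots> (Comp (Comp aPi (y2 \<delta>)) (Ym i))" by (rule eq_sym, rule assocE) simp_all
  also have "EQ \<delta> 2 0 \<dots> (Comp (Comp aPi (Phi1 \<delta>)) (Ym i))" by (rule compL[OF R4]) simp
  also have "EQ \<delta> 2 0 \<dots> (U (Comp (aPhi \<delta>) (apow HH i)))"
  proof -
    have "EQ \<delta> 2 0 (U (Comp (aPhi \<delta>) (apow HH i))) (Comp (U (aPhi \<delta>)) (Tens (apow HH i) 1 1 bI))"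
      by (rule U_comp) simp_all
    then show ?thesis unfolding U_def[of "aPhi \<delta>"] Phi1_def Ym_def by (rule eq_sym)
  qed
  also have "EQ \<delta> 2 0 \<dots> (U (Comp (apow HH i) (aPhi \<delta>)))"
    by (rule U_cong, rule eq_sym, rule commD, rule comm_pow, simp, simp, rule comm_HPhi)
  finally show ?thesis by (simp add: Good_def)
qed

end

declare One_nat_def[simp del]
declare add_numeral_special[simp]

fun Rec :: "'k::comm_ring_1 \<Rightarrow> nat \<Rightarrow> 'k abt" where
  "Rec \<delta> 0 = Smul (-1) HH"
| "Rec \<delta> (Suc l) = Add (Comp (Rec \<delta> l) (aPhi \<delta>)) (aG (Suc l))"

fun Rec' :: "'k::comm_ring_1 \<Rightarrow> nat \<Rightarrow> 'k abt" where
  "Rec' \<delta> 0 = Smul (-1) HH"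
| "Rec' \<delta> (Suc l) = Add (Comp (aPhi \<delta>) (Rec' \<delta> l)) (aG (Suc l))"

lemma ty_Rec[simp]: "ty (Rec \<delta> l) = Some (1, 1)" by (induction l) simp_all
lemma ty_Rec'[simp]: "ty (Rec' \<delta> l) = Some (1, 1)" by (induction l) simp_all

context fixes \<delta> :: "'k::comm_ring_1"
begin

lemma Good'_add: "ty A = Some (1, 1) \<Longrightarrow> ty B = Some (1, 1) \<Longrightarrow> Good' \<delta> A \<Longrightarrow> Good' \<delta> B \<Longrightarrow> Good' \<delta> (Add A B)"
proof -
  assume t: "ty A = Some (1, 1)" "ty B = Some (1, 1)" and g: "Good' \<delta> A" "Good' \<delta> B"
  have "EQ \<delta> 0 2 (Comp (y2 \<delta>) (U' (Add A B))) (Comp (y2 \<delta>) (Add (U' A) (U' B)))"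
    by (rule compR[OF U'_add[OF t]]) simp
  also have "EQ \<delta> 0 2 \<dots> (Add (Comp (y2 \<delta>) (U' A)) (Comp (y2 \<delta>) (U' B)))" by (rule cAddR) (simp_all add: t)
  also have "EQ \<delta> 0 2 \<dots> (Add (U' (Comp (aPhi \<delta>) A)) (U' (Comp (aPhi \<delta>) B)))"
    using g by (intro ab_add_cong) (simp_all add: Good'_def)
  also have "EQ \<delta> 0 2 \<dots> (U' (Add (Comp (aPhi \<delta>) A) (Comp (aPhi \<delta>) B)))" by (rule eq_sym, rule U'_add) (simp_all add: t)
  also have "EQ \<delta> 0 2 \<dots> (U' (Comp (aPhi \<delta>) (Add A B)))" by (rule U'_cong, rule eq_sym, rule cAddR) (simp_all add: t)
  finally show ?thesis by (simp add: Good'_def)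
qed

lemma Good'_smul: "ty A = Some (1, 1) \<Longrightarrow> Good' \<delta> A \<Longrightarrow> Good' \<delta> (Smul c A)"
proof -
  assume t: "ty A = Some (1, 1)" and g: "Good' \<delta> A"
  have "EQ \<delta> 0 2 (Comp (y2 \<delta>) (U' (Smul c A))) (Comp (y2 \<delta>) (Smul c (U' A)))"
    by (rule compR[OF U'_smul[OF t]]) simp
  also have "EQ \<delta> 0 2 \<dots> (Smul c (Comp (y2 \<delta>) (U' A)))" by (rule cSmulR) (simp_all add: t)
  also have "EQ \<delta> 0 2 \<dots> (Smul c (U' (Comp (aPhi \<delta>) A)))" using g by (intro smulC) (simp add: Good'_def)
  also have "EQ \<delta> 0 2 \<dots> (U' (Smul c (Comp (aPhi \<delta>) A)))" by (rule eq_sym, rule U'_smul) (simp add: t)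
  also have "EQ \<delta> 0 2 \<dots> (U' (Comp (aPhi \<delta>) (Smul c A)))" by (rule U'_cong, rule eq_sym, rule cSmulR) (simp_all add: t)
  finally show ?thesis by (simp add: Good'_def)
qed

lemma Good'_Phi: "ty A = Some (1, 1) \<Longrightarrow> Good' \<delta> A \<Longrightarrow> Good' \<delta> (Comp (aPhi \<delta>) A)"
proof -
  assume t: "ty A = Some (1, 1)" and g: "Good' \<delta> A"
  have "EQ \<delta> 0 2 (Comp (y2 \<delta>) (U' (Comp (aPhi \<delta>) A))) (Comp (y2 \<delta>) (Comp (Phi1 \<delta>) (U' A)))"
    unfolding Phi1_def by (rule compR[OF U'_comp]) (simp_all add: t)
  also have "EQ \<delta> 0 2 \<dots> (Comp (Comp (y2 \<delta>) (Phi1 \<delta>)) (U' A))" by (rule eq_sym, rule assocE) (simp_all add: t)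
  also have "EQ \<delta> 0 2 \<dots> (Comp (Comp (Phi1 \<delta>) (y2 \<delta>)) (U' A))" by (rule compL[OF eq_sym[OF Phi1_y2]]) (simp add: t)
  also have "EQ \<delta> 0 2 \<dots> (Comp (Phi1 \<delta>) (Comp (y2 \<delta>) (U' A)))" by (rule assocE) (simp_all add: t)
  also have "EQ \<delta> 0 2 \<dots> (Comp (Phi1 \<delta>) (U' (Comp (aPhi \<delta>) A)))" using g by (intro compR) (simp_all add: Good'_def)
  also have "EQ \<delta> 0 2 \<dots> (U' (Comp (aPhi \<delta>) (Comp (aPhi \<delta>) A)))"
    unfolding Phi1_def by (rule eq_sym, rule U'_comp) (simp_all add: t)
  finally show ?thesis by (simp add: Good'_def)
qed

lemma Good'_Z: "ty Z = Some (0, 0) \<Longrightarrow> Good' \<delta> (Tens Z 1 1 bI)"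
proof -
  assume t: "ty Z = Some (0, 0)"
  have "EQ \<delta> 0 2 (Comp (y2 \<delta>) (U' (Tens Z 1 1 bI))) (Comp (y2 \<delta>) (Comp aAmalg Z))"
    by (rule compR[OF ZAm[OF t]]) simp
  also have "EQ \<delta> 0 2 \<dots> (Comp (Comp (y2 \<delta>) aAmalg) Z)" by (rule eq_sym, rule assocE) (simp_all add: t)
  also have "EQ \<delta> 0 2 \<dots> (Comp (Comp (Phi1 \<delta>) aAmalg) Z)" by (rule compL[OF R4']) (simp add: t)
  also have "EQ \<delta> 0 2 \<dots> (Comp (Phi1 \<delta>) (Comp aAmalg Z))" by (rule assocE) (simp_all add: t)
  also have "EQ \<delta> 0 2 \<dots> (Comp (Phi1 \<delta>) (U' (Tens Z 1 1 bI)))" by (rule compR[OF eq_sym[OF ZAm[OF t]]]) simp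
  also have "EQ \<delta> 0 2 \<dots> (U' (Comp (aPhi \<delta>) (Tens Z 1 1 bI)))"
    unfolding Phi1_def by (rule eq_sym, rule U'_comp) (simp_all add: t)
  finally show ?thesis by (simp add: Good'_def)
qed

lemma Good'_H: "Good' \<delta> (apow HH i)"
proof -
  have "EQ \<delta> 0 2 (Comp (y2 \<delta>) (U' (apow HH i))) (Comp (y2 \<delta>) (Comp (Ym i) aAmalg))"
    unfolding Ym_Am by (rule eq_refl) simp
  also have "EQ \<delta> 0 2 \<dots> (Comp (Comp (y2 \<delta>) (Ym i)) aAmalg)" by (rule eq_sym, rule assocE) simp_all
  also have "EQ \<delta> 0 2 \<dots> (Comp (Comp (Ym i) (y2 \<delta>)) aAmalg)" by (rule compL[OF eq_sym[OF Ym_y2]]) simp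
  also have "EQ \<delta> 0 2 \<dots> (Comp (Ym i) (Comp (y2 \<delta>) aAmalg))" by (rule assocE) simp_all
  also have "EQ \<delta> 0 2 \<dots> (Comp (Ym i) (Comp (Phi1 \<delta>) aAmalg))" by (rule compR[OF R4']) simp
  also have "EQ \<delta> 0 2 \<dots> (Comp (Comp (Ym i) (Phi1 \<delta>)) aAmalg)" by (rule eq_sym, rule assocE) simp_all
  also have "EQ \<delta> 0 2 \<dots> (U' (Comp (apow HH i) (aPhi \<delta>)))"
  proof -
    have "EQ \<delta> 0 2 (U' (Comp (apow HH i) (aPhi \<delta>))) (Comp (Tens (apow HH i) 1 1 bI) (U' (aPhi \<delta>)))"
      by (rule U'_comp) simp_all
    also have "EQ \<delta> 0 2 \<dots> (Comp (Comp (Ym i) (Phi1 \<delta>)) aAmalg)"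
      unfolding U'_def Ym_def Phi1_def by (rule eq_sym, rule assocE) simp_all
    finally show ?thesis by (rule eq_sym)
  qed
  also have "EQ \<delta> 0 2 \<dots> (U' (Comp (aPhi \<delta>) (apow HH i)))"
    by (rule U'_cong, rule commD, rule comm_pow, simp, simp, rule comm_HPhi)
  finally show ?thesis by (simp add: Good'_def)
qed

lemma Good_HH: "Good \<delta> HH"
proof -
  have a1: "apow HH 1 = Comp HH (aI 1)" by (simp add: apow_def One_nat_def)
  have e: "EQ \<delta> 1 1 (apow HH 1) HH" unfolding a1 by (rule id_right) simp
  have g: "Good \<delta> (apow HH 1)" by (rule Good_H)
  have "EQ \<delta> 2 0 (Comp (U HH) (y2 \<delta>)) (Comp (U (apow HH 1)) (y2 \<delta>))"
    by (rule compL[OF U_cong[OF eq_sym[OF e]]]) simp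
  also have "EQ \<delta> 2 0 \<dots> (U (Comp (apow HH 1) (aPhi \<delta>)))" using g by (simp add: Good_def)
  also have "EQ \<delta> 2 0 \<dots> (U (Comp HH (aPhi \<delta>)))" by (rule U_cong, rule compL[OF e]) simp
  finally show ?thesis by (simp add: Good_def)
qed

lemma Good'_HH: "Good' \<delta> HH"
proof -
  have a1: "apow HH 1 = Comp HH (aI 1)" by (simp add: apow_def One_nat_def)
  have e: "EQ \<delta> 1 1 (apow HH 1) HH" unfolding a1 by (rule id_right) simp
  have g: "Good' \<delta> (apow HH 1)" by (rule Good'_H)
  have "EQ \<delta> 0 2 (Comp (y2 \<delta>) (U' HH)) (Comp (y2 \<delta>) (U' (apow HH 1)))"
    by (rule compR[OF U'_cong[OF eq_sym[OF e]]]) simp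
  also have "EQ \<delta> 0 2 \<dots> (U' (Comp (aPhi \<delta>) (apow HH 1)))" using g by (simp add: Good'_def)
  also have "EQ \<delta> 0 2 \<dots> (U' (Comp (aPhi \<delta>) HH))" by (rule U'_cong, rule compR[OF e]) simp
  finally show ?thesis by (simp add: Good'_def)
qed

lemma Good_aG: "Good \<delta> (aG i)"
  unfolding aG_def asub_def by (intro Good_add Good_smul Good_Z Good_H) simp_all
lemma Good'_aG: "Good' \<delta> (aG i)"
  unfolding aG_def asub_def by (intro Good'_add Good'_smul Good'_Z Good'_H) simp_all

lemma Good_Rec: "Good \<delta> (Rec \<delta> l)"
  by (induction l) (auto intro!: Good_add Good_smul Good_Phi Good_HH Good_aG)
lemma Good'_Rec': "Good' \<delta> (Rec' \<delta> l)"
  by (induction l) (auto intro!: Good'_add Good'_smul Good'_Phi Good'_HH Good'_aG)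


lemma Ym1: "EQ \<delta> 2 2 (Ym (Suc 0)) aH01"
proof -
  have "EQ \<delta> 2 2 (Ym (Suc 0)) (Comp aH01 (Ym 0))" by (rule YmS)
  also have "EQ \<delta> 2 2 \<dots> (Comp aH01 (aI 2))" by (rule compR[OF Ym0]) simp
  also have "EQ \<delta> 2 2 \<dots> aH01" by (rule id_right) simp
  finally show ?thesis .
qed

lemma Claim1: "EQ \<delta> 2 0 (Comp aPi (Comp (Ym (Suc l)) aX0)) (U (Rec \<delta> l))"
proof (induction l)
  case 0
  have "EQ \<delta> 2 0 (Comp aPi (Comp (Ym (Suc 0)) aX0)) (Comp aPi (Comp aH01 aX0))"
    by (rule compR, rule compL[OF Ym1]) simp_all
  also have "EQ \<delta> 2 0 \<dots> (Smul (-1) (Comp aPi aH01))" by (rule FH)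
  also have "EQ \<delta> 2 0 \<dots> (U (Rec \<delta> 0))" unfolding U_HH[symmetric] Rec.simps by (rule eq_sym, rule U_smul) simp
  finally show ?case .
next
  case (Suc l)
  define m where "m = Suc l"
  have IH: "EQ \<delta> 2 0 (Comp aPi (Comp (Ym m) aX0)) (U (Rec \<delta> l))" using Suc m_def by simp
  have T1: "EQ \<delta> 2 0 (Comp aPi (Comp (Ym m) (Comp aX0 (y2 \<delta>)))) (U (Comp (Rec \<delta> l) (aPhi \<delta>)))"
  proof -
    have "EQ \<delta> 2 0 (Comp aPi (Comp (Ym m) (Comp aX0 (y2 \<delta>)))) (Comp aPi (Comp (Comp (Ym m) aX0) (y2 \<delta>)))"
      by (rule compR, rule eq_sym, rule assocE) simp_all
    also have "EQ \<delta> 2 0 \<dots> (Comp (Comp aPi (Comp (Ym m) aX0)) (y2 \<delta>))" by (rule eq_sym, rule assocE) simp_all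
    also have "EQ \<delta> 2 0 \<dots> (Comp (U (Rec \<delta> l)) (y2 \<delta>))" by (rule compL[OF IH]) simp
    also have "EQ \<delta> 2 0 \<dots> (U (Comp (Rec \<delta> l) (aPhi \<delta>)))" using Good_Rec[of l] by (simp add: Good_def)
    finally show ?thesis .
  qed
  have T2: "EQ \<delta> 2 0 (Comp aPi (Comp (Ym m) (aI 2))) (U (apow HH m))"
    unfolding Ym_Pi by (rule compR, rule id_right) simp_all
  have T3: "EQ \<delta> 2 0 (Comp aPi (Comp (Ym m) ee)) (U (Tens (aZ m) 1 1 bI))"
  proof -
    have "EQ \<delta> 2 0 (Comp aPi (Comp (Ym m) ee)) (Comp aPi (Comp (Comp (Ym m) aAmalg) aPi))"
      unfolding ee_def by (rule compR, rule eq_sym, rule assocE) simp_all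
    also have "EQ \<delta> 2 0 \<dots> (Comp (aZ m) aPi)" unfolding aZ_Ym by (rule eq_sym, rule assocE) simp_all
    also have "EQ \<delta> 2 0 \<dots> (U (Tens (aZ m) 1 1 bI))" by (rule eq_sym, rule ZPi) simp
    finally show ?thesis .
  qed
  have "EQ \<delta> 2 0 (Comp aPi (Comp (Ym (Suc m)) aX0)) (Comp aPi (Comp (Comp (Ym m) aH01) aX0))"
    by (rule compR, rule compL[OF YmS']) simp_all
  also have "EQ \<delta> 2 0 \<dots> (Comp aPi (Comp (Ym m) (Comp aH01 aX0)))" by (rule compR, rule assocE) simp_all
  also have "EQ \<delta> 2 0 \<dots> (Comp aPi (Comp (Ym m) (asub (Comp aX0 (y2 \<delta>)) (asub (aI 2) ee))))"
    by (rule compR, rule compR[OF R1]) simp_all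
  also have "EQ \<delta> 2 0 \<dots> (Comp aPi (asub (Comp (Ym m) (Comp aX0 (y2 \<delta>))) (Comp (Ym m) (asub (aI 2) ee))))"
    by (rule compR, rule cSubR) simp_all
  also have "EQ \<delta> 2 0 \<dots> (asub (Comp aPi (Comp (Ym m) (Comp aX0 (y2 \<delta>)))) (Comp aPi (Comp (Ym m) (asub (aI 2) ee))))"
    by (rule cSubR) simp_all
  also have "EQ \<delta> 2 0 \<dots> (asub (U (Comp (Rec \<delta> l) (aPhi \<delta>))) (asub (U (apow HH m)) (U (Tens (aZ m) 1 1 bI))))"
  proof (rule subC[OF T1])
    have "EQ \<delta> 2 0 (Comp aPi (Comp (Ym m) (asub (aI 2) ee))) (Comp aPi (asub (Comp (Ym m) (aI 2)) (Comp (Ym m) ee)))"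
      by (rule compR, rule cSubR) simp_all
    also have "EQ \<delta> 2 0 \<dots> (asub (Comp aPi (Comp (Ym m) (aI 2))) (Comp aPi (Comp (Ym m) ee)))"
      by (rule cSubR) simp_all
    also have "EQ \<delta> 2 0 \<dots> (asub (U (apow HH m)) (U (Tens (aZ m) 1 1 bI)))" by (rule subC[OF T2 T3])
    finally show "EQ \<delta> 2 0 (Comp aPi (Comp (Ym m) (asub (aI 2) ee))) (asub (U (apow HH m)) (U (Tens (aZ m) 1 1 bI)))" .
  qed
  also have "EQ \<delta> 2 0 \<dots> (Add (U (Comp (Rec \<delta> l) (aPhi \<delta>))) (asub (U (Tens (aZ m) 1 1 bI)) (U (apow HH m))))"
    by (rule lin) (simp_all add: asub_def fun_eq_iff algebra_simps)
  also have "EQ \<delta> 2 0 \<dots> (Add (U (Comp (Rec \<delta> l) (aPhi \<delta>))) (U (aG m)))"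
    unfolding aG_def by (rule addR, rule eq_sym, rule U_sub) simp_all
  also have "EQ \<delta> 2 0 \<dots> (U (Rec \<delta> (Suc l)))"
    unfolding Rec.simps m_def by (rule eq_sym, rule U_add) simp_all
  finally show ?case by (simp add: m_def)
qed

lemma Claim2: "EQ \<delta> 0 2 (Comp aX0 (Comp (Ym (Suc l)) aAmalg)) (U' (Rec' \<delta> l))"
proof (induction l)
  case 0
  have "EQ \<delta> 0 2 (Comp aX0 (Comp (Ym (Suc 0)) aAmalg)) (Comp aX0 (Comp aH01 aAmalg))"
    by (rule compR, rule compL[OF Ym1]) simp_all
  also have "EQ \<delta> 0 2 \<dots> (Smul (-1) (Comp aH01 aAmalg))" by (rule FH')
  also have "EQ \<delta> 0 2 \<dots> (U' (Rec' \<delta> 0))" unfolding U'_HH[symmetric] Rec'.simps by (rule eq_sym, rule U'_smul) simp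
  finally show ?case .
next
  case (Suc l)
  define m where "m = Suc l"
  have IH: "EQ \<delta> 0 2 (Comp aX0 (Comp (Ym m) aAmalg)) (U' (Rec' \<delta> l))" using Suc m_def by simp
  have T1: "EQ \<delta> 0 2 (Comp (Comp (y2 \<delta>) aX0) (Comp (Ym m) aAmalg)) (U' (Comp (aPhi \<delta>) (Rec' \<delta> l)))"
  proof -
    have "EQ \<delta> 0 2 (Comp (Comp (y2 \<delta>) aX0) (Comp (Ym m) aAmalg)) (Comp (y2 \<delta>) (Comp aX0 (Comp (Ym m) aAmalg)))"
      by (rule assocE) simp_all
    also have "EQ \<delta> 0 2 \<dots> (Comp (y2 \<delta>) (U' (Rec' \<delta> l)))" by (rule compR[OF IH]) simp
    also have "EQ \<delta> 0 2 \<dots> (U' (Comp (aPhi \<delta>) (Rec' \<delta> l)))" using Good'_Rec'[of l] by (simp add: Good'_def)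
    finally show ?thesis .
  qed
  have T2: "EQ \<delta> 0 2 (Comp (aI 2) (Comp (Ym m) aAmalg)) (U' (apow HH m))"
    unfolding Ym_Am by (rule id_left) simp_all
  have T3: "EQ \<delta> 0 2 (Comp ee (Comp (Ym m) aAmalg)) (U' (Tens (aZ m) 1 1 bI))"
  proof -
    have "EQ \<delta> 0 2 (Comp ee (Comp (Ym m) aAmalg)) (Comp aAmalg (Comp aPi (Comp (Ym m) aAmalg)))"
      unfolding ee_def by (rule assocE) simp_all
    also have "EQ \<delta> 0 2 \<dots> (U' (Tens (aZ m) 1 1 bI))" unfolding aZ_Ym[symmetric] by (rule eq_sym, rule ZAm) simp
    finally show ?thesis .
  qed
  have "EQ \<delta> 0 2 (Comp aX0 (Comp (Ym (Suc m)) aAmalg)) (Comp aX0 (Comp (Comp aH01 (Ym m)) aAmalg))"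
    by (rule compR, rule compL[OF YmS]) simp_all
  also have "EQ \<delta> 0 2 \<dots> (Comp aX0 (Comp aH01 (Comp (Ym m) aAmalg)))" by (rule compR, rule assocE) simp_all
  also have "EQ \<delta> 0 2 \<dots> (Comp (Comp aX0 aH01) (Comp (Ym m) aAmalg))" by (rule eq_sym, rule assocE) simp_all
  also have "EQ \<delta> 0 2 \<dots> (Comp (asub (Comp (y2 \<delta>) aX0) (asub (aI 2) ee)) (Comp (Ym m) aAmalg))"
    by (rule compL[OF R2]) simp
  also have "EQ \<delta> 0 2 \<dots> (asub (Comp (Comp (y2 \<delta>) aX0) (Comp (Ym m) aAmalg)) (Comp (asub (aI 2) ee) (Comp (Ym m) aAmalg)))"
    by (rule cSubL) simp_all
  also have "EQ \<delta> 0 2 \<dots> (asub (U' (Comp (aPhi \<delta>) (Rec' \<delta> l))) (asub (U' (apow HH m)) (U' (Tens (aZ m) 1 1 bI))))"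
  proof (rule subC[OF T1])
    have "EQ \<delta> 0 2 (Comp (asub (aI 2) ee) (Comp (Ym m) aAmalg)) (asub (Comp (aI 2) (Comp (Ym m) aAmalg)) (Comp ee (Comp (Ym m) aAmalg)))"
      by (rule cSubL) simp_all
    also have "EQ \<delta> 0 2 \<dots> (asub (U' (apow HH m)) (U' (Tens (aZ m) 1 1 bI)))" by (rule subC[OF T2 T3])
    finally show "EQ \<delta> 0 2 (Comp (asub (aI 2) ee) (Comp (Ym m) aAmalg)) (asub (U' (apow HH m)) (U' (Tens (aZ m) 1 1 bI)))" .
  qed
  also have "EQ \<delta> 0 2 \<dots> (Add (U' (Comp (aPhi \<delta>) (Rec' \<delta> l))) (asub (U' (Tens (aZ m) 1 1 bI)) (U' (apow HH m))))"
    by (rule lin) (simp_all add: asub_def fun_eq_iff algebra_simps)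
  also have "EQ \<delta> 0 2 \<dots> (Add (U' (Comp (aPhi \<delta>) (Rec' \<delta> l))) (U' (aG m)))"
    unfolding aG_def by (rule addR, rule eq_sym, rule U'_sub) simp_all
  also have "EQ \<delta> 0 2 \<dots> (U' (Rec' \<delta> (Suc l)))"
    unfolding Rec'.simps m_def by (rule eq_sym, rule U'_add) simp_all
  finally show ?case by (simp add: m_def)
qed

lemma Part1Rec: "EQ \<delta> 1 1 (atransp (apow HH (Suc l))) (Rec \<delta> l)"
proof -
  have "EQ \<delta> 1 1 (atransp (apow HH (Suc l))) (Tt (Comp aPi (Comp (Ym (Suc l)) aX0)))"
    unfolding Ym_def by (rule A1) simp
  also have "EQ \<delta> 1 1 \<dots> (Tt (U (Rec \<delta> l)))" by (rule Tt_cong[OF Claim1])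
  also have "EQ \<delta> 1 1 \<dots> (Rec \<delta> l)" by (rule TtU) simp
  finally show ?thesis .
qed

lemma Part2Rec: "EQ \<delta> 1 1 (atransp (apow HH (Suc l))) (Rec' \<delta> l)"
proof -
  have "EQ \<delta> 1 1 (atransp (apow HH (Suc l))) (Tt' (Comp aX0 (Comp (Ym (Suc l)) aAmalg)))"
    unfolding Ym_def by (rule A1') simp
  also have "EQ \<delta> 1 1 \<dots> (Tt' (U' (Rec' \<delta> l)))" by (rule Tt'_cong[OF Claim2])
  also have "EQ \<delta> 1 1 \<dots> (Rec' \<delta> l)" by (rule Tt'U') simp
  finally show ?thesis .
qed
end

declare One_nat_def[simp del]
declare add_numeral_special[simp]

lemma asum_Nil: "asum f [] = Zer 1 1" by (simp add: asum_def)
lemma asum_Cons: "asum f (x # xs) = Add (f x) (asum f xs)" by (simp add: asum_def)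

context fixes \<delta> :: "'k::comm_ring_1"
begin

lemma asum_snoc: "\<forall>i\<in>set (xs @ [x]). ty (f i) = Some (1, 1) \<Longrightarrow>
  EQ \<delta> 1 1 (asum f (xs @ [x])) (Add (asum f xs) (f x))"
proof (induction xs)
  case Nil
  then show ?case unfolding asum_Cons asum_Nil append.simps
    by (intro lin) (simp_all add: fun_eq_iff)
next
  case (Cons y ys)
  then have t: "\<forall>i\<in>set (ys @ [x]). ty (f i) = Some (1, 1)" "ty (f y) = Some (1, 1)" by simp_all
  have "EQ \<delta> 1 1 (asum f ((y # ys) @ [x])) (Add (f y) (Add (asum f ys) (f x)))"
    unfolding append.simps asum_Cons by (rule addR[OF Cons.IH[OF t(1)]]) (simp add: t)
  also have "EQ \<delta> 1 1 \<dots> (Add (asum f (y # ys)) (f x))"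
    unfolding asum_Cons using t by (intro lin) (simp_all add: fun_eq_iff algebra_simps)
  finally show ?case .
qed

lemma asum_cong: "\<forall>i\<in>set xs. EQ \<delta> 1 1 (f i) (g i) \<Longrightarrow> EQ \<delta> 1 1 (asum f xs) (asum g xs)"
proof (induction xs)
  case Nil then show ?case by (simp add: asum_Nil eq_refl)
next
  case (Cons x xs) then show ?case unfolding asum_Cons by (intro ab_add_cong) simp_all
qed

lemma comp_Zer_L: "ty D = Some (r, s) \<Longrightarrow> EQ \<delta> r t (Comp (Zer s t) D) (Zer r t)"
proof -
  assume t: "ty D = Some (r, s)"
  have "EQ \<delta> r t (Comp (Zer s t) D) (Comp (Smul 0 (Zer s t)) D)"
    by (rule compL[OF eq_sym[OF smul_zero]]) (simp_all add: t)
  also have "EQ \<delta> r t \<dots> (Smul 0 (Comp (Zer s t) D))" by (rule cSmulL) (simp_all add: t)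
  also have "EQ \<delta> r t \<dots> (Zer r t)" by (rule smul_zero) (simp add: t)
  finally show ?thesis .
qed

lemma comp_Zer_R: "ty D = Some (s, t) \<Longrightarrow> EQ \<delta> r t (Comp D (Zer r s)) (Zer r t)"
proof -
  assume t: "ty D = Some (s, t)"
  have "EQ \<delta> r t (Comp D (Zer r s)) (Comp D (Smul 0 (Zer r s)))"
    by (rule compR[OF eq_sym[OF smul_zero]]) (simp_all add: t)
  also have "EQ \<delta> r t \<dots> (Smul 0 (Comp D (Zer r s)))" by (rule cSmulR) (simp_all add: t)
  also have "EQ \<delta> r t \<dots> (Zer r t)" by (rule smul_zero) (simp add: t)
  finally show ?thesis .
qed

lemma asum_compR: "\<forall>i\<in>set xs. ty (f i) = Some (1, 1) \<Longrightarrow> ty D = Some (1, 1) \<Longrightarrow>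
  EQ \<delta> 1 1 (Comp (asum f xs) D) (asum (\<lambda>i. Comp (f i) D) xs)"
proof (induction xs)
  case Nil show ?case unfolding asum_Nil by (rule comp_Zer_L) (use Nil.prems in simp)
next
  case (Cons x xs)
  have "EQ \<delta> 1 1 (Comp (asum f (x # xs)) D) (Add (Comp (f x) D) (Comp (asum f xs) D))"
    unfolding asum_Cons by (rule cAddL) (use Cons.prems in simp_all)
  also have "EQ \<delta> 1 1 \<dots> (asum (\<lambda>i. Comp (f i) D) (x # xs))"
    unfolding asum_Cons by (rule addR) (use Cons in simp_all)
  finally show ?case .
qed

lemma asum_compL: "\<forall>i\<in>set xs. ty (f i) = Some (1, 1) \<Longrightarrow> ty D = Some (1, 1) \<Longrightarrow>
  EQ \<delta> 1 1 (Comp D (asum f xs)) (asum (\<lambda>i. Comp D (f i)) xs)"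
proof (induction xs)
  case Nil show ?case unfolding asum_Nil by (rule comp_Zer_R) (use Nil.prems in simp)
next
  case (Cons x xs)
  have "EQ \<delta> 1 1 (Comp D (asum f (x # xs))) (Add (Comp D (f x)) (Comp D (asum f xs)))"
    unfolding asum_Cons by (rule cAddR) (use Cons.prems in simp_all)
  also have "EQ \<delta> 1 1 \<dots> (asum (\<lambda>i. Comp D (f i)) (x # xs))"
    unfolding asum_Cons by (rule addR) (use Cons in simp_all)
  finally show ?case .
qed

lemma asum_sub: "\<forall>i\<in>set xs. ty (f i) = Some (1, 1) \<and> ty (g i) = Some (1, 1) \<Longrightarrow>
  EQ \<delta> 1 1 (asum (\<lambda>i. asub (f i) (g i)) xs) (asub (asum f xs) (asum g xs))"
proof (induction xs)
  case Nil then show ?case unfolding asum_Nil by (intro lin) (simp_all add: asub_def fun_eq_iff)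
next
  case (Cons x xs)
  then have t: "ty (f x) = Some (1, 1)" "ty (g x) = Some (1, 1)" "\<forall>i\<in>set xs. ty (f i) = Some (1, 1)"
    "\<forall>i\<in>set xs. ty (g i) = Some (1, 1)" by simp_all
  have "EQ \<delta> 1 1 (asum (\<lambda>i. asub (f i) (g i)) (x # xs)) (Add (asub (f x) (g x)) (asub (asum f xs) (asum g xs)))"
    unfolding asum_Cons by (rule addR) (use Cons in simp_all)
  also have "EQ \<delta> 1 1 \<dots> (asub (asum f (x # xs)) (asum g (x # xs)))"
    unfolding asum_Cons using t by (intro lin) (simp_all add: asub_def fun_eq_iff algebra_simps)
  finally show ?case .
qed

lemma upt_snoc1: "[1..<Suc l + 1] = [1..<l + 1] @ [Suc l]" by simp

lemma Target1: "EQ \<delta> 1 1 (asub (asum (\<lambda>i. Comp (aG i) (apow (aPhi \<delta>) (l - i))) [1..<l + 1])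
                 (Comp HH (apow (aPhi \<delta>) l))) (Rec \<delta> l)"
proof (induction l)
  case 0
  have "EQ \<delta> 1 1 (asub (Zer 1 1) (Comp HH (aI 1))) (asub (Zer 1 1) HH)"
    by (rule subC, rule eq_refl, simp, rule id_right) simp
  also have "EQ \<delta> 1 1 \<dots> (Smul (-1) HH)" by (intro lin) (simp_all add: asub_def fun_eq_iff)
  finally show ?case by (simp add: asum_Nil apow0)
next
  case (Suc l)
  let ?P = "aPhi \<delta>"
  let ?f = "\<lambda>i. Comp (aG i) (apow ?P (l - i))"
  let ?F = "\<lambda>i. Comp (aG i) (apow ?P (Suc l - i))"
  let ?S = "asum ?f [1..<l + 1]"
  have tS: "ty ?S = Some (1, 1)" by simp
  have A: "EQ \<delta> 1 1 (asum ?F [1..<l + 1]) (Comp ?S ?P)"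
  proof -
    have "EQ \<delta> 1 1 (asum ?F [1..<l + 1]) (asum (\<lambda>i. Comp (?f i) ?P) [1..<l + 1])"
    proof (rule asum_cong, intro ballI)
      fix i assume "i \<in> set [1..<l + 1]"
      then have "Suc l - i = Suc (l - i)" by auto
      then have "?F i = Comp (aG i) (apow ?P (Suc (l - i)))" by simp
      also have "EQ \<delta> 1 1 \<dots> (Comp (aG i) (Comp (apow ?P (l - i)) ?P))" by (rule compR, rule apowS') simp_all
      also have "EQ \<delta> 1 1 \<dots> (Comp (?f i) ?P)" by (rule eq_sym, rule assocE) simp_all
      finally show "EQ \<delta> 1 1 (?F i) (Comp (?f i) ?P)" .
    qed
    also have "EQ \<delta> 1 1 \<dots> (Comp ?S ?P)" by (rule eq_sym, rule asum_compR) simp_all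
    finally show ?thesis .
  qed
  have B: "EQ \<delta> 1 1 (?F (Suc l)) (aG (Suc l))" by (simp add: apow0) (rule id_right, simp)
  have C: "EQ \<delta> 1 1 (Comp HH (apow ?P (Suc l))) (Comp (Comp HH (apow ?P l)) ?P)"
  proof -
    have "EQ \<delta> 1 1 (Comp HH (apow ?P (Suc l))) (Comp HH (Comp (apow ?P l) ?P))" by (rule compR, rule apowS') simp_all
    also have "EQ \<delta> 1 1 \<dots> (Comp (Comp HH (apow ?P l)) ?P)" by (rule eq_sym, rule assocE) simp_all
    finally show ?thesis .
  qed
  have "EQ \<delta> 1 1 (asub (asum ?F [1..<Suc l + 1]) (Comp HH (apow ?P (Suc l))))
     (asub (Add (asum ?F [1..<l + 1]) (?F (Suc l))) (Comp (Comp HH (apow ?P l)) ?P))"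
    unfolding upt_snoc1 by (rule subC[OF asum_snoc C]) simp
  also have "EQ \<delta> 1 1 \<dots> (asub (Add (Comp ?S ?P) (aG (Suc l))) (Comp (Comp HH (apow ?P l)) ?P))"
    by (rule subC[OF ab_add_cong[OF A B]], rule eq_refl) simp
  also have "EQ \<delta> 1 1 \<dots> (Add (asub (Comp ?S ?P) (Comp (Comp HH (apow ?P l)) ?P)) (aG (Suc l)))"
    by (intro lin) (simp_all add: asub_def fun_eq_iff algebra_simps)
  also have "EQ \<delta> 1 1 \<dots> (Add (Comp (asub ?S (Comp HH (apow ?P l))) ?P) (aG (Suc l)))"
    by (rule addL, rule eq_sym, rule cSubL) simp_all
  also have "EQ \<delta> 1 1 \<dots> (Rec \<delta> (Suc l))"
    unfolding Rec.simps by (rule addL, rule compL[OF Suc.IH]) simp_all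
  finally show ?case .
qed

lemma Target2: "EQ \<delta> 1 1 (asub (asum (\<lambda>i. Comp (apow (aPhi \<delta>) (l - i)) (aG i)) [1..<l + 1])
                 (Comp (apow (aPhi \<delta>) l) HH)) (Rec' \<delta> l)"
proof (induction l)
  case 0
  have "EQ \<delta> 1 1 (asub (Zer 1 1) (Comp (aI 1) HH)) (asub (Zer 1 1) HH)"
    by (rule subC, rule eq_refl, simp, rule id_left) simp
  also have "EQ \<delta> 1 1 \<dots> (Smul (-1) HH)" by (intro lin) (simp_all add: asub_def fun_eq_iff)
  finally show ?case by (simp add: asum_Nil apow0)
next
  case (Suc l)
  let ?P = "aPhi \<delta>"
  let ?f = "\<lambda>i. Comp (apow ?P (l - i)) (aG i)"
  let ?F = "\<lambda>i. Comp (apow ?P (Suc l - i)) (aG i)"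
  let ?S = "asum ?f [1..<l + 1]"
  have A: "EQ \<delta> 1 1 (asum ?F [1..<l + 1]) (Comp ?P ?S)"
  proof -
    have "EQ \<delta> 1 1 (asum ?F [1..<l + 1]) (asum (\<lambda>i. Comp ?P (?f i)) [1..<l + 1])"
    proof (rule asum_cong, intro ballI)
      fix i assume "i \<in> set [1..<l + 1]"
      then have "Suc l - i = Suc (l - i)" by auto
      then have "?F i = Comp (Comp ?P (apow ?P (l - i))) (aG i)" by (simp add: apowS)
      also have "EQ \<delta> 1 1 \<dots> (Comp ?P (?f i))" by (rule assocE) simp_all
      finally show "EQ \<delta> 1 1 (?F i) (Comp ?P (?f i))" .
    qed
    also have "EQ \<delta> 1 1 \<dots> (Comp ?P ?S)" by (rule eq_sym, rule asum_compL) simp_all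
    finally show ?thesis .
  qed
  have B: "EQ \<delta> 1 1 (?F (Suc l)) (aG (Suc l))" by (simp add: apow0) (rule id_left, simp)
  have C: "EQ \<delta> 1 1 (Comp (apow ?P (Suc l)) HH) (Comp ?P (Comp (apow ?P l) HH))"
    unfolding apowS by (rule assocE) simp_all
  have "EQ \<delta> 1 1 (asub (asum ?F [1..<Suc l + 1]) (Comp (apow ?P (Suc l)) HH))
     (asub (Add (asum ?F [1..<l + 1]) (?F (Suc l))) (Comp ?P (Comp (apow ?P l) HH)))"
    unfolding upt_snoc1 by (rule subC[OF asum_snoc C]) simp
  also have "EQ \<delta> 1 1 \<dots> (asub (Add (Comp ?P ?S) (aG (Suc l))) (Comp ?P (Comp (apow ?P l) HH)))"
    by (rule subC[OF ab_add_cong[OF A B]], rule eq_refl) simp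
  also have "EQ \<delta> 1 1 \<dots> (Add (asub (Comp ?P ?S) (Comp ?P (Comp (apow ?P l) HH))) (aG (Suc l)))"
    by (intro lin) (simp_all add: asub_def fun_eq_iff algebra_simps)
  also have "EQ \<delta> 1 1 \<dots> (Add (Comp ?P (asub ?S (Comp (apow ?P l) HH))) (aG (Suc l)))"
    by (rule addL, rule eq_sym, rule cSubR) simp_all
  also have "EQ \<delta> 1 1 \<dots> (Rec' \<delta> (Suc l))"
    unfolding Rec'.simps by (rule addL, rule compR[OF Suc.IH]) simp_all
  finally show ?case .
qed


lemma KC: "EQ \<delta> 1 1 (asub (Comp (aG i) (apow (aPhi \<delta>) k)) (Comp (apow (aPhi \<delta>) k) (aG i)))
  (asub (Comp (Tens (aZ i) 1 1 bI) (apow (aPhi \<delta>) k)) (Comp (apow (aPhi \<delta>) k) (Tens (aZ i) 1 1 bI)))"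
proof -
  let ?Z = "Tens (aZ i) 1 1 bI" and ?P = "apow (aPhi \<delta>) k" and ?H = "apow HH i"
  have "EQ \<delta> 1 1 (asub (Comp (aG i) ?P) (Comp ?P (aG i)))
     (asub (asub (Comp ?Z ?P) (Comp ?H ?P)) (asub (Comp ?P ?Z) (Comp ?P ?H)))"
    unfolding aG_def by (rule subC, rule cSubL, simp_all, rule cSubR, simp_all)
  also have "EQ \<delta> 1 1 \<dots> (asub (asub (Comp ?Z ?P) (Comp ?P ?H)) (asub (Comp ?P ?Z) (Comp ?P ?H)))"
    by (rule subC, rule subC, rule eq_refl, simp, rule commD, rule comm_HiPhik, rule eq_refl, simp)
  also have "EQ \<delta> 1 1 \<dots> (asub (Comp ?Z ?P) (Comp ?P ?Z))"
    by (intro lin) (simp_all add: asub_def fun_eq_iff algebra_simps)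
  finally show ?thesis .
qed

lemma Part3:
  assumes p1: "EQ \<delta> 1 1 (atransp (apow HH (l + 1)))
           (asub (asum (\<lambda>i. Comp (aG i) (apow (aPhi \<delta>) (l - i))) [1..<l + 1])
                 (Comp HH (apow (aPhi \<delta>) l)))"
    and p2: "EQ \<delta> 1 1 (atransp (apow HH (l + 1)))
           (asub (asum (\<lambda>i. Comp (apow (aPhi \<delta>) (l - i)) (aG i)) [1..<l + 1])
                 (Comp (apow (aPhi \<delta>) l) HH))"
  shows "EQ \<delta> 1 1
           (asum (\<lambda>i. asub (Comp (Tens (aZ i) 1 1 bI) (apow (aPhi \<delta>) (l - i)))
                            (Comp (apow (aPhi \<delta>) (l - i)) (Tens (aZ i) 1 1 bI))) [1..<l])
           (Zer 1 1)"
proof -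
  let ?P = "aPhi \<delta>"
  let ?S1 = "asum (\<lambda>i. Comp (aG i) (apow ?P (l - i))) [1..<l + 1]"
  let ?S2 = "asum (\<lambda>i. Comp (apow ?P (l - i)) (aG i)) [1..<l + 1]"
  let ?X = "Comp HH (apow ?P l)" and ?Y = "Comp (apow ?P l) HH"
  let ?C = "\<lambda>i. asub (Comp (Tens (aZ i) 1 1 bI) (apow ?P (l - i))) (Comp (apow ?P (l - i)) (Tens (aZ i) 1 1 bI))"
  let ?K = "\<lambda>i. asub (Comp (aG i) (apow ?P (l - i))) (Comp (apow ?P (l - i)) (aG i))"
  have e12: "EQ \<delta> 1 1 (asub ?S1 ?X) (asub ?S2 ?Y)" using p1 p2 by (blast intro: eq_trans eq_sym)
  have xy: "EQ \<delta> 1 1 ?X ?Y"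
  proof -
    have "comm \<delta> (apow ?P l) HH" by (rule comm_pow, simp, simp, rule comm_sym, rule comm_HPhi)
    then show ?thesis by (rule commD[THEN eq_sym])
  qed
  have "EQ \<delta> 1 1 (asum ?C [1..<l + 1]) (asum ?K [1..<l + 1])"
    by (rule asum_cong, intro ballI, rule eq_sym, rule KC)
  also have "EQ \<delta> 1 1 \<dots> (asub ?S1 ?S2)" by (rule asum_sub) simp
  also have "EQ \<delta> 1 1 \<dots> (asub (asub ?S1 ?X) (asub ?S2 ?X))"
    by (intro lin) (simp_all add: asub_def fun_eq_iff algebra_simps)
  also have "EQ \<delta> 1 1 \<dots> (asub (asub ?S2 ?Y) (asub ?S2 ?Y))"
    by (rule subC[OF e12], rule subC[OF eq_refl xy]) simp
  also have "EQ \<delta> 1 1 \<dots> (Zer 1 1)"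
    by (intro lin) (simp_all add: asub_def fun_eq_iff algebra_simps)
  finally have Z: "EQ \<delta> 1 1 (asum ?C [1..<l + 1]) (Zer 1 1)" .
  show ?thesis
  proof (cases l)
    case 0 then show ?thesis by (simp add: asum_Nil eq_refl)
  next
    case (Suc l')
    have "1 \<le> l" using Suc by simp
    then have u: "[1..<l + 1] = [1..<l] @ [l]" by (metis Suc_eq_plus1 upt_Suc_append)
    have Cl: "EQ \<delta> 1 1 (?C l) (Zer 1 1)"
    proof -
      have "EQ \<delta> 1 1 (?C l) (asub (Tens (aZ l) 1 1 bI) (Tens (aZ l) 1 1 bI))"
        by (simp add: apow0) (rule subC, rule id_right, simp, rule id_left, simp)
      also have "EQ \<delta> 1 1 \<dots> (Zer 1 1)" by (intro lin) (simp_all add: asub_def fun_eq_iff)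
      finally show ?thesis .
    qed
    have "EQ \<delta> 1 1 (asum ?C [1..<l]) (Add (asum ?C [1..<l]) (Zer 1 1))"
      by (rule eq_sym, rule add_zero_r) simp
    also have "EQ \<delta> 1 1 \<dots> (Add (asum ?C [1..<l]) (?C l))" by (rule addR[OF eq_sym[OF Cl]]) simp
    also have "EQ \<delta> 1 1 \<dots> (asum ?C [1..<l + 1])" unfolding u by (rule eq_sym, rule asum_snoc) simp
    also have "EQ \<delta> 1 1 \<dots> (Zer 1 1)" by (rule Z)
    finally show ?thesis .
  qed
qed

end

theorem corollary2p18:
  fixes \<delta> :: "'k::comm_ring_1" and l :: nat
  shows "abeq \<delta> 1 1 (atransp (apow HH (l + 1)))
           (asub (asum (\<lambda>i. Comp (aG i) (apow (aPhi \<delta>) (l - i))) [1..<l + 1])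
                 (Comp HH (apow (aPhi \<delta>) l)))
       \<and> abeq \<delta> 1 1 (atransp (apow HH (l + 1)))
           (asub (asum (\<lambda>i. Comp (apow (aPhi \<delta>) (l - i)) (aG i)) [1..<l + 1])
                 (Comp (apow (aPhi \<delta>) l) HH))
       \<and> abeq \<delta> 1 1
           (asum (\<lambda>i. asub (Comp (Tens (aZ i) 1 1 bI) (apow (aPhi \<delta>) (l - i)))
                            (Comp (apow (aPhi \<delta>) (l - i)) (Tens (aZ i) 1 1 bI))) [1..<l])
           (Zer 1 1)"
proof -
  have p1: "abeq \<delta> 1 1 (atransp (apow HH (l + 1)))
           (asub (asum (\<lambda>i. Comp (aG i) (apow (aPhi \<delta>) (l - i))) [1..<l + 1])
                 (Comp HH (apow (aPhi \<delta>) l)))"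
    using eq_trans[OF Part1Rec[of \<delta> l, unfolded Suc_eq_plus1] eq_sym[OF Target1[of \<delta> l]]] by simp
  have p2: "abeq \<delta> 1 1 (atransp (apow HH (l + 1)))
           (asub (asum (\<lambda>i. Comp (apow (aPhi \<delta>) (l - i)) (aG i)) [1..<l + 1])
                 (Comp (apow (aPhi \<delta>) l) HH))"
    using eq_trans[OF Part2Rec[of \<delta> l, unfolded Suc_eq_plus1] eq_sym[OF Target2[of \<delta> l]]] by simp
  show ?thesis using p1 p2 Part3[OF p1 p2] by blast
qed

end
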